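(* Let $\Sigma$ be a signature and $G=(G,\sigma,\theta):\mathcal F_\Sigma\to\mathcal C$ a cwf morphism (under the standing assumptions below). Let $S$ be a type symbol not declared in $\Sigma$ and $\Gamma_S$ a precontext with ($\Gamma_S$ context)$\in\mathcal J(\Sigma)$, so that $\Sigma'=\Sigma\cup\{(\Gamma_S,S)\}$ is a signature. Then for every $A\in\mathrm{Ty}_{\mathcal C}(G(\Gamma_S))$ there is a unique cwf morphism $G'=(G',\sigma',\theta'):\mathcal F_{\Sigma'}\to\mathcal C$ with $G'\circ E=G$ and $\sigma'(\Gamma_S,S(\mathrm{OV}(\Gamma_S)))=A$, where $E:\mathcal F_\Sigma\to\mathcal F_{\Sigma'}$ is the canonical embedding.
   Context: Standing assumptions: the variable set is $V=\{1,2,3,\ldots\}$ with $\mathsf{fr}(X)=\max(\{1\}\cup\{x+1:x\in X\})$ and $\varphi(X)=\{\mathsf{fr}(X)\}$ for finite $X\subseteq V$; all declarations of signatures are on standard form, written $(\Gamma,S)$ (type) and $(\Gamma,f,U)$ (function). Preelements are terms built from variables and function symbols; a pretype is $S(t_1,\ldots,t_n)$ with $S$ a type symbol and $t_i$ preelements; $\mathrm{V}(E)$ is the set of variables of $E$; $E[\bar a/\bar x]$ is simultaneous substitution. A precontext is $\Gamma=x_1:A_1,\ldots,x_n:A_n$ with $x_k=\mathsf{fr}(\{x_1,\ldots,x_{k-1}\})$ and $\mathrm{V}(A_k)\subseteq\{x_1,\ldots,x_{k-1}\}$; $\mathrm{OV}(\Gamma)=x_1,\ldots,x_n$; $\mathrm{fresh}(\Gamma)=\mathsf{fr}(\{x_1,\ldots,x_n\})$;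 $E[\bar a/\Gamma]=E[\bar a/x_1,\ldots,x_n]$. A presignature is a set of declarations $(\Gamma,S)$ ($S$ a type symbol) and $(\Gamma,f,U)$ ($f$ a function symbol, $U$ a pretype with $\mathrm{V}(U)\subseteq\mathrm{V}(\Gamma)$), each symbol declared at most once. $\mathcal{J}(\Sigma)$ is the smallest set of judgements ("$\Gamma$ context", "$A$ type $(\Gamma)$", "$a:A\ (\Gamma)$") closed under: (R1) $\langle\rangle$ context; (R2) from $\Gamma$ context and $A$ type $(\Gamma)$ infer $\Gamma,\mathrm{fresh}(\Gamma):A$ context; (R3) from $x_1:A_1,\ldots,x_n:A_n$ context infer $x_i:A_i\ (x_1:A_1,\ldots,x_n:A_n)$; (R4) if $(\Gamma,S)\in\Sigma$ and $\bar a:\Delta\to\Gamma$ infer $S(\bar a)$ type $(\Delta)$; (R5) if $(\Gamma,f,U)\in\Sigma$, $\bar a:\Delta\to\Gamma$ and $U[\bar a/\Gamma]$ type $(\Delta)$ infer $f(\bar a):U[\bar a/\Gamma]\ (\Delta)$; where, for $\Gamma=x_1:A_1,\ldots,x_n:A_n$, "$\bar a:\Delta\to\Gamma$" abbreviates the judgements $\Delta$ context, $\Gamma$ context, $a_k:A_k[a_1,\ldots,a_{k-1}/x_1,\ldots,x_{k-1}]\ (\Delta)$ ($k=1,\ldots,n$). $\Sigma$ is a signature if ($\Gamma$ context)$\in\mathcal{J}(\Sigma)$ for $(\Gamma,S)\in\Sigma$ and ($U$ type $(\Gamma)$)$\in\mathcal{J}(\Sigma)$ for $(\Gamma,f,U)\in\Sigma$.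 A category with families (cwf) consists of: a category $\mathcal C$ with a terminal object $\top$; for each object $\Gamma$ a class $\mathrm{Ty}(\Gamma)$, and for $f:\Delta\to\Gamma$ a function $A\mapsto A\{f\}:\mathrm{Ty}(\Gamma)\to\mathrm{Ty}(\Delta)$ with $A\{1\}=A$, $A\{f\circ g\}=A\{f\}\{g\}$; for $A\in\mathrm{Ty}(\Gamma)$ an object $\Gamma.A$ and a morphism $\mathrm{p}(A)=\mathrm{p}_\Gamma(A):\Gamma.A\to\Gamma$; for $A\in\mathrm{Ty}(\Gamma)$ a class $\mathrm{Tm}(\Gamma,A)$ and for $f:\Delta\to\Gamma$ a function $a\mapsto a\{f\}:\mathrm{Tm}(\Gamma,A)\to\mathrm{Tm}(\Delta,A\{f\})$ with $a\{1\}=a$, $a\{f\circ g\}=a\{f\}\{g\}$; for each $A\in\mathrm{Ty}(\Gamma)$ an element $\mathrm{v}_A\in\mathrm{Tm}(\Gamma.A,A\{\mathrm{p}(A)\})$; for $f:\Delta\to\Gamma$ and $a\in\mathrm{Tm}(\Delta,A\{f\})$ a morphism $\langle f,a\rangle_A:\Delta\to\Gamma.A$ such that $\mathrm{p}(A)\circ\langle f,a\rangle_A=f$, $\mathrm{v}_A\{\langle f,a\rangle_A\}=a$, $\langle\mathrm{p}(A)\circ h,\mathrm{v}_A\{h\}\rangle_A=h$ for every $h:\Delta\to\Gamma.A$, and $\langle f,a\rangle_A\circ g=\langle f\circ g,a\{g\}\rangle_A$. A cwf morphism $(F,\sigma,\theta):\mathcal C\to\mathcal C'$ consists of a functor $F$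 with $F(\top)=\top'$; functions $\sigma_\Gamma:\mathrm{Ty}(\Gamma)\to\mathrm{Ty}'(F\Gamma)$ with $\sigma_\Delta(A\{f\})=\sigma_\Gamma(A)\{Ff\}$ for $f:\Delta\to\Gamma$, such that $F(\Gamma.A)=F\Gamma.\sigma_\Gamma(A)$ and $F(\mathrm{p}_\Gamma(A))=\mathrm{p}_{F\Gamma}(\sigma_\Gamma(A))$; and functions $\theta_{\Gamma,A}:\mathrm{Tm}(\Gamma,A)\to\mathrm{Tm}'(F\Gamma,\sigma_\Gamma(A))$ with $\theta_{\Delta,A\{f\}}(a\{f\})=\theta_{\Gamma,A}(a)\{Ff\}$, $\theta_{\Gamma.A,A\{\mathrm{p}(A)\}}(\mathrm{v}_A)=\mathrm{v}_{\sigma_\Gamma(A)}$, and $F(\langle f,a\rangle_A)=\langle Ff,\theta_{\Delta,A\{f\}}(a)\rangle_{\sigma_\Gamma(A)}$ for $f:\Delta\to\Gamma$, $a\in\mathrm{Tm}(\Delta,A\{f\})$. The cwf $\mathcal F_\Sigma$: objects are precontexts $\Gamma$ with ($\Gamma$ context)$\in\mathcal{J}(\Sigma)$; morphisms $\Delta\to\Gamma$ are triples $(\Delta,\Gamma,\bar a)$ with $\bar a:\Delta\to\Gamma$ a context map in $\mathcal{J}(\Sigma)$; composition $(\Gamma,\Theta,\bar t)\circ(\Delta,\Gamma,\bar s)=(\Delta,\Theta,(t_1[\bar s/\Gamma],\ldots,t_k[\bar s/\Gamma]))$; identity $(\Gamma,\Gamma,\mathrm{OV}(\Gamma))$; terminal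 object $\langle\rangle$. $\mathrm{Ty}(\Gamma)=\{(\Gamma,A): (A\text{ type }(\Gamma))\in\mathcal{J}(\Sigma)\}$ with $(\Gamma,A)\{(\Delta,\Gamma,\bar a)\}=(\Delta,A[\bar a/\Gamma])$; $\mathrm{Tm}(\Gamma,(\Gamma,A))=\{((\Gamma,A),a): (a:A\ (\Gamma))\in\mathcal{J}(\Sigma)\}$ with $((\Gamma,A),a)\{(\Delta,\Gamma,\bar a)\}=((\Delta,A[\bar a/\Gamma]),a[\bar a/\Gamma])$; for $\mathrm S=(\Gamma,S)$: $\Gamma.\mathrm S=\langle\Gamma,\mathrm{fresh}(\Gamma):S\rangle$, $\mathrm{p}_\Gamma(\mathrm S)=(\Gamma.\mathrm S,\Gamma,\mathrm{OV}(\Gamma))$, $\mathrm{v}_{\mathrm S}=((\Gamma.\mathrm S,S),\mathrm{fresh}(\Gamma))$, $\langle(\Delta,\Gamma,\bar s),((\Delta,S[\bar s/\Gamma]),b)\rangle_{\mathrm S}=(\Delta,\Gamma.\mathrm S,(\bar s,b))$. For a cwf morphism $(F,\sigma,\theta)$ out of $\mathcal F_\Sigma$ write $\sigma(\Gamma,A)$ for $\sigma_\Gamma((\Gamma,A))$ and $\theta(\Gamma,A,a)$ for $\theta_{\Gamma,(\Gamma,A)}(((\Gamma,A),a))$. For signatures $\Sigma\subseteq\Sigma'$, the canonical embedding $E:\mathcal F_\Sigma\to\mathcal F_{\Sigma'}$ is the cwf morphism which is the identity on objects, morphisms, types and terms. *)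

theory Defs
  imports Main
begin

text \<open>Variables are natural numbers (the paper's V = {1,2,...}; the number 0 never
occurs in precontexts since fr yields values >= 1).  'f is the type of function
symbols, 's the type of type symbols.\<close>

datatype 'f pre = Var nat | App 'f "'f pre list"

datatype ('s, 'f) pty = PTy 's "'f pre list"

type_synonym ('s, 'f) ctx = "(nat \<times> ('s, 'f) pty) list"

fun varsP :: "'f pre \<Rightarrow> nat set" where
  "varsP (Var x) = {x}"
| "varsP (App f ts) = (\<Union>t\<in>set ts. varsP t)"

fun varsT :: "('s, 'f) pty \<Rightarrow> nat set" where
  "varsT (PTy S ts) = (\<Union>t\<in>set ts. varsP t)"

definition fr :: "nat set \<Rightarrow> nat" where
  "fr X = Max ({1} \<union> Suc ` X)"

definition OV :: "('s, 'f) ctx \<Rightarrow> nat list" where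
  "OV \<Gamma> = map fst \<Gamma>"

definition fresh :: "('s, 'f) ctx \<Rightarrow> nat" where
  "fresh \<Gamma> = fr (set (OV \<Gamma>))"

definition precontext :: "('s, 'f) ctx \<Rightarrow> bool" where
  "precontext \<Gamma> \<longleftrightarrow>
     (\<forall>k < length \<Gamma>. fst (\<Gamma> ! k) = fr (set (map fst (take k \<Gamma>)))
                    \<and> varsT (snd (\<Gamma> ! k)) \<subseteq> set (map fst (take k \<Gamma>)))"

definition smap :: "nat list \<Rightarrow> 'f pre list \<Rightarrow> nat \<Rightarrow> 'f pre" where
  "smap xs as x = (case map_of (zip xs as) x of None \<Rightarrow> Var x | Some t \<Rightarrow> t)"

fun substP :: "(nat \<Rightarrow> 'f pre) \<Rightarrow> 'f pre \<Rightarrow> 'f pre" where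
  "substP \<rho> (Var x) = \<rho> x"
| "substP \<rho> (App f ts) = App f (map (substP \<rho>) ts)"

fun substT :: "(nat \<Rightarrow> 'f pre) \<Rightarrow> ('s, 'f) pty \<Rightarrow> ('s, 'f) pty" where
  "substT \<rho> (PTy S ts) = PTy S (map (substP \<rho>) ts)"

abbreviation substPC :: "'f pre \<Rightarrow> 'f pre list \<Rightarrow> ('s, 'f) ctx \<Rightarrow> 'f pre" where
  "substPC t as \<Gamma> \<equiv> substP (smap (OV \<Gamma>) as) t"

abbreviation substTC :: "('s, 'f) pty \<Rightarrow> 'f pre list \<Rightarrow> ('s, 'f) ctx \<Rightarrow> ('s, 'f) pty" where
  "substTC A as \<Gamma> \<equiv> substT (smap (OV \<Gamma>) as) A"

datatype ('s, 'f) decl =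
    TDecl "('s, 'f) ctx" 's
  | FDecl "('s, 'f) ctx" 'f "('s, 'f) pty"

definition is_presig :: "('s, 'f) decl set \<Rightarrow> bool" where
  "is_presig Sig \<longleftrightarrow>
     (\<forall>\<Gamma> S. TDecl \<Gamma> S \<in> Sig \<longrightarrow> precontext \<Gamma>)
   \<and> (\<forall>\<Gamma> f U. FDecl \<Gamma> f U \<in> Sig \<longrightarrow> precontext \<Gamma> \<and> varsT U \<subseteq> set (OV \<Gamma>))
   \<and> (\<forall>\<Gamma> \<Gamma>' S. TDecl \<Gamma> S \<in> Sig \<longrightarrow> TDecl \<Gamma>' S \<in> Sig \<longrightarrow> \<Gamma> = \<Gamma>')
   \<and> (\<forall>\<Gamma> \<Gamma>' f U U'. FDecl \<Gamma> f U \<in> Sig \<longrightarrow> FDecl \<Gamma>' f U' \<in> Sig \<longrightarrow> \<Gamma> = \<Gamma>' \<and> U = U')"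

datatype ('s, 'f) judg =
    JCtx "('s, 'f) ctx"
  | JTy "('s, 'f) pty" "('s, 'f) ctx"
  | JTm "'f pre" "('s, 'f) pty" "('s, 'f) ctx"

definition cmap :: "('s, 'f) judg set \<Rightarrow> 'f pre list \<Rightarrow> ('s, 'f) ctx \<Rightarrow> ('s, 'f) ctx \<Rightarrow> bool" where
  "cmap J as \<Delta> \<Gamma> \<longleftrightarrow> JCtx \<Delta> \<in> J \<and> JCtx \<Gamma> \<in> J \<and> length as = length \<Gamma>
     \<and> (\<forall>k < length \<Gamma>. JTm (as ! k)
           (substT (smap (map fst (take k \<Gamma>)) (take k as)) (snd (\<Gamma> ! k))) \<Delta> \<in> J)"

inductive_set Jdg :: "('s, 'f) decl set \<Rightarrow> ('s, 'f) judg set" for Sig where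
  R1: "JCtx [] \<in> Jdg Sig"
| R2: "JCtx \<Gamma> \<in> Jdg Sig \<Longrightarrow> JTy A \<Gamma> \<in> Jdg Sig \<Longrightarrow> JCtx (\<Gamma> @ [(fresh \<Gamma>, A)]) \<in> Jdg Sig"
| R3: "JCtx \<Gamma> \<in> Jdg Sig \<Longrightarrow> i < length \<Gamma> \<Longrightarrow> JTm (Var (fst (\<Gamma> ! i))) (snd (\<Gamma> ! i)) \<Gamma> \<in> Jdg Sig"
| R4: "TDecl \<Gamma> S \<in> Sig \<Longrightarrow>
       JCtx \<Delta> \<in> Jdg Sig \<Longrightarrow> JCtx \<Gamma> \<in> Jdg Sig \<Longrightarrow> length as = length \<Gamma> \<Longrightarrow>
       (\<forall>k < length \<Gamma>. JTm (as ! k)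
           (substT (smap (map fst (take k \<Gamma>)) (take k as)) (snd (\<Gamma> ! k))) \<Delta> \<in> Jdg Sig) \<Longrightarrow>
       JTy (PTy S as) \<Delta> \<in> Jdg Sig"
| R5: "FDecl \<Gamma> f U \<in> Sig \<Longrightarrow>
       JCtx \<Delta> \<in> Jdg Sig \<Longrightarrow> JCtx \<Gamma> \<in> Jdg Sig \<Longrightarrow> length as = length \<Gamma> \<Longrightarrow>
       (\<forall>k < length \<Gamma>. JTm (as ! k)
           (substT (smap (map fst (take k \<Gamma>)) (take k as)) (snd (\<Gamma> ! k))) \<Delta> \<in> Jdg Sig) \<Longrightarrow>
       JTy (substTC U as \<Gamma>) \<Delta> \<in> Jdg Sig \<Longrightarrow>
       JTm (App f as) (substTC U as \<Gamma>) \<Delta> \<in> Jdg Sig"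

definition is_signature :: "('s, 'f) decl set \<Rightarrow> bool" where
  "is_signature Sig \<longleftrightarrow> is_presig Sig
     \<and> (\<forall>\<Gamma> S. TDecl \<Gamma> S \<in> Sig \<longrightarrow> JCtx \<Gamma> \<in> Jdg Sig)
     \<and> (\<forall>\<Gamma> f U. FDecl \<Gamma> f U \<in> Sig \<longrightarrow> JTy U \<Gamma> \<in> Jdg Sig)"

text \<open>Each morphism has a domain and
codomain; A{f} is tsub A f, a{f} (for a : A) is esub A a f, \<Gamma>.A is ext \<Gamma> A,
p(A) is pr \<Gamma> A, v_A is var \<Gamma> A and \<langle>f,a\<rangle>_A is pair A f a.\<close>

record ('o, 'm, 't, 'e) cwf =
  Ob :: "'o set"
  Arr :: "'m set"
  dm :: "'m \<Rightarrow> 'o"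
  cd :: "'m \<Rightarrow> 'o"
  cmp :: "'m \<Rightarrow> 'm \<Rightarrow> 'm"     (* cmp g f = g \<circ> f *)
  idm :: "'o \<Rightarrow> 'm"
  trm :: "'o"
  cTy :: "'o \<Rightarrow> 't set"
  tsub :: "'t \<Rightarrow> 'm \<Rightarrow> 't"
  ext :: "'o \<Rightarrow> 't \<Rightarrow> 'o"
  pr :: "'o \<Rightarrow> 't \<Rightarrow> 'm"
  cTm :: "'o \<Rightarrow> 't \<Rightarrow> 'e set"
  esub :: "'t \<Rightarrow> 'e \<Rightarrow> 'm \<Rightarrow> 'e"
  var :: "'o \<Rightarrow> 't \<Rightarrow> 'e"
  pair :: "'t \<Rightarrow> 'm \<Rightarrow> 'e \<Rightarrow> 'm"

definition Hom :: "('o, 'm, 't, 'e, 'z) cwf_scheme \<Rightarrow> 'o \<Rightarrow> 'o \<Rightarrow> 'm set" where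
  "Hom C \<Delta> \<Gamma> = {f \<in> Arr C. dm C f = \<Delta> \<and> cd C f = \<Gamma>}"

definition is_cwf :: "('o, 'm, 't, 'e, 'z) cwf_scheme \<Rightarrow> bool" where
  "is_cwf C \<longleftrightarrow>
   \<comment> \<open>category\<close>
     (\<forall>f \<in> Arr C. dm C f \<in> Ob C \<and> cd C f \<in> Ob C)
   \<and> (\<forall>\<Gamma> \<in> Ob C. idm C \<Gamma> \<in> Hom C \<Gamma> \<Gamma>)
   \<and> (\<forall>\<Delta> \<Gamma> \<Theta> f g. f \<in> Hom C \<Delta> \<Gamma> \<longrightarrow> g \<in> Hom C \<Gamma> \<Theta> \<longrightarrow> cmp C g f \<in> Hom C \<Delta> \<Theta>)
   \<and> (\<forall>f \<in> Arr C. cmp C (idm C (cd C f)) f = f \<and> cmp C f (idm C (dm C f)) = f)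
   \<and> (\<forall>f g h. f \<in> Arr C \<longrightarrow> g \<in> Arr C \<longrightarrow> h \<in> Arr C \<longrightarrow> cd C f = dm C g \<longrightarrow> cd C g = dm C h \<longrightarrow>
        cmp C h (cmp C g f) = cmp C (cmp C h g) f)
   \<comment> \<open>terminal object\<close>
   \<and> trm C \<in> Ob C \<and> (\<forall>\<Gamma> \<in> Ob C. \<exists>!f. f \<in> Hom C \<Gamma> (trm C))
   \<comment> \<open>types\<close>
   \<and> (\<forall>\<Delta> \<Gamma> f A. f \<in> Hom C \<Delta> \<Gamma> \<longrightarrow> A \<in> cTy C \<Gamma> \<longrightarrow> tsub C A f \<in> cTy C \<Delta>)
   \<and> (\<forall>\<Gamma> \<in> Ob C. \<forall>A \<in> cTy C \<Gamma>. tsub C A (idm C \<Gamma>) = A)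
   \<and> (\<forall>\<Theta> \<Delta> \<Gamma> f g A. f \<in> Hom C \<Delta> \<Gamma> \<longrightarrow> g \<in> Hom C \<Theta> \<Delta> \<longrightarrow> A \<in> cTy C \<Gamma> \<longrightarrow>
        tsub C A (cmp C f g) = tsub C (tsub C A f) g)
   \<comment> \<open>comprehension\<close>
   \<and> (\<forall>\<Gamma> \<in> Ob C. \<forall>A \<in> cTy C \<Gamma>. ext C \<Gamma> A \<in> Ob C \<and> pr C \<Gamma> A \<in> Hom C (ext C \<Gamma> A) \<Gamma>)
   \<comment> \<open>terms\<close>
   \<and> (\<forall>\<Delta> \<Gamma> f A a. f \<in> Hom C \<Delta> \<Gamma> \<longrightarrow> A \<in> cTy C \<Gamma> \<longrightarrow> a \<in> cTm C \<Gamma> A \<longrightarrow>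
        esub C A a f \<in> cTm C \<Delta> (tsub C A f))
   \<and> (\<forall>\<Gamma> \<in> Ob C. \<forall>A \<in> cTy C \<Gamma>. \<forall>a \<in> cTm C \<Gamma> A. esub C A a (idm C \<Gamma>) = a)
   \<and> (\<forall>\<Theta> \<Delta> \<Gamma> f g A a. f \<in> Hom C \<Delta> \<Gamma> \<longrightarrow> g \<in> Hom C \<Theta> \<Delta> \<longrightarrow> A \<in> cTy C \<Gamma> \<longrightarrow> a \<in> cTm C \<Gamma> A \<longrightarrow>
        esub C A a (cmp C f g) = esub C (tsub C A f) (esub C A a f) g)
   \<and> (\<forall>\<Gamma> \<in> Ob C. \<forall>A \<in> cTy C \<Gamma>. var C \<Gamma> A \<in> cTm C (ext C \<Gamma> A) (tsub C A (pr C \<Gamma> A)))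
   \<comment> \<open>pairing\<close>
   \<and> (\<forall>\<Delta> \<Gamma> f A a. f \<in> Hom C \<Delta> \<Gamma> \<longrightarrow> A \<in> cTy C \<Gamma> \<longrightarrow> a \<in> cTm C \<Delta> (tsub C A f) \<longrightarrow>
        pair C A f a \<in> Hom C \<Delta> (ext C \<Gamma> A)
      \<and> cmp C (pr C \<Gamma> A) (pair C A f a) = f
      \<and> esub C (tsub C A (pr C \<Gamma> A)) (var C \<Gamma> A) (pair C A f a) = a
      \<and> (\<forall>\<Theta> g. g \<in> Hom C \<Theta> \<Delta> \<longrightarrow>
           cmp C (pair C A f a) g = pair C A (cmp C f g) (esub C (tsub C A f) a g)))
   \<and> (\<forall>\<Delta> \<Gamma> A h. \<Gamma> \<in> Ob C \<longrightarrow> A \<in> cTy C \<Gamma> \<longrightarrow> h \<in> Hom C \<Delta> (ext C \<Gamma> A) \<longrightarrow>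
        pair C A (cmp C (pr C \<Gamma> A) h) (esub C (tsub C A (pr C \<Gamma> A)) (var C \<Gamma> A) h) = h)"

record ('o1, 'm1, 't1, 'e1, 'o2, 'm2, 't2, 'e2) cwf_mor =
  Fo :: "'o1 \<Rightarrow> 'o2"
  Fa :: "'m1 \<Rightarrow> 'm2"
  sg :: "'o1 \<Rightarrow> 't1 \<Rightarrow> 't2"
  th :: "'o1 \<Rightarrow> 't1 \<Rightarrow> 'e1 \<Rightarrow> 'e2"

definition cwf_morphism ::
  "('o1, 'm1, 't1, 'e1, 'z1) cwf_scheme \<Rightarrow> ('o2, 'm2, 't2, 'e2, 'z2) cwf_scheme \<Rightarrow>
   ('o1, 'm1, 't1, 'e1, 'o2, 'm2, 't2, 'e2) cwf_mor \<Rightarrow> bool" where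
  "cwf_morphism C D F \<longleftrightarrow>
   \<comment> \<open>functor preserving the terminal object\<close>
     (\<forall>\<Gamma> \<in> Ob C. Fo F \<Gamma> \<in> Ob D)
   \<and> (\<forall>\<Delta> \<Gamma> f. f \<in> Hom C \<Delta> \<Gamma> \<longrightarrow> Fa F f \<in> Hom D (Fo F \<Delta>) (Fo F \<Gamma>))
   \<and> (\<forall>\<Gamma> \<in> Ob C. Fa F (idm C \<Gamma>) = idm D (Fo F \<Gamma>))
   \<and> (\<forall>f g. f \<in> Arr C \<longrightarrow> g \<in> Arr C \<longrightarrow> cd C f = dm C g \<longrightarrow>
        Fa F (cmp C g f) = cmp D (Fa F g) (Fa F f))
   \<and> Fo F (trm C) = trm D
   \<comment> \<open>types\<close>
   \<and> (\<forall>\<Gamma> \<in> Ob C. \<forall>A \<in> cTy C \<Gamma>. sg F \<Gamma> A \<in> cTy D (Fo F \<Gamma>))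
   \<and> (\<forall>\<Delta> \<Gamma> f A. f \<in> Hom C \<Delta> \<Gamma> \<longrightarrow> A \<in> cTy C \<Gamma> \<longrightarrow>
        sg F \<Delta> (tsub C A f) = tsub D (sg F \<Gamma> A) (Fa F f))
   \<and> (\<forall>\<Gamma> \<in> Ob C. \<forall>A \<in> cTy C \<Gamma>.
        Fo F (ext C \<Gamma> A) = ext D (Fo F \<Gamma>) (sg F \<Gamma> A)
      \<and> Fa F (pr C \<Gamma> A) = pr D (Fo F \<Gamma>) (sg F \<Gamma> A))
   \<comment> \<open>terms\<close>
   \<and> (\<forall>\<Gamma> \<in> Ob C. \<forall>A \<in> cTy C \<Gamma>. \<forall>a \<in> cTm C \<Gamma> A. th F \<Gamma> A a \<in> cTm D (Fo F \<Gamma>) (sg F \<Gamma> A))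
   \<and> (\<forall>\<Delta> \<Gamma> f A a. f \<in> Hom C \<Delta> \<Gamma> \<longrightarrow> A \<in> cTy C \<Gamma> \<longrightarrow> a \<in> cTm C \<Gamma> A \<longrightarrow>
        th F \<Delta> (tsub C A f) (esub C A a f) = esub D (sg F \<Gamma> A) (th F \<Gamma> A a) (Fa F f))
   \<and> (\<forall>\<Gamma> \<in> Ob C. \<forall>A \<in> cTy C \<Gamma>.
        th F (ext C \<Gamma> A) (tsub C A (pr C \<Gamma> A)) (var C \<Gamma> A) = var D (Fo F \<Gamma>) (sg F \<Gamma> A))
   \<and> (\<forall>\<Delta> \<Gamma> f A a. f \<in> Hom C \<Delta> \<Gamma> \<longrightarrow> A \<in> cTy C \<Gamma> \<longrightarrow> a \<in> cTm C \<Delta> (tsub C A f) \<longrightarrow>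
        Fa F (pair C A f a) = pair D (sg F \<Gamma> A) (Fa F f) (th F \<Delta> (tsub C A f) a))"

definition mor_comp ::
  "('o2, 'm2, 't2, 'e2, 'o3, 'm3, 't3, 'e3) cwf_mor \<Rightarrow> ('o1, 'm1, 't1, 'e1, 'o2, 'm2, 't2, 'e2) cwf_mor \<Rightarrow>
   ('o1, 'm1, 't1, 'e1, 'o3, 'm3, 't3, 'e3) cwf_mor" where
  "mor_comp G F = \<lparr> Fo = Fo G \<circ> Fo F, Fa = Fa G \<circ> Fa F,
      sg = (\<lambda>\<Gamma> A. sg G (Fo F \<Gamma>) (sg F \<Gamma> A)),
      th = (\<lambda>\<Gamma> A a. th G (Fo F \<Gamma>) (sg F \<Gamma> A) (th F \<Gamma> A a)) \<rparr>"

text \<open>Equality of two cwf morphisms out of C: equality of all their components on the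
objects, morphisms, types and terms of C (values outside these are irrelevant junk).\<close>
definition mor_eq ::
  "('o1, 'm1, 't1, 'e1, 'z1) cwf_scheme \<Rightarrow>
   ('o1, 'm1, 't1, 'e1, 'o2, 'm2, 't2, 'e2) cwf_mor \<Rightarrow>
   ('o1, 'm1, 't1, 'e1, 'o2, 'm2, 't2, 'e2) cwf_mor \<Rightarrow> bool" where
  "mor_eq C F G \<longleftrightarrow>
     (\<forall>\<Gamma> \<in> Ob C. Fo F \<Gamma> = Fo G \<Gamma>)
   \<and> (\<forall>f \<in> Arr C. Fa F f = Fa G f)
   \<and> (\<forall>\<Gamma> \<in> Ob C. \<forall>A \<in> cTy C \<Gamma>. sg F \<Gamma> A = sg G \<Gamma> A)
   \<and> (\<forall>\<Gamma> \<in> Ob C. \<forall>A \<in> cTy C \<Gamma>. \<forall>a \<in> cTm C \<Gamma> A. th F \<Gamma> A a = th G \<Gamma> A a)"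

type_synonym ('s, 'f) fmor = "('s, 'f) ctx \<times> ('s, 'f) ctx \<times> 'f pre list"
type_synonym ('s, 'f) fty = "('s, 'f) ctx \<times> ('s, 'f) pty"
type_synonym ('s, 'f) ftm = "('s, 'f) fty \<times> 'f pre"

definition FOb :: "('s, 'f) decl set \<Rightarrow> ('s, 'f) ctx set" where
  "FOb Sig = {\<Gamma>. precontext \<Gamma> \<and> JCtx \<Gamma> \<in> Jdg Sig}"

definition FSig :: "('s, 'f) decl set \<Rightarrow>
    (('s, 'f) ctx, ('s, 'f) fmor, ('s, 'f) fty, ('s, 'f) ftm) cwf" where
  "FSig Sig = \<lparr>
     Ob = FOb Sig,
     Arr = {(\<Delta>, \<Gamma>, as). \<Delta> \<in> FOb Sig \<and> \<Gamma> \<in> FOb Sig \<and> cmap (Jdg Sig) as \<Delta> \<Gamma>},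
     dm = (\<lambda>(\<Delta>, \<Gamma>, as). \<Delta>),
     cd = (\<lambda>(\<Delta>, \<Gamma>, as). \<Gamma>),
     cmp = (\<lambda>(\<Gamma>, \<Theta>, ts) (\<Delta>, \<Gamma>', ss). (\<Delta>, \<Theta>, map (\<lambda>t. substPC t ss \<Gamma>') ts)),
     idm = (\<lambda>\<Gamma>. (\<Gamma>, \<Gamma>, map Var (OV \<Gamma>))),
     trm = [],
     cTy = (\<lambda>\<Gamma>. {(\<Gamma>', A). \<Gamma>' = \<Gamma> \<and> JTy A \<Gamma> \<in> Jdg Sig}),
     tsub = (\<lambda>(\<Gamma>, A) (\<Delta>, \<Gamma>', as). (\<Delta>, substTC A as \<Gamma>)),
     ext = (\<lambda>\<Gamma> (\<Gamma>', A). \<Gamma> @ [(fresh \<Gamma>, A)]),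
     pr = (\<lambda>\<Gamma> (\<Gamma>', A). (\<Gamma> @ [(fresh \<Gamma>, A)], \<Gamma>, map Var (OV \<Gamma>))),
     cTm = (\<lambda>\<Gamma> (\<Gamma>', A). {((\<Gamma>'', A'), a). \<Gamma>'' = \<Gamma> \<and> A' = A \<and> \<Gamma>' = \<Gamma> \<and> JTm a A \<Gamma> \<in> Jdg Sig}),
     esub = (\<lambda>(\<Gamma>, A) (_, a) (\<Delta>, \<Gamma>', as). ((\<Delta>, substTC A as \<Gamma>), substPC a as \<Gamma>)),
     var = (\<lambda>\<Gamma> (\<Gamma>', A). ((\<Gamma> @ [(fresh \<Gamma>, A)], A), Var (fresh \<Gamma>))),
     pair = (\<lambda>(\<Gamma>, A) (\<Delta>, \<Gamma>', ss) (_, b). (\<Delta>, \<Gamma> @ [(fresh \<Gamma>, A)], ss @ [b]))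
   \<rparr>"

definition Emb :: "(('s, 'f) ctx, ('s, 'f) fmor, ('s, 'f) fty, ('s, 'f) ftm,
                    ('s, 'f) ctx, ('s, 'f) fmor, ('s, 'f) fty, ('s, 'f) ftm) cwf_mor" where
  "Emb = \<lparr> Fo = id, Fa = id, sg = (\<lambda>\<Gamma> A. A), th = (\<lambda>\<Gamma> A a. a) \<rparr>"

end

theory Submission
  imports Defs
begin


lemma fr_gt: "finite X \<Longrightarrow> x \<in> X \<Longrightarrow> x < fr X"
  unfolding fr_def by (rule less_le_trans[of _ "Suc x"]) (auto intro: Max_ge)

lemma fresh_notin: "fresh \<Gamma> \<notin> set (OV \<Gamma>)"
  unfolding fresh_def using fr_gt[of "set (OV \<Gamma>)"] by auto

lemma precontext_fst: "precontext \<Gamma> \<Longrightarrow> k < length \<Gamma> \<Longrightarrow> fst (\<Gamma> ! k) = fresh (take k \<Gamma>)"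
  unfolding precontext_def fresh_def OV_def by (simp add: take_map)

lemma precontext_distinct: assumes "precontext \<Gamma>" shows "distinct (OV \<Gamma>)"
proof -
  have "\<And>i j. i < j \<Longrightarrow> j < length \<Gamma> \<Longrightarrow> fst (\<Gamma>!i) \<noteq> fst (\<Gamma>!j)"
  proof -
    fix i j assume ij: "i < j" "j < length \<Gamma>"
    have "fst (\<Gamma>!i) \<in> set (OV (take j \<Gamma>))" using ij
      by (auto simp: OV_def in_set_conv_nth intro!: image_eqI[of _ fst "\<Gamma>!i"] exI[of _ i])
    then show "fst (\<Gamma>!i) \<noteq> fst (\<Gamma>!j)" using precontext_fst[OF assms ij(2)] fresh_notin by metis
  qed
  then show ?thesis unfolding OV_def distinct_conv_nth
    by (metis length_map linorder_neqE_nat nth_map)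
qed

lemma precontext_take: "precontext \<Gamma> \<Longrightarrow> precontext (take k \<Gamma>)"
  unfolding precontext_def by (auto simp: min_def)

lemma take_Suc_pc: "precontext \<Gamma> \<Longrightarrow> k < length \<Gamma> \<Longrightarrow>
   take (Suc k) \<Gamma> = take k \<Gamma> @ [(fresh (take k \<Gamma>), snd (\<Gamma>!k))]"
  by (simp add: take_Suc_conv_app_nth precontext_fst[symmetric])

lemma precontext_snoc: "precontext (\<Gamma> @ [(fresh \<Gamma>, B)]) \<longleftrightarrow> precontext \<Gamma> \<and> varsT B \<subseteq> set (OV \<Gamma>)"
proof -
  have a: "\<And>k. k < length \<Gamma> \<Longrightarrow> (\<Gamma> @ [(fresh \<Gamma>, B)]) ! k = \<Gamma> ! k" by (simp add: nth_append)
  show ?thesis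
    unfolding precontext_def
    apply (auto simp: a nth_append less_Suc_eq fresh_def OV_def)
    done
qed

lemma smap_id: "smap xs (map Var xs) x = Var x"
  unfolding smap_def by (simp add: map_of_zip_map)

lemma substP_id: "(\<forall>x. \<rho> x = Var x) \<Longrightarrow> substP \<rho> t = t"
  by (induction t) (auto intro: map_idI)

lemma substT_id: "(\<forall>x. \<rho> x = Var x) \<Longrightarrow> substT \<rho> B = B"
  by (cases B) (auto intro: map_idI substP_id)

lemma substP_idv[simp]: "substP (smap xs (map Var xs)) t = t"
  by (rule substP_id) (simp add: smap_id)

lemma substT_idv[simp]: "substT (smap xs (map Var xs)) B = B"
  by (rule substT_id) (simp add: smap_id)

lemma smap_nth: "distinct xs \<Longrightarrow> length as = length xs \<Longrightarrow> i < length xs \<Longrightarrow> smap xs as (xs!i) = as!i"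
  unfolding smap_def by (simp add: map_of_zip_nth)

lemma substP_cong: "(\<And>x. x \<in> varsP t \<Longrightarrow> \<rho> x = \<rho>' x) \<Longrightarrow> substP \<rho> t = substP \<rho>' t"
  by (induction t) auto

lemma substP_comp: "substP \<rho> (substP \<sigma> t) = substP (\<lambda>x. substP \<rho> (\<sigma> x)) t"
  by (induction t) auto

lemma substT_comp: "substT \<rho> (substT \<sigma> B) = substT (\<lambda>x. substP \<rho> (\<sigma> x)) B"
  by (cases B) (auto simp: substP_comp)




lemma set_conv_nth_len: "length as = n \<Longrightarrow> x \<in> set as \<longleftrightarrow> (\<exists>k<n. x = as!k)"
  by (auto simp: in_set_conv_nth)

lemma Jdg_vars: "j \<in> Jdg X \<Longrightarrow> (case j of JCtx \<Gamma> \<Rightarrow> True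
   | JTy B \<Gamma> \<Rightarrow> varsT B \<subseteq> set (OV \<Gamma>) | JTm a B \<Gamma> \<Rightarrow> varsP a \<subseteq> set (OV \<Gamma>))"
proof (induction rule: Jdg.induct)
  case (R3 \<Gamma> i) then show ?case by (auto simp: OV_def)
next
  case (R4 \<Gamma> S \<Delta> as) then show ?case by (force simp: in_set_conv_nth)
next
  case (R5 \<Gamma> f U \<Delta> as) then show ?case by (force simp: in_set_conv_nth)
qed auto

lemma JTy_vars: "JTy B \<Gamma> \<in> Jdg X \<Longrightarrow> varsT B \<subseteq> set (OV \<Gamma>)"
  using Jdg_vars by fastforce
lemma JTm_vars: "JTm a B \<Gamma> \<in> Jdg X \<Longrightarrow> varsP a \<subseteq> set (OV \<Gamma>)"
  using Jdg_vars by fastforce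

lemma Jdg_pc: "j \<in> Jdg X \<Longrightarrow> (case j of JCtx \<Gamma> \<Rightarrow> precontext \<Gamma> | _ \<Rightarrow> True)"
proof (induction rule: Jdg.induct)
  case R1 then show ?case by (simp add: precontext_def)
next
  case (R2 \<Gamma> A) then show ?case by (simp add: precontext_snoc JTy_vars)
qed auto

lemma JCtx_pc: "JCtx \<Gamma> \<in> Jdg X \<Longrightarrow> precontext \<Gamma>"
  using Jdg_pc by fastforce

lemma Jdg_presup: "j \<in> Jdg X \<Longrightarrow> (case j of JCtx \<Gamma> \<Rightarrow> True
   | JTy B \<Gamma> \<Rightarrow> JCtx \<Gamma> \<in> Jdg X | JTm a B \<Gamma> \<Rightarrow> JCtx \<Gamma> \<in> Jdg X)"
  by (induction rule: Jdg.induct) auto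

lemma JTy_ctx: "JTy B \<Gamma> \<in> Jdg X \<Longrightarrow> JCtx \<Gamma> \<in> Jdg X"
  using Jdg_presup by fastforce
lemma JTm_ctx: "JTm a B \<Gamma> \<in> Jdg X \<Longrightarrow> JCtx \<Gamma> \<in> Jdg X"
  using Jdg_presup by fastforce

lemma JCtx_inv: "JCtx \<Gamma>' \<in> Jdg X \<Longrightarrow> \<Gamma>' = [] \<or> (\<exists>\<Gamma> B. \<Gamma>' = \<Gamma> @ [(fresh \<Gamma>, B)] \<and> JCtx \<Gamma> \<in> Jdg X \<and> JTy B \<Gamma> \<in> Jdg X)"
  by (erule Jdg.cases) auto

lemma Jdg_weak: "j \<in> Jdg X \<Longrightarrow> (case j of JCtx \<Gamma> \<Rightarrow> True
   | JTy B \<Gamma> \<Rightarrow> (\<forall>y C. JCtx (\<Gamma> @ [(y, C)]) \<in> Jdg X \<longrightarrow> JTy B (\<Gamma> @ [(y, C)]) \<in> Jdg X)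
   | JTm a B \<Gamma> \<Rightarrow> (\<forall>y C. JCtx (\<Gamma> @ [(y, C)]) \<in> Jdg X \<longrightarrow> JTm a B (\<Gamma> @ [(y, C)]) \<in> Jdg X))"
proof (induction rule: Jdg.induct)
  case (R3 \<Gamma> i)
  show ?case
  proof (simp, intro allI impI)
    fix y C assume h: "JCtx (\<Gamma> @ [(y, C)]) \<in> Jdg X"
    have "JTm (Var (fst ((\<Gamma> @ [(y, C)]) ! i))) (snd ((\<Gamma> @ [(y, C)]) ! i)) (\<Gamma> @ [(y, C)]) \<in> Jdg X"
      by (rule Jdg.R3[OF h]) (use R3 in simp)
    then show "JTm (Var (fst (\<Gamma> ! i))) (snd (\<Gamma> ! i)) (\<Gamma> @ [(y, C)]) \<in> Jdg X"
      using R3 by (simp add: nth_append)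
  qed
next
  case (R4 \<Gamma> S \<Delta> as)
  then show ?case by (auto intro!: Jdg.R4)
next
  case (R5 \<Gamma> f U \<Delta> as)
  then show ?case by (auto intro!: Jdg.R5)
qed auto

lemma JTy_weak: "JTy B \<Gamma> \<in> Jdg X \<Longrightarrow> JCtx (\<Gamma> @ [(y, C)]) \<in> Jdg X \<Longrightarrow> JTy B (\<Gamma> @ [(y, C)]) \<in> Jdg X"
  using Jdg_weak by fastforce
lemma JTm_weak: "JTm a B \<Gamma> \<in> Jdg X \<Longrightarrow> JCtx (\<Gamma> @ [(y, C)]) \<in> Jdg X \<Longrightarrow> JTm a B (\<Gamma> @ [(y, C)]) \<in> Jdg X"
  using Jdg_weak by fastforce

lemma Jdg_prefix: "j \<in> Jdg X \<Longrightarrow> (case j of JCtx \<Gamma> \<Rightarrow>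
    (\<forall>k \<le> length \<Gamma>. JCtx (take k \<Gamma>) \<in> Jdg X \<and> (k < length \<Gamma> \<longrightarrow> JTy (snd (\<Gamma>!k)) (take k \<Gamma>) \<in> Jdg X)
      \<and> (k < length \<Gamma> \<longrightarrow> JTy (snd (\<Gamma>!k)) \<Gamma> \<in> Jdg X)) | _ \<Rightarrow> True)"
proof (induction rule: Jdg.induct)
  case R1 then show ?case by (auto intro: Jdg.R1)
next
  case (R2 \<Gamma> A)
  have c: "JCtx (\<Gamma> @ [(fresh \<Gamma>, A)]) \<in> Jdg X" using R2 by (auto intro: Jdg.R2)
  define \<Gamma>' where "\<Gamma>' = \<Gamma> @ [(fresh \<Gamma>, A)]"
  have "\<forall>k \<le> length \<Gamma>'. JCtx (take k \<Gamma>') \<in> Jdg X \<and> (k < length \<Gamma>' \<longrightarrow> JTy (snd (\<Gamma>'!k)) (take k \<Gamma>') \<in> Jdg X)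
      \<and> (k < length \<Gamma>' \<longrightarrow> JTy (snd (\<Gamma>'!k)) \<Gamma>' \<in> Jdg X)"
  proof (intro allI impI conjI)
    fix k assume k: "k \<le> length \<Gamma>'"
    show "JCtx (take k \<Gamma>') \<in> Jdg X"
      using R2 k c unfolding \<Gamma>'_def by (cases "k \<le> length \<Gamma>") (auto simp: le_Suc_eq)
    show "k < length \<Gamma>' \<Longrightarrow> JTy (snd (\<Gamma>'!k)) (take k \<Gamma>') \<in> Jdg X"
      using R2 k unfolding \<Gamma>'_def by (auto simp: nth_append less_Suc_eq)
    show "k < length \<Gamma>' \<Longrightarrow> JTy (snd (\<Gamma>'!k)) \<Gamma>' \<in> Jdg X"
      using R2 k c unfolding \<Gamma>'_def by (auto simp: nth_append less_Suc_eq intro: JTy_weak)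
  qed
  then show ?case unfolding \<Gamma>'_def by simp
qed auto

lemma JCtx_take: "JCtx \<Gamma> \<in> Jdg X \<Longrightarrow> JCtx (take k \<Gamma>) \<in> Jdg X"
  using Jdg_prefix[of "JCtx \<Gamma>" X] by (cases "k \<le> length \<Gamma>") auto
lemma JCtx_tyk: "JCtx \<Gamma> \<in> Jdg X \<Longrightarrow> k < length \<Gamma> \<Longrightarrow> JTy (snd (\<Gamma>!k)) (take k \<Gamma>) \<in> Jdg X"
  using Jdg_prefix[of "JCtx \<Gamma>" X] by auto
lemma JCtx_tyw: "JCtx \<Gamma> \<in> Jdg X \<Longrightarrow> k < length \<Gamma> \<Longrightarrow> JTy (snd (\<Gamma>!k)) \<Gamma> \<in> Jdg X"
  using Jdg_prefix[of "JCtx \<Gamma>" X] by auto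

lemma JTm_ty: "JTm a B \<Gamma> \<in> Jdg X \<Longrightarrow> JTy B \<Gamma> \<in> Jdg X"
  by (erule Jdg.cases) (auto intro: JCtx_tyw)

lemma Jdg_mono: "j \<in> Jdg X \<Longrightarrow> X \<subseteq> Y \<Longrightarrow> j \<in> Jdg Y"
  by (induction rule: Jdg.induct) (auto intro: Jdg.intros)




definition tmap :: "('o, 'm, 't, 'e, 'z) cwf_scheme \<Rightarrow> 'o \<Rightarrow> 'm" where
  "tmap C D = (THE f. f \<in> Hom C D (trm C))"

fun tOb :: "('o, 'm, 't, 'e, 'z) cwf_scheme \<Rightarrow> (nat \<Rightarrow> 't) \<Rightarrow> nat \<Rightarrow> 'o" where
  "tOb C Ts 0 = trm C"
| "tOb C Ts (Suc k) = ext C (tOb C Ts k) (Ts k)"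

fun SM :: "('o, 'm, 't, 'e, 'z) cwf_scheme \<Rightarrow> 'o \<Rightarrow> (nat \<Rightarrow> 't) \<Rightarrow> (nat \<Rightarrow> 'e) \<Rightarrow> nat \<Rightarrow> 'm" where
  "SM C D Ts es 0 = tmap C D"
| "SM C D Ts es (Suc k) = pair C (Ts k) (SM C D Ts es k) (es k)"

definition SMok :: "('o, 'm, 't, 'e, 'z) cwf_scheme \<Rightarrow> 'o \<Rightarrow> (nat \<Rightarrow> 't) \<Rightarrow> (nat \<Rightarrow> 'e) \<Rightarrow> nat \<Rightarrow> bool" where
  "SMok C D Ts es n \<longleftrightarrow> (\<forall>k<n. Ts k \<in> cTy C (tOb C Ts k) \<and> es k \<in> cTm C D (tsub C (Ts k) (SM C D Ts es k)))"

lemma tOb_cong: "(\<And>k. k < n \<Longrightarrow> Ts k = Ts' k) \<Longrightarrow> tOb C Ts n = tOb C Ts' n"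
  by (induction n) auto

lemma SM_cong: "(\<And>k. k < n \<Longrightarrow> Ts k = Ts' k) \<Longrightarrow> (\<And>k. k < n \<Longrightarrow> es k = es' k) \<Longrightarrow>
   SM C D Ts es n = SM C D Ts' es' n"
  by (induction n) auto

lemma SMok_mono: "SMok C D Ts es n \<Longrightarrow> k \<le> n \<Longrightarrow> SMok C D Ts es k"
  unfolding SMok_def by auto

lemma SMok_Suc: "SMok C D Ts es (Suc n) \<longleftrightarrow> SMok C D Ts es n \<and> Ts n \<in> cTy C (tOb C Ts n) \<and> es n \<in> cTm C D (tsub C (Ts n) (SM C D Ts es n))"
  unfolding SMok_def by (auto simp: less_Suc_eq)

locale cw =
  fixes C :: "('o, 'm, 't, 'e, 'z) cwf_scheme"
  assumes cwf: "is_cwf C"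
begin

lemmas ax1 = cwf[unfolded is_cwf_def, THEN conjunct1]
lemmas ax2 = cwf[unfolded is_cwf_def, THEN conjunct2, THEN conjunct1]
lemmas ax3 = cwf[unfolded is_cwf_def, THEN conjunct2, THEN conjunct2, THEN conjunct1]
lemmas ax4 = cwf[unfolded is_cwf_def, THEN conjunct2, THEN conjunct2, THEN conjunct2, THEN conjunct1]
lemmas ax5 = cwf[unfolded is_cwf_def, THEN conjunct2, THEN conjunct2, THEN conjunct2, THEN conjunct2, THEN conjunct1]
lemmas ax6 = cwf[unfolded is_cwf_def, THEN conjunct2, THEN conjunct2, THEN conjunct2, THEN conjunct2, THEN conjunct2, THEN conjunct1]
lemmas ax7 = cwf[unfolded is_cwf_def, THEN conjunct2, THEN conjunct2, THEN conjunct2, THEN conjunct2, THEN conjunct2, THEN conjunct2, THEN conjunct1]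
lemmas ax8 = cwf[unfolded is_cwf_def, THEN conjunct2, THEN conjunct2, THEN conjunct2, THEN conjunct2, THEN conjunct2, THEN conjunct2, THEN conjunct2, THEN conjunct1]
lemmas ax9 = cwf[unfolded is_cwf_def, THEN conjunct2, THEN conjunct2, THEN conjunct2, THEN conjunct2, THEN conjunct2, THEN conjunct2, THEN conjunct2, THEN conjunct2, THEN conjunct1]
lemmas ax10 = cwf[unfolded is_cwf_def, THEN conjunct2, THEN conjunct2, THEN conjunct2, THEN conjunct2, THEN conjunct2, THEN conjunct2, THEN conjunct2, THEN conjunct2, THEN conjunct2, THEN conjunct1]
lemmas ax11 = cwf[unfolded is_cwf_def, THEN conjunct2, THEN conjunct2, THEN conjunct2, THEN conjunct2, THEN conjunct2, THEN conjunct2, THEN conjunct2, THEN conjunct2, THEN conjunct2, THEN conjunct2, THEN conjunct1]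
lemmas ax12 = cwf[unfolded is_cwf_def, THEN conjunct2, THEN conjunct2, THEN conjunct2, THEN conjunct2, THEN conjunct2, THEN conjunct2, THEN conjunct2, THEN conjunct2, THEN conjunct2, THEN conjunct2, THEN conjunct2, THEN conjunct1]
lemmas ax13 = cwf[unfolded is_cwf_def, THEN conjunct2, THEN conjunct2, THEN conjunct2, THEN conjunct2, THEN conjunct2, THEN conjunct2, THEN conjunct2, THEN conjunct2, THEN conjunct2, THEN conjunct2, THEN conjunct2, THEN conjunct2, THEN conjunct1]
lemmas ax14 = cwf[unfolded is_cwf_def, THEN conjunct2, THEN conjunct2, THEN conjunct2, THEN conjunct2, THEN conjunct2, THEN conjunct2, THEN conjunct2, THEN conjunct2, THEN conjunct2, THEN conjunct2, THEN conjunct2, THEN conjunct2, THEN conjunct2, THEN conjunct1]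
lemmas ax15 = cwf[unfolded is_cwf_def, THEN conjunct2, THEN conjunct2, THEN conjunct2, THEN conjunct2, THEN conjunct2, THEN conjunct2, THEN conjunct2, THEN conjunct2, THEN conjunct2, THEN conjunct2, THEN conjunct2, THEN conjunct2, THEN conjunct2, THEN conjunct2, THEN conjunct1]
lemmas ax16 = cwf[unfolded is_cwf_def, THEN conjunct2, THEN conjunct2, THEN conjunct2, THEN conjunct2, THEN conjunct2, THEN conjunct2, THEN conjunct2, THEN conjunct2, THEN conjunct2, THEN conjunct2, THEN conjunct2, THEN conjunct2, THEN conjunct2, THEN conjunct2, THEN conjunct2, THEN conjunct1]
lemmas ax17 = cwf[unfolded is_cwf_def, THEN conjunct2, THEN conjunct2, THEN conjunct2, THEN conjunct2, THEN conjunct2, THEN conjunct2, THEN conjunct2, THEN conjunct2, THEN conjunct2, THEN conjunct2, THEN conjunct2, THEN conjunct2, THEN conjunct2, THEN conjunct2, THEN conjunct2, THEN conjunct2]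

lemma Hom_Ob: "f \<in> Hom C \<Delta> \<Gamma> \<Longrightarrow> \<Delta> \<in> Ob C \<and> \<Gamma> \<in> Ob C"
  using ax1 unfolding Hom_def by auto
lemma Hom_Arr: "f \<in> Hom C \<Delta> \<Gamma> \<Longrightarrow> f \<in> Arr C \<and> dm C f = \<Delta> \<and> cd C f = \<Gamma>"
  unfolding Hom_def by auto
lemma idm_Hom: "\<Gamma> \<in> Ob C \<Longrightarrow> idm C \<Gamma> \<in> Hom C \<Gamma> \<Gamma>"
  by (rule ax2[rule_format])
lemma cmp_Hom: "f \<in> Hom C \<Delta> \<Gamma> \<Longrightarrow> g \<in> Hom C \<Gamma> \<Theta> \<Longrightarrow> cmp C g f \<in> Hom C \<Delta> \<Theta>"
  by (rule ax3[rule_format])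
lemma cmp_idl: "f \<in> Hom C \<Delta> \<Gamma> \<Longrightarrow> cmp C (idm C \<Gamma>) f = f"
  using ax4 unfolding Hom_def by auto
lemma cmp_idr: "f \<in> Hom C \<Delta> \<Gamma> \<Longrightarrow> cmp C f (idm C \<Delta>) = f"
  using ax4 unfolding Hom_def by auto
lemma cmp_assoc: "f \<in> Hom C \<Delta> \<Gamma> \<Longrightarrow> g \<in> Hom C \<Gamma> \<Theta> \<Longrightarrow> h \<in> Hom C \<Theta> \<Xi> \<Longrightarrow>
   cmp C h (cmp C g f) = cmp C (cmp C h g) f"
  using ax5 unfolding Hom_def by auto
lemma trm_Ob: "trm C \<in> Ob C"
  by (rule ax6)
lemma trm_unique: "f \<in> Hom C \<Gamma> (trm C) \<Longrightarrow> g \<in> Hom C \<Gamma> (trm C) \<Longrightarrow> f = g"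
proof -
  assume a: "f \<in> Hom C \<Gamma> (trm C)" "g \<in> Hom C \<Gamma> (trm C)"
  then have "\<Gamma> \<in> Ob C" using Hom_Ob by blast
  then have "\<exists>!f. f \<in> Hom C \<Gamma> (trm C)" using ax7 by blast
  then show ?thesis using a by blast
qed
lemma tmap_Hom: "\<Gamma> \<in> Ob C \<Longrightarrow> tmap C \<Gamma> \<in> Hom C \<Gamma> (trm C)"
proof -
  assume "\<Gamma> \<in> Ob C"
  then have "\<exists>!f. f \<in> Hom C \<Gamma> (trm C)" using ax7 by blast
  then show ?thesis unfolding tmap_def by (rule theI')
qed
lemma tsub_ty: "f \<in> Hom C \<Delta> \<Gamma> \<Longrightarrow> A \<in> cTy C \<Gamma> \<Longrightarrow> tsub C A f \<in> cTy C \<Delta>"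
  by (rule ax8[rule_format])
lemma tsub_id: "\<Gamma> \<in> Ob C \<Longrightarrow> A \<in> cTy C \<Gamma> \<Longrightarrow> tsub C A (idm C \<Gamma>) = A"
  by (rule ax9[rule_format])
lemma tsub_cmp: "f \<in> Hom C \<Delta> \<Gamma> \<Longrightarrow> g \<in> Hom C \<Theta> \<Delta> \<Longrightarrow> A \<in> cTy C \<Gamma> \<Longrightarrow>
   tsub C A (cmp C f g) = tsub C (tsub C A f) g"
  by (rule ax10[rule_format])
lemma ext_Ob: "\<Gamma> \<in> Ob C \<Longrightarrow> A \<in> cTy C \<Gamma> \<Longrightarrow> ext C \<Gamma> A \<in> Ob C"
  by (rule ax11[rule_format, THEN conjunct1])
lemma pr_Hom: "\<Gamma> \<in> Ob C \<Longrightarrow> A \<in> cTy C \<Gamma> \<Longrightarrow> pr C \<Gamma> A \<in> Hom C (ext C \<Gamma> A) \<Gamma>"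
  by (rule ax11[rule_format, THEN conjunct2])
lemma esub_tm: "f \<in> Hom C \<Delta> \<Gamma> \<Longrightarrow> A \<in> cTy C \<Gamma> \<Longrightarrow> a \<in> cTm C \<Gamma> A \<Longrightarrow> esub C A a f \<in> cTm C \<Delta> (tsub C A f)"
  by (rule ax12[rule_format])
lemma esub_id: "\<Gamma> \<in> Ob C \<Longrightarrow> A \<in> cTy C \<Gamma> \<Longrightarrow> a \<in> cTm C \<Gamma> A \<Longrightarrow> esub C A a (idm C \<Gamma>) = a"
  by (rule ax13[rule_format])
lemma esub_cmp: "f \<in> Hom C \<Delta> \<Gamma> \<Longrightarrow> g \<in> Hom C \<Theta> \<Delta> \<Longrightarrow> A \<in> cTy C \<Gamma> \<Longrightarrow> a \<in> cTm C \<Gamma> A \<Longrightarrow>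
   esub C A a (cmp C f g) = esub C (tsub C A f) (esub C A a f) g"
  by (rule ax14[rule_format])
lemma var_tm: "\<Gamma> \<in> Ob C \<Longrightarrow> A \<in> cTy C \<Gamma> \<Longrightarrow> var C \<Gamma> A \<in> cTm C (ext C \<Gamma> A) (tsub C A (pr C \<Gamma> A))"
  by (rule ax15[rule_format])
lemma pair_ax: "f \<in> Hom C \<Delta> \<Gamma> \<Longrightarrow> A \<in> cTy C \<Gamma> \<Longrightarrow> a \<in> cTm C \<Delta> (tsub C A f) \<Longrightarrow>
        pair C A f a \<in> Hom C \<Delta> (ext C \<Gamma> A)
      \<and> cmp C (pr C \<Gamma> A) (pair C A f a) = f
      \<and> esub C (tsub C A (pr C \<Gamma> A)) (var C \<Gamma> A) (pair C A f a) = a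
      \<and> (\<forall>\<Theta> g. g \<in> Hom C \<Theta> \<Delta> \<longrightarrow>
           cmp C (pair C A f a) g = pair C A (cmp C f g) (esub C (tsub C A f) a g))"
  by (rule ax16[rule_format])
lemma pair_eta: "\<Gamma> \<in> Ob C \<Longrightarrow> A \<in> cTy C \<Gamma> \<Longrightarrow> h \<in> Hom C \<Delta> (ext C \<Gamma> A) \<Longrightarrow>
        pair C A (cmp C (pr C \<Gamma> A) h) (esub C (tsub C A (pr C \<Gamma> A)) (var C \<Gamma> A) h) = h"
  by (rule ax17[rule_format])

lemma tOb_Ob: "SMok C D Ts es n \<Longrightarrow> tOb C Ts n \<in> Ob C"
proof (induction n)
  case 0 then show ?case by (simp add: trm_Ob)
next
  case (Suc n) then show ?case by (auto simp: SMok_Suc intro: ext_Ob)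
qed

lemma SM_Hom: "D \<in> Ob C \<Longrightarrow> SMok C D Ts es n \<Longrightarrow> SM C D Ts es n \<in> Hom C D (tOb C Ts n)"
proof (induction n)
  case 0 then show ?case by (simp add: tmap_Hom)
next
  case (Suc n) then show ?case by (auto simp: SMok_Suc dest: pair_ax)
qed

lemma SM_comp:
  assumes "D' \<in> Ob C" "m \<in> Hom C D' D" "SMok C D Ts es n"
  shows "cmp C (SM C D Ts es n) m = SM C D' Ts (\<lambda>k. esub C (tsub C (Ts k) (SM C D Ts es k)) (es k) m) n"
  using assms(3)
proof (induction n)
  case 0
  have D: "D \<in> Ob C" using assms Hom_Ob by blast
  show ?case using 0 trm_unique cmp_Hom[OF assms(2) tmap_Hom[OF D]] tmap_Hom[OF assms(1)] by simp
next
  case (Suc n)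
  have D: "D \<in> Ob C" using assms Hom_Ob by blast
  have h: "SMok C D Ts es n" "Ts n \<in> cTy C (tOb C Ts n)" "es n \<in> cTm C D (tsub C (Ts n) (SM C D Ts es n))"
    using Suc.prems by (auto simp: SMok_Suc)
  have "cmp C (pair C (Ts n) (SM C D Ts es n) (es n)) m
     = pair C (Ts n) (cmp C (SM C D Ts es n) m) (esub C (tsub C (Ts n) (SM C D Ts es n)) (es n) m)"
    using pair_ax[OF SM_Hom[OF D h(1)] h(2) h(3)] assms(2) by blast
  then show ?case using Suc.IH[OF h(1)] by simp
qed

lemma SMok_comp:
  assumes "D' \<in> Ob C" "m \<in> Hom C D' D" "SMok C D Ts es n"
  shows "SMok C D' Ts (\<lambda>k. esub C (tsub C (Ts k) (SM C D Ts es k)) (es k) m) n"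
  unfolding SMok_def
proof (intro allI impI conjI)
  fix k assume k: "k < n"
  have D: "D \<in> Ob C" using assms Hom_Ob by blast
  have ok: "SMok C D Ts es k" using assms(3) k by (auto intro: SMok_mono)
  show "Ts k \<in> cTy C (tOb C Ts k)" using assms(3) k by (simp add: SMok_def)
  have e: "es k \<in> cTm C D (tsub C (Ts k) (SM C D Ts es k))" using assms(3) k by (simp add: SMok_def)
  have "SM C D' Ts (\<lambda>k. esub C (tsub C (Ts k) (SM C D Ts es k)) (es k) m) k = cmp C (SM C D Ts es k) m"
    using SM_comp[OF assms(1,2) ok] by simp
  moreover have "tsub C (Ts k) (cmp C (SM C D Ts es k) m) = tsub C (tsub C (Ts k) (SM C D Ts es k)) m"
    using tsub_cmp[OF SM_Hom[OF D ok] assms(2)] \<open>Ts k \<in> cTy C (tOb C Ts k)\<close> by blast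
  ultimately show "esub C (tsub C (Ts k) (SM C D Ts es k)) (es k) m
         \<in> cTm C D' (tsub C (Ts k) (SM C D' Ts (\<lambda>k. esub C (tsub C (Ts k) (SM C D Ts es k)) (es k) m) k))"
    using esub_tm[OF assms(2) _ e] tsub_ty[OF SM_Hom[OF D ok]] \<open>Ts k \<in> cTy C (tOb C Ts k)\<close> by simp
qed

end




lemma FSig_simps[simp]:
  "Ob (FSig X) = FOb X"
  "Arr (FSig X) = {(\<Delta>, \<Gamma>, as). \<Delta> \<in> FOb X \<and> \<Gamma> \<in> FOb X \<and> cmap (Jdg X) as \<Delta> \<Gamma>}"
  "dm (FSig X) (\<Delta>, \<Gamma>, as) = \<Delta>"
  "cd (FSig X) (\<Delta>, \<Gamma>, as) = \<Gamma>"
  "cmp (FSig X) (\<Gamma>, \<Theta>, ts) (\<Delta>, \<Gamma>', ss) = (\<Delta>, \<Theta>, map (\<lambda>t. substPC t ss \<Gamma>') ts)"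
  "idm (FSig X) \<Gamma> = (\<Gamma>, \<Gamma>, map Var (OV \<Gamma>))"
  "trm (FSig X) = []"
  "cTy (FSig X) \<Gamma> = {(\<Gamma>', A). \<Gamma>' = \<Gamma> \<and> JTy A \<Gamma> \<in> Jdg X}"
  "tsub (FSig X) (\<Gamma>, A) (\<Delta>, \<Gamma>', as) = (\<Delta>, substTC A as \<Gamma>)"
  "ext (FSig X) \<Gamma> (\<Gamma>', A) = \<Gamma> @ [(fresh \<Gamma>, A)]"
  "pr (FSig X) \<Gamma> (\<Gamma>', A) = (\<Gamma> @ [(fresh \<Gamma>, A)], \<Gamma>, map Var (OV \<Gamma>))"
  "cTm (FSig X) \<Gamma> (\<Gamma>', A) = {((\<Gamma>'', A'), a). \<Gamma>'' = \<Gamma> \<and> A' = A \<and> \<Gamma>' = \<Gamma> \<and> JTm a A \<Gamma> \<in> Jdg X}"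
  "esub (FSig X) (\<Gamma>, A) (Y, a) (\<Delta>, \<Gamma>', as) = ((\<Delta>, substTC A as \<Gamma>), substPC a as \<Gamma>)"
  "var (FSig X) \<Gamma> (\<Gamma>', A) = ((\<Gamma> @ [(fresh \<Gamma>, A)], A), Var (fresh \<Gamma>))"
  "pair (FSig X) (\<Gamma>, A) (\<Delta>, \<Gamma>', ss) (Y, b) = (\<Delta>, \<Gamma> @ [(fresh \<Gamma>, A)], ss @ [b])"
  by (simp_all add: FSig_def)

lemma FHom: "(\<Delta>', \<Gamma>', as) \<in> Hom (FSig X) \<Delta> \<Gamma> \<longleftrightarrow> \<Delta>' = \<Delta> \<and> \<Gamma>' = \<Gamma> \<and> \<Delta> \<in> FOb X \<and> \<Gamma> \<in> FOb X \<and> cmap (Jdg X) as \<Delta> \<Gamma>"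
  by (auto simp: Hom_def)

lemma FHom_ex: "f \<in> Hom (FSig X) \<Delta> \<Gamma> \<Longrightarrow> \<exists>as. f = (\<Delta>, \<Gamma>, as)"
  by (auto simp: Hom_def)

lemma FOb_iff: "\<Gamma> \<in> FOb X \<longleftrightarrow> precontext \<Gamma> \<and> JCtx \<Gamma> \<in> Jdg X"
  by (simp add: FOb_def)

lemma FOb_take: "\<Gamma> \<in> FOb X \<Longrightarrow> take k \<Gamma> \<in> FOb X"
  by (auto simp: FOb_iff precontext_take JCtx_take)

lemma JCtx_FOb: "JCtx \<Gamma> \<in> Jdg X \<Longrightarrow> \<Gamma> \<in> FOb X"
  by (auto simp: FOb_iff JCtx_pc)

definition Bk :: "('s, 'f) ctx \<Rightarrow> 'f pre list \<Rightarrow> nat \<Rightarrow> ('s, 'f) pty" where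
  "Bk \<Gamma> as k = substT (smap (map fst (take k \<Gamma>)) (take k as)) (snd (\<Gamma> ! k))"

lemma cmap_take:
  assumes "cmap (Jdg X) as \<Delta> \<Gamma>" "\<Gamma> \<in> FOb X"
  shows "cmap (Jdg X) (take k as) \<Delta> (take k \<Gamma>)"
  using assms unfolding cmap_def by (auto simp: FOb_iff JCtx_take min_def)

lemma cmap_tm: "cmap (Jdg X) as \<Delta> \<Gamma> \<Longrightarrow> k < length \<Gamma> \<Longrightarrow> JTm (as!k) (Bk \<Gamma> as k) \<Delta> \<in> Jdg X"
  unfolding cmap_def Bk_def by blast

lemma Bk_take: "j < k \<Longrightarrow> Bk (take k \<Gamma>) (take k as) j = Bk \<Gamma> as j"
  unfolding Bk_def by (simp add: min_def)

definition telF :: "(('s, 'f) ctx, ('s, 'f) fmor, ('s, 'f) fty, ('s, 'f) ftm, 'o, 'm, 't, 'e) cwf_mor \<Rightarrow> ('s, 'f) ctx \<Rightarrow> nat \<Rightarrow> 't" where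
  "telF F \<Gamma> = (\<lambda>k. sg F (take k \<Gamma>) (take k \<Gamma>, snd (\<Gamma> ! k)))"

lemma telF_take: "j < k \<Longrightarrow> telF F (take k \<Gamma>) j = telF F \<Gamma> j"
  unfolding telF_def by (simp add: min_def)

locale fmor = cw C for C :: "('o, 'm, 't, 'e) cwf" +
  fixes X :: "('s, 'f) decl set" and F :: "(('s, 'f) ctx, ('s, 'f) fmor, ('s, 'f) fty, ('s, 'f) ftm, 'o, 'm, 't, 'e) cwf_mor"
  assumes morF: "cwf_morphism (FSig X) C F"
begin

lemmas max1 = morF[unfolded cwf_morphism_def, THEN conjunct1]
lemmas max2 = morF[unfolded cwf_morphism_def, THEN conjunct2, THEN conjunct1]
lemmas max3 = morF[unfolded cwf_morphism_def, THEN conjunct2, THEN conjunct2, THEN conjunct1]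
lemmas max4 = morF[unfolded cwf_morphism_def, THEN conjunct2, THEN conjunct2, THEN conjunct2, THEN conjunct1]
lemmas max5 = morF[unfolded cwf_morphism_def, THEN conjunct2, THEN conjunct2, THEN conjunct2, THEN conjunct2, THEN conjunct1]
lemmas max6 = morF[unfolded cwf_morphism_def, THEN conjunct2, THEN conjunct2, THEN conjunct2, THEN conjunct2, THEN conjunct2, THEN conjunct1]
lemmas max7 = morF[unfolded cwf_morphism_def, THEN conjunct2, THEN conjunct2, THEN conjunct2, THEN conjunct2, THEN conjunct2, THEN conjunct2, THEN conjunct1]
lemmas max8 = morF[unfolded cwf_morphism_def, THEN conjunct2, THEN conjunct2, THEN conjunct2, THEN conjunct2, THEN conjunct2, THEN conjunct2, THEN conjunct2, THEN conjunct1]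
lemmas max9 = morF[unfolded cwf_morphism_def, THEN conjunct2, THEN conjunct2, THEN conjunct2, THEN conjunct2, THEN conjunct2, THEN conjunct2, THEN conjunct2, THEN conjunct2, THEN conjunct1]
lemmas max10 = morF[unfolded cwf_morphism_def, THEN conjunct2, THEN conjunct2, THEN conjunct2, THEN conjunct2, THEN conjunct2, THEN conjunct2, THEN conjunct2, THEN conjunct2, THEN conjunct2, THEN conjunct1]
lemmas max11 = morF[unfolded cwf_morphism_def, THEN conjunct2, THEN conjunct2, THEN conjunct2, THEN conjunct2, THEN conjunct2, THEN conjunct2, THEN conjunct2, THEN conjunct2, THEN conjunct2, THEN conjunct2, THEN conjunct1]
lemmas max12 = morF[unfolded cwf_morphism_def, THEN conjunct2, THEN conjunct2, THEN conjunct2, THEN conjunct2, THEN conjunct2, THEN conjunct2, THEN conjunct2, THEN conjunct2, THEN conjunct2, THEN conjunct2, THEN conjunct2]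

lemma Fo_Ob: "\<Gamma> \<in> FOb X \<Longrightarrow> Fo F \<Gamma> \<in> Ob C"
  using max1 by simp
lemma Fa_Hom: "f \<in> Hom (FSig X) \<Delta> \<Gamma> \<Longrightarrow> Fa F f \<in> Hom C (Fo F \<Delta>) (Fo F \<Gamma>)"
  by (rule max2[rule_format])
lemma Fo_trm: "Fo F [] = trm C"
  using max5 by simp
lemma sg_ty: "\<Gamma> \<in> FOb X \<Longrightarrow> JTy B \<Gamma> \<in> Jdg X \<Longrightarrow> sg F \<Gamma> (\<Gamma>, B) \<in> cTy C (Fo F \<Gamma>)"
  using max6 by auto
lemma sg_tsub: "f \<in> Hom (FSig X) \<Delta> \<Gamma> \<Longrightarrow> JTy B \<Gamma> \<in> Jdg X \<Longrightarrow>
   sg F \<Delta> (tsub (FSig X) (\<Gamma>, B) f) = tsub C (sg F \<Gamma> (\<Gamma>, B)) (Fa F f)"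
  by (rule max7[rule_format]) (auto dest: FHom_ex simp: FHom)
lemma Fo_ext: "\<Gamma> \<in> FOb X \<Longrightarrow> JTy B \<Gamma> \<in> Jdg X \<Longrightarrow> Fo F (\<Gamma> @ [(fresh \<Gamma>, B)]) = ext C (Fo F \<Gamma>) (sg F \<Gamma> (\<Gamma>, B))"
  using max8 by force
lemma Fa_pr: "\<Gamma> \<in> FOb X \<Longrightarrow> JTy B \<Gamma> \<in> Jdg X \<Longrightarrow> Fa F (\<Gamma> @ [(fresh \<Gamma>, B)], \<Gamma>, map Var (OV \<Gamma>)) = pr C (Fo F \<Gamma>) (sg F \<Gamma> (\<Gamma>, B))"
  using max8 by force
lemma th_tm: "\<Gamma> \<in> FOb X \<Longrightarrow> JTy B \<Gamma> \<in> Jdg X \<Longrightarrow> JTm a B \<Gamma> \<in> Jdg X \<Longrightarrow> th F \<Gamma> (\<Gamma>, B) ((\<Gamma>, B), a) \<in> cTm C (Fo F \<Gamma>) (sg F \<Gamma> (\<Gamma>, B))"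
  using max9 by force
lemma th_esub: "(\<Delta>, \<Gamma>, as) \<in> Hom (FSig X) \<Delta> \<Gamma> \<Longrightarrow> JTy B \<Gamma> \<in> Jdg X \<Longrightarrow> JTm a B \<Gamma> \<in> Jdg X \<Longrightarrow>
   th F \<Delta> (\<Delta>, substTC B as \<Gamma>) ((\<Delta>, substTC B as \<Gamma>), substPC a as \<Gamma>) = esub C (sg F \<Gamma> (\<Gamma>, B)) (th F \<Gamma> (\<Gamma>, B) ((\<Gamma>, B), a)) (Fa F (\<Delta>, \<Gamma>, as))"
proof -
  assume a: "(\<Delta>, \<Gamma>, as) \<in> Hom (FSig X) \<Delta> \<Gamma>" "JTy B \<Gamma> \<in> Jdg X" "JTm a B \<Gamma> \<in> Jdg X"
  have "th F \<Delta> (tsub (FSig X) (\<Gamma>, B) (\<Delta>, \<Gamma>, as)) (esub (FSig X) (\<Gamma>, B) ((\<Gamma>, B), a) (\<Delta>, \<Gamma>, as)) = esub C (sg F \<Gamma> (\<Gamma>, B)) (th F \<Gamma> (\<Gamma>, B) ((\<Gamma>, B), a)) (Fa F (\<Delta>, \<Gamma>, as))"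
    by (rule max10[rule_format]) (use a in auto)
  then show ?thesis by simp
qed
lemma th_var: "\<Gamma> \<in> FOb X \<Longrightarrow> JTy B \<Gamma> \<in> Jdg X \<Longrightarrow>
   th F (\<Gamma> @ [(fresh \<Gamma>, B)]) (\<Gamma> @ [(fresh \<Gamma>, B)], B) ((\<Gamma> @ [(fresh \<Gamma>, B)], B), Var (fresh \<Gamma>)) = var C (Fo F \<Gamma>) (sg F \<Gamma> (\<Gamma>, B))"
proof -
  assume a: "\<Gamma> \<in> FOb X" "JTy B \<Gamma> \<in> Jdg X"
  have "th F (ext (FSig X) \<Gamma> (\<Gamma>, B)) (tsub (FSig X) (\<Gamma>, B) (pr (FSig X) \<Gamma> (\<Gamma>, B))) (var (FSig X) \<Gamma> (\<Gamma>, B)) = var C (Fo F \<Gamma>) (sg F \<Gamma> (\<Gamma>, B))"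
    using max11 a by auto
  then show ?thesis by simp
qed
lemma Fa_pair: "(\<Delta>, \<Gamma>, ss) \<in> Hom (FSig X) \<Delta> \<Gamma> \<Longrightarrow> JTy B \<Gamma> \<in> Jdg X \<Longrightarrow> JTm b (substTC B ss \<Gamma>) \<Delta> \<in> Jdg X \<Longrightarrow>
   Fa F (\<Delta>, \<Gamma> @ [(fresh \<Gamma>, B)], ss @ [b]) = pair C (sg F \<Gamma> (\<Gamma>, B)) (Fa F (\<Delta>, \<Gamma>, ss)) (th F \<Delta> (\<Delta>, substTC B ss \<Gamma>) ((\<Delta>, substTC B ss \<Gamma>), b))"
proof -
  assume a: "(\<Delta>, \<Gamma>, ss) \<in> Hom (FSig X) \<Delta> \<Gamma>" "JTy B \<Gamma> \<in> Jdg X" "JTm b (substTC B ss \<Gamma>) \<Delta> \<in> Jdg X"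
  have "Fa F (pair (FSig X) (\<Gamma>, B) (\<Delta>, \<Gamma>, ss) ((\<Delta>, substTC B ss \<Gamma>), b)) = pair C (sg F \<Gamma> (\<Gamma>, B)) (Fa F (\<Delta>, \<Gamma>, ss)) (th F \<Delta> (tsub (FSig X) (\<Gamma>, B) (\<Delta>, \<Gamma>, ss)) ((\<Delta>, substTC B ss \<Gamma>), b))"
    by (rule max12[rule_format]) (use a in auto)
  then show ?thesis by simp
qed

end




lemma OV_take: "OV (take k \<Gamma>) = map fst (take k \<Gamma>)" by (simp add: OV_def)

lemma nil_FOb: "[] \<in> FOb X"
  by (simp add: FOb_iff precontext_def Jdg.R1)

lemma take_nth_take: "j < k \<Longrightarrow> take k \<Gamma> ! j = \<Gamma> ! j" by simp

lemma cmap_proj: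
  assumes "JCtx (\<Gamma>1 @ R) \<in> Jdg X" "JCtx \<Gamma>1 \<in> Jdg X"
  shows "cmap (Jdg X) (map Var (OV \<Gamma>1)) (\<Gamma>1 @ R) \<Gamma>1"
  unfolding cmap_def
proof (intro conjI allI impI assms)
  show "length (map Var (OV \<Gamma>1)) = length \<Gamma>1" by (simp add: OV_def)
  fix k assume k: "k < length \<Gamma>1"
  have e: "take k (map Var (OV \<Gamma>1)) = map Var (map fst (take k \<Gamma>1))" by (simp add: OV_def take_map)
  have "JTm (Var (fst ((\<Gamma>1 @ R) ! k))) (snd ((\<Gamma>1 @ R) ! k)) (\<Gamma>1 @ R) \<in> Jdg X"
    using Jdg.R3[OF assms(1)] k by simp
  then show "JTm (map Var (OV \<Gamma>1) ! k) (substT (smap (map fst (take k \<Gamma>1)) (take k (map Var (OV \<Gamma>1)))) (snd (\<Gamma>1 ! k))) (\<Gamma>1 @ R) \<in> Jdg X"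
    using k by (simp only: e substT_idv) (simp add: nth_append OV_def)
qed

context fmor
begin

lemma tOb_telF: "\<Gamma> \<in> FOb X \<Longrightarrow> k \<le> length \<Gamma> \<Longrightarrow> tOb C (telF F \<Gamma>) k = Fo F (take k \<Gamma>)"
proof (induction k)
  case 0 then show ?case by (simp add: Fo_trm)
next
  case (Suc k)
  have k: "k < length \<Gamma>" using Suc by simp
  have pc: "precontext \<Gamma>" "JCtx \<Gamma> \<in> Jdg X" using Suc by (auto simp: FOb_iff)
  have "tOb C (telF F \<Gamma>) (Suc k) = ext C (Fo F (take k \<Gamma>)) (sg F (take k \<Gamma>) (take k \<Gamma>, snd (\<Gamma> ! k)))"
    using Suc by (simp add: telF_def)
  also have "\<dots> = Fo F (take k \<Gamma> @ [(fresh (take k \<Gamma>), snd (\<Gamma> ! k))])"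
    using Fo_ext[OF FOb_take[OF Suc.prems(1)] JCtx_tyk[OF pc(2) k]] by simp
  also have "\<dots> = Fo F (take (Suc k) \<Gamma>)" using take_Suc_pc[OF pc(1) k] by simp
  finally show ?case .
qed

lemma telF_ty: "\<Gamma> \<in> FOb X \<Longrightarrow> k < length \<Gamma> \<Longrightarrow> telF F \<Gamma> k \<in> cTy C (tOb C (telF F \<Gamma>) k)"
  using tOb_telF[of \<Gamma> k] sg_ty[OF FOb_take JCtx_tyk] by (auto simp: telF_def FOb_iff)

definition thes :: "('s, 'f) ctx \<Rightarrow> ('s, 'f) ctx \<Rightarrow> 'f pre list \<Rightarrow> nat \<Rightarrow> 'e" where
  "thes \<Delta> \<Gamma> as = (\<lambda>k. th F \<Delta> (\<Delta>, Bk \<Gamma> as k) ((\<Delta>, Bk \<Gamma> as k), as!k))"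

lemma Fa_dec_aux:
  assumes h: "(\<Delta>, \<Gamma>, as) \<in> Hom (FSig X) \<Delta> \<Gamma>"
  shows "k \<le> length \<Gamma> \<Longrightarrow> Fa F (\<Delta>, take k \<Gamma>, take k as) = SM C (Fo F \<Delta>) (telF F \<Gamma>) (thes \<Delta> \<Gamma> as) k
     \<and> SMok C (Fo F \<Delta>) (telF F \<Gamma>) (thes \<Delta> \<Gamma> as) k"
proof (induction k)
  have D: "\<Delta> \<in> FOb X" "\<Gamma> \<in> FOb X" "cmap (Jdg X) as \<Delta> \<Gamma>" using h by (auto simp: FHom)
  case 0
  have "(\<Delta>, [], []) \<in> Hom (FSig X) \<Delta> []"
    using D by (simp add: FHom nil_FOb cmap_def Jdg.R1 FOb_iff precontext_def)
  then have "Fa F (\<Delta>, [], []) \<in> Hom C (Fo F \<Delta>) (trm C)" using Fa_Hom Fo_trm by fastforce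
  then show ?case using trm_unique tmap_Hom[OF Fo_Ob[OF D(1)]] by (simp add: SMok_def)
next
  case (Suc k)
  have D: "\<Delta> \<in> FOb X" "\<Gamma> \<in> FOb X" "cmap (Jdg X) as \<Delta> \<Gamma>" using h by (auto simp: FHom)
  have k: "k < length \<Gamma>" using Suc by simp
  have pc: "precontext \<Gamma>" "JCtx \<Gamma> \<in> Jdg X" using D by (auto simp: FOb_iff)
  have len: "length as = length \<Gamma>" using D by (simp add: cmap_def)
  have IH: "Fa F (\<Delta>, take k \<Gamma>, take k as) = SM C (Fo F \<Delta>) (telF F \<Gamma>) (thes \<Delta> \<Gamma> as) k"
       "SMok C (Fo F \<Delta>) (telF F \<Gamma>) (thes \<Delta> \<Gamma> as) k" using Suc by auto
  have hk: "(\<Delta>, take k \<Gamma>, take k as) \<in> Hom (FSig X) \<Delta> (take k \<Gamma>)"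
    using D by (simp add: FHom FOb_take cmap_take)
  have ty: "JTy (snd (\<Gamma> ! k)) (take k \<Gamma>) \<in> Jdg X" using JCtx_tyk[OF pc(2) k] .
  have sB: "substTC (snd (\<Gamma> ! k)) (take k as) (take k \<Gamma>) = Bk \<Gamma> as k"
    by (simp add: Bk_def OV_take)
  have tm: "JTm (as ! k) (Bk \<Gamma> as k) \<Delta> \<in> Jdg X" using cmap_tm[OF D(3) k] .
  have "Fa F (\<Delta>, take (Suc k) \<Gamma>, take (Suc k) as) = Fa F (\<Delta>, take k \<Gamma> @ [(fresh (take k \<Gamma>), snd (\<Gamma> ! k))], take k as @ [as ! k])"
    using take_Suc_pc[OF pc(1) k] k len by (simp add: take_Suc_conv_app_nth)
  also have "\<dots> = pair C (telF F \<Gamma> k) (Fa F (\<Delta>, take k \<Gamma>, take k as)) (thes \<Delta> \<Gamma> as k)"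
    using Fa_pair[OF hk ty] tm sB by (simp add: telF_def thes_def)
  finally have e1: "Fa F (\<Delta>, take (Suc k) \<Gamma>, take (Suc k) as) = SM C (Fo F \<Delta>) (telF F \<Gamma>) (thes \<Delta> \<Gamma> as) (Suc k)"
    using IH by simp
  have sgB: "sg F \<Delta> (\<Delta>, Bk \<Gamma> as k) = tsub C (telF F \<Gamma> k) (SM C (Fo F \<Delta>) (telF F \<Gamma>) (thes \<Delta> \<Gamma> as) k)"
    using sg_tsub[OF hk ty] sB IH by (simp add: telF_def)
  have "thes \<Delta> \<Gamma> as k \<in> cTm C (Fo F \<Delta>) (sg F \<Delta> (\<Delta>, Bk \<Gamma> as k))"
    unfolding thes_def by (rule th_tm[OF D(1) JTm_ty[OF tm] tm])
  then have "SMok C (Fo F \<Delta>) (telF F \<Gamma>) (thes \<Delta> \<Gamma> as) (Suc k)"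
    using IH(2) telF_ty[OF D(2) k] sgB by (simp add: SMok_Suc)
  then show ?case using e1 by simp
qed

lemma Fa_dec:
  assumes h: "(\<Delta>, \<Gamma>, as) \<in> Hom (FSig X) \<Delta> \<Gamma>"
  shows "Fa F (\<Delta>, \<Gamma>, as) = SM C (Fo F \<Delta>) (telF F \<Gamma>) (thes \<Delta> \<Gamma> as) (length \<Gamma>)"
    "SMok C (Fo F \<Delta>) (telF F \<Gamma>) (thes \<Delta> \<Gamma> as) (length \<Gamma>)"
proof -
  have len: "length as = length \<Gamma>" using h by (simp add: FHom cmap_def)
  show "Fa F (\<Delta>, \<Gamma>, as) = SM C (Fo F \<Delta>) (telF F \<Gamma>) (thes \<Delta> \<Gamma> as) (length \<Gamma>)"
    using Fa_dec_aux[OF h, of "length \<Gamma>"] len by simp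
  show "SMok C (Fo F \<Delta>) (telF F \<Gamma>) (thes \<Delta> \<Gamma> as) (length \<Gamma>)"
    using Fa_dec_aux[OF h, of "length \<Gamma>"] by simp
qed

definition thv :: "('s, 'f) ctx \<Rightarrow> nat \<Rightarrow> 'e" where
  "thv \<Gamma> j = th F \<Gamma> (\<Gamma>, snd (\<Gamma> ! j)) ((\<Gamma>, snd (\<Gamma> ! j)), Var (fst (\<Gamma> ! j)))"
definition sgv :: "('s, 'f) ctx \<Rightarrow> nat \<Rightarrow> 't" where
  "sgv \<Gamma> j = sg F \<Gamma> (\<Gamma>, snd (\<Gamma> ! j))"

lemma var_weak:
  assumes G1: "\<Gamma>1 \<in> FOb X" and B: "JTy B \<Gamma>1 \<in> Jdg X" and j: "j < length \<Gamma>1"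
  defines "\<Gamma>' \<equiv> \<Gamma>1 @ [(fresh \<Gamma>1, B)]"
  shows "sg F \<Gamma>' (\<Gamma>', snd (\<Gamma>1 ! j)) = tsub C (sgv \<Gamma>1 j) (pr C (Fo F \<Gamma>1) (sg F \<Gamma>1 (\<Gamma>1, B)))"
    "th F \<Gamma>' (\<Gamma>', snd (\<Gamma>1 ! j)) ((\<Gamma>', snd (\<Gamma>1 ! j)), Var (fst (\<Gamma>1 ! j)))
       = esub C (sgv \<Gamma>1 j) (thv \<Gamma>1 j) (pr C (Fo F \<Gamma>1) (sg F \<Gamma>1 (\<Gamma>1, B)))"
proof -
  have c1: "JCtx \<Gamma>1 \<in> Jdg X" using G1 by (simp add: FOb_iff)
  have c': "JCtx \<Gamma>' \<in> Jdg X" unfolding \<Gamma>'_def using c1 B by (rule Jdg.R2)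
  have G': "\<Gamma>' \<in> FOb X" using c' by (rule JCtx_FOb)
  have hp: "(\<Gamma>', \<Gamma>1, map Var (OV \<Gamma>1)) \<in> Hom (FSig X) \<Gamma>' \<Gamma>1"
    using cmap_proj[of \<Gamma>1 "[(fresh \<Gamma>1, B)]" X] c' c1 G' G1 unfolding \<Gamma>'_def by (simp add: FHom)
  have tyj: "JTy (snd (\<Gamma>1 ! j)) \<Gamma>1 \<in> Jdg X" using JCtx_tyw[OF c1 j] .
  have tmj: "JTm (Var (fst (\<Gamma>1 ! j))) (snd (\<Gamma>1 ! j)) \<Gamma>1 \<in> Jdg X" using Jdg.R3[OF c1 j] .
  have pr: "Fa F (\<Gamma>', \<Gamma>1, map Var (OV \<Gamma>1)) = pr C (Fo F \<Gamma>1) (sg F \<Gamma>1 (\<Gamma>1, B))"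
    unfolding \<Gamma>'_def by (rule Fa_pr[OF G1 B])
  show "sg F \<Gamma>' (\<Gamma>', snd (\<Gamma>1 ! j)) = tsub C (sgv \<Gamma>1 j) (pr C (Fo F \<Gamma>1) (sg F \<Gamma>1 (\<Gamma>1, B)))"
    using sg_tsub[OF hp tyj] pr by (simp add: sgv_def)
  show "th F \<Gamma>' (\<Gamma>', snd (\<Gamma>1 ! j)) ((\<Gamma>', snd (\<Gamma>1 ! j)), Var (fst (\<Gamma>1 ! j)))
       = esub C (sgv \<Gamma>1 j) (thv \<Gamma>1 j) (pr C (Fo F \<Gamma>1) (sg F \<Gamma>1 (\<Gamma>1, B)))"
    using th_esub[OF hp tyj tmj] pr by (simp add: sgv_def thv_def smap_id)
qed

lemma pr_FHom: "\<Gamma>1 \<in> FOb X \<Longrightarrow> JTy B \<Gamma>1 \<in> Jdg X \<Longrightarrow>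
   (\<Gamma>1 @ [(fresh \<Gamma>1, B)], \<Gamma>1, map Var (OV \<Gamma>1)) \<in> Hom (FSig X) (\<Gamma>1 @ [(fresh \<Gamma>1, B)]) \<Gamma>1"
proof -
  assume G1: "\<Gamma>1 \<in> FOb X" and B: "JTy B \<Gamma>1 \<in> Jdg X"
  have c1: "JCtx \<Gamma>1 \<in> Jdg X" using G1 by (simp add: FOb_iff)
  have c': "JCtx (\<Gamma>1 @ [(fresh \<Gamma>1, B)]) \<in> Jdg X" using c1 B by (rule Jdg.R2)
  show ?thesis
    using cmap_proj[of \<Gamma>1 "[(fresh \<Gamma>1, B)]" X] c' c1 JCtx_FOb[OF c'] G1 by (simp add: FHom)
qed

lemma sg_last: "\<Gamma>1 \<in> FOb X \<Longrightarrow> JTy B \<Gamma>1 \<in> Jdg X \<Longrightarrow>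
  sg F (\<Gamma>1 @ [(fresh \<Gamma>1, B)]) (\<Gamma>1 @ [(fresh \<Gamma>1, B)], B) = tsub C (sg F \<Gamma>1 (\<Gamma>1, B)) (pr C (Fo F \<Gamma>1) (sg F \<Gamma>1 (\<Gamma>1, B)))"
  using sg_tsub[OF pr_FHom, of \<Gamma>1 B B] Fa_pr[of \<Gamma>1 B] by simp

lemma SM_var:
  assumes G0: "\<Gamma>0 \<in> FOb X" and D': "D' \<in> Ob C"
  shows "n \<le> length \<Gamma>0 \<Longrightarrow> SMok C D' (telF F \<Gamma>0) es n \<Longrightarrow> j < n \<Longrightarrow>
    esub C (sgv (take n \<Gamma>0) j) (thv (take n \<Gamma>0) j) (SM C D' (telF F \<Gamma>0) es n) = es j"
proof (induction n arbitrary: j)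
  case 0 then show ?case by simp
next
  case (Suc n)
  have n: "n < length \<Gamma>0" using Suc by simp
  have pc: "precontext \<Gamma>0" "JCtx \<Gamma>0 \<in> Jdg X" using G0 by (auto simp: FOb_iff)
  define \<Gamma>1 where "\<Gamma>1 = take n \<Gamma>0"
  define B where "B = snd (\<Gamma>0 ! n)"
  have G1: "\<Gamma>1 \<in> FOb X" unfolding \<Gamma>1_def using G0 by (rule FOb_take)
  have TB: "JTy B \<Gamma>1 \<in> Jdg X" unfolding B_def \<Gamma>1_def using JCtx_tyk[OF pc(2) n] .
  have tk: "take (Suc n) \<Gamma>0 = \<Gamma>1 @ [(fresh \<Gamma>1, B)]" unfolding \<Gamma>1_def B_def using take_Suc_pc[OF pc(1) n] .
  have ok: "SMok C D' (telF F \<Gamma>0) es n" "telF F \<Gamma>0 n \<in> cTy C (tOb C (telF F \<Gamma>0) n)"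
     "es n \<in> cTm C D' (tsub C (telF F \<Gamma>0 n) (SM C D' (telF F \<Gamma>0) es n))" using Suc.prems by (auto simp: SMok_Suc)
  have T: "telF F \<Gamma>0 n = sg F \<Gamma>1 (\<Gamma>1, B)" by (simp add: telF_def \<Gamma>1_def B_def)
  have tO: "tOb C (telF F \<Gamma>0) n = Fo F \<Gamma>1" using tOb_telF[OF G0] n unfolding \<Gamma>1_def by simp
  have M: "SM C D' (telF F \<Gamma>0) es n \<in> Hom C D' (Fo F \<Gamma>1)" using SM_Hom[OF D' ok(1)] tO by simp
  have Ty: "sg F \<Gamma>1 (\<Gamma>1, B) \<in> cTy C (Fo F \<Gamma>1)" using sg_ty[OF G1 TB] .
  have e: "es n \<in> cTm C D' (tsub C (sg F \<Gamma>1 (\<Gamma>1, B)) (SM C D' (telF F \<Gamma>0) es n))" using ok(3) T by simp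
  note P = pair_ax[OF M Ty e]
  have SMs: "SM C D' (telF F \<Gamma>0) es (Suc n) = pair C (sg F \<Gamma>1 (\<Gamma>1, B)) (SM C D' (telF F \<Gamma>0) es n) (es n)"
    using T by simp
  show ?case
  proof (cases "j = n")
    case True
    have "sgv (take (Suc n) \<Gamma>0) j = tsub C (sg F \<Gamma>1 (\<Gamma>1, B)) (pr C (Fo F \<Gamma>1) (sg F \<Gamma>1 (\<Gamma>1, B)))"
      using sg_last[OF G1 TB] True tk n by (simp add: sgv_def nth_append \<Gamma>1_def min_def)
    moreover have "thv (take (Suc n) \<Gamma>0) j = var C (Fo F \<Gamma>1) (sg F \<Gamma>1 (\<Gamma>1, B))"
      using th_var[OF G1 TB] True tk n by (simp add: thv_def nth_append \<Gamma>1_def min_def)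
    ultimately show ?thesis using P SMs True by simp
  next
    case False
    then have j: "j < n" using Suc by simp
    have jl: "j < length \<Gamma>1" using j n by (simp add: \<Gamma>1_def)
    have nth: "take (Suc n) \<Gamma>0 ! j = \<Gamma>1 ! j" using tk jl by (simp add: nth_append)
    note W = var_weak[OF G1 TB jl]
    have s1: "sgv (take (Suc n) \<Gamma>0) j = tsub C (sgv \<Gamma>1 j) (pr C (Fo F \<Gamma>1) (sg F \<Gamma>1 (\<Gamma>1, B)))"
      using W(1) tk nth by (simp add: sgv_def)
    have s2: "thv (take (Suc n) \<Gamma>0) j = esub C (sgv \<Gamma>1 j) (thv \<Gamma>1 j) (pr C (Fo F \<Gamma>1) (sg F \<Gamma>1 (\<Gamma>1, B)))"
      using W(2) tk nth by (simp add: thv_def)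
    have c1: "JCtx \<Gamma>1 \<in> Jdg X" using G1 by (simp add: FOb_iff)
    have U: "sgv \<Gamma>1 j \<in> cTy C (Fo F \<Gamma>1)" unfolding sgv_def by (rule sg_ty[OF G1 JCtx_tyw[OF c1 jl]])
    have E: "thv \<Gamma>1 j \<in> cTm C (Fo F \<Gamma>1) (sgv \<Gamma>1 j)" unfolding thv_def sgv_def
      by (rule th_tm[OF G1 JCtx_tyw[OF c1 jl] Jdg.R3[OF c1 jl]])
    have p: "pr C (Fo F \<Gamma>1) (sg F \<Gamma>1 (\<Gamma>1, B)) \<in> Hom C (ext C (Fo F \<Gamma>1) (sg F \<Gamma>1 (\<Gamma>1, B))) (Fo F \<Gamma>1)"
      using pr_Hom[OF Fo_Ob[OF G1] Ty] .
    have "esub C (sgv (take (Suc n) \<Gamma>0) j) (thv (take (Suc n) \<Gamma>0) j) (SM C D' (telF F \<Gamma>0) es (Suc n))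
        = esub C (sgv \<Gamma>1 j) (thv \<Gamma>1 j) (cmp C (pr C (Fo F \<Gamma>1) (sg F \<Gamma>1 (\<Gamma>1, B))) (SM C D' (telF F \<Gamma>0) es (Suc n)))"
      using esub_cmp[OF p _ U E, of "SM C D' (telF F \<Gamma>0) es (Suc n)" D'] P SMs s1 s2 by simp
    also have "\<dots> = esub C (sgv \<Gamma>1 j) (thv \<Gamma>1 j) (SM C D' (telF F \<Gamma>0) es n)" using P SMs by simp
    also have "\<dots> = es j" using Suc.IH[OF _ ok(1) j] n unfolding \<Gamma>1_def by simp
    finally show ?thesis .
  qed
qed

lemma sg_Bk:
  assumes h: "(\<Delta>, \<Gamma>, as) \<in> Hom (FSig X) \<Delta> \<Gamma>" and k: "k < length \<Gamma>"
  shows "sg F \<Delta> (\<Delta>, Bk \<Gamma> as k) = tsub C (telF F \<Gamma> k) (SM C (Fo F \<Delta>) (telF F \<Gamma>) (thes \<Delta> \<Gamma> as) k)"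
proof -
  have D: "\<Delta> \<in> FOb X" "\<Gamma> \<in> FOb X" "cmap (Jdg X) as \<Delta> \<Gamma>" using h by (auto simp: FHom)
  have pc: "JCtx \<Gamma> \<in> Jdg X" using D by (auto simp: FOb_iff)
  have hk: "(\<Delta>, take k \<Gamma>, take k as) \<in> Hom (FSig X) \<Delta> (take k \<Gamma>)"
    using D by (simp add: FHom FOb_take cmap_take)
  have sB: "substTC (snd (\<Gamma> ! k)) (take k as) (take k \<Gamma>) = Bk \<Gamma> as k"
    by (simp add: Bk_def OV_take)
  show ?thesis using sg_tsub[OF hk JCtx_tyk[OF pc k]] sB Fa_dec_aux[OF h, of k] k by (simp add: telF_def)
qed

end



lemma subst_vars: "distinct xs \<Longrightarrow> length as = length xs \<Longrightarrow> map (substP (smap xs as)) (map Var xs) = as"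
  by (rule nth_equalityI) (auto simp: smap_nth)

lemma ty_generic: "TDecl \<Gamma> T \<in> X \<Longrightarrow> JCtx \<Gamma> \<in> Jdg X \<Longrightarrow> JTy (PTy T (map Var (OV \<Gamma>))) \<Gamma> \<in> Jdg X"
  using cmap_proj[of \<Gamma> "[]" X] by (auto simp: cmap_def intro!: Jdg.R4)

lemma tm_generic: "FDecl \<Gamma> f U \<in> X \<Longrightarrow> JCtx \<Gamma> \<in> Jdg X \<Longrightarrow> JTy U \<Gamma> \<in> Jdg X \<Longrightarrow> JTm (App f (map Var (OV \<Gamma>))) U \<Gamma> \<in> Jdg X"
  using cmap_proj[of \<Gamma> "[]" X] Jdg.R5[of \<Gamma> f U X \<Gamma> "map Var (OV \<Gamma>)"] by (auto simp: cmap_def)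

locale L =
  fixes Sig :: "('s, 'f) decl set"
    and C :: "('o, 'm, 't, 'e) cwf"
    and G :: "(('s, 'f) ctx, ('s, 'f) fmor, ('s, 'f) fty, ('s, 'f) ftm, 'o, 'm, 't, 'e) cwf_mor"
    and S :: 's
    and GS :: "('s, 'f) ctx"
    and A :: 't
  assumes sig: "is_signature Sig"
    and cwfC: "is_cwf C"
    and morG: "cwf_morphism (FSig Sig) C G"
    and notS: "\<forall>\<Gamma>. TDecl \<Gamma> S \<notin> Sig"
    and pcS: "precontext GS"
    and jS: "JCtx GS \<in> Jdg Sig"
    and AT: "A \<in> cTy C (Fo G GS)"
begin

sublocale G0: fmor C Sig G
  by unfold_locales (rule cwfC, rule morG)

abbreviation "Sig' \<equiv> insert (TDecl GS S) Sig"

lemma presig: "is_presig Sig" using sig by (simp add: is_signature_def)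

definition tctx :: "'s \<Rightarrow> ('s, 'f) ctx" where
  "tctx T = (if T = S then GS else (THE \<Gamma>. TDecl \<Gamma> T \<in> Sig))"
definition tbase :: "'s \<Rightarrow> 't" where
  "tbase T = (if T = S then A else sg G (tctx T) (tctx T, PTy T (map Var (OV (tctx T)))))"
definition fdecl :: "'f \<Rightarrow> ('s, 'f) ctx \<times> ('s, 'f) pty" where
  "fdecl f = (THE p. FDecl (fst p) f (snd p) \<in> Sig)"
definition fbaseT :: "'f \<Rightarrow> 't" where
  "fbaseT f = sg G (fst (fdecl f)) (fdecl f)"
definition fbaseE :: "'f \<Rightarrow> 'e" where
  "fbaseE f = th G (fst (fdecl f)) (fdecl f) (fdecl f, App f (map Var (OV (fst (fdecl f)))))"

fun IE :: "(nat \<Rightarrow> 'e) \<Rightarrow> 'o \<Rightarrow> 'f pre \<Rightarrow> 'e" where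
  "IE \<rho> D (Var x) = \<rho> x"
| "IE \<rho> D (App f as) = esub C (fbaseT f) (fbaseE f)
     (SM C D (telF G (fst (fdecl f))) (nth (map (IE \<rho> D) as)) (length (fst (fdecl f))))"

fun IT :: "(nat \<Rightarrow> 'e) \<Rightarrow> 'o \<Rightarrow> ('s, 'f) pty \<Rightarrow> 't" where
  "IT \<rho> D (PTy T as) = tsub C (tbase T) (SM C D (telF G (tctx T)) (nth (map (IE \<rho> D) as)) (length (tctx T)))"

lemma IE_subst: "IE \<rho> D (substP \<sigma> t) = IE (\<lambda>x. IE \<rho> D (\<sigma> x)) D t"
proof (induction t)
  case (App f as)
  then have "map (IE \<rho> D) (map (substP \<sigma>) as) = map (IE (\<lambda>x. IE \<rho> D (\<sigma> x)) D) as" by auto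
  then show ?case by (simp only: substP.simps IE.simps)
qed simp

lemma IT_subst: "IT \<rho> D (substT \<sigma> B) = IT (\<lambda>x. IE \<rho> D (\<sigma> x)) D B"
  by (cases B) (simp add: IE_subst comp_def)

lemma tdecl_S: "TDecl \<Gamma> T \<in> Sig \<Longrightarrow> T \<noteq> S" using notS by auto

lemma tdecl: "TDecl \<Gamma> T \<in> Sig \<Longrightarrow> tctx T = \<Gamma> \<and> tbase T = sg G \<Gamma> (\<Gamma>, PTy T (map Var (OV \<Gamma>)))"
proof -
  assume a: "TDecl \<Gamma> T \<in> Sig"
  have "(THE \<Gamma>. TDecl \<Gamma> T \<in> Sig) = \<Gamma>"
    by (rule the_equality[of "\<lambda>\<Gamma>. TDecl \<Gamma> T \<in> Sig", OF a]) (use presig a in \<open>auto simp: is_presig_def\<close>)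
  then show ?thesis using tdecl_S[OF a] by (simp add: tctx_def tbase_def)
qed

lemma fdecl: "FDecl \<Gamma> f U \<in> Sig \<Longrightarrow> fdecl f = (\<Gamma>, U)"
  unfolding fdecl_def by (rule the_equality) (use presig in \<open>auto simp: is_presig_def\<close>)

lemma tdecl_ctx: "TDecl \<Gamma> T \<in> Sig \<Longrightarrow> \<Gamma> \<in> FOb Sig"
  using sig presig by (auto simp: is_signature_def is_presig_def FOb_iff)

lemma fdecl_ctx: "FDecl \<Gamma> f U \<in> Sig \<Longrightarrow> \<Gamma> \<in> FOb Sig \<and> JTy U \<Gamma> \<in> Jdg Sig"
proof -
  assume a: "FDecl \<Gamma> f U \<in> Sig"
  have t: "JTy U \<Gamma> \<in> Jdg Sig" using sig a by (auto simp: is_signature_def)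
  have "precontext \<Gamma>" using presig a by (auto simp: is_presig_def)
  then show ?thesis using t JTy_ctx[OF t] by (simp add: FOb_iff)
qed

lemma GS_FOb: "GS \<in> FOb Sig" using pcS jS by (simp add: FOb_iff)

lemma A_sub: "j \<in> Jdg Sig \<Longrightarrow> (case j of JCtx \<Gamma> \<Rightarrow> True
  | JTy B \<Gamma>0 \<Rightarrow> (\<forall>D' \<rho>' m. D' \<in> Ob C \<longrightarrow> m \<in> Hom C D' (Fo G \<Gamma>0) \<longrightarrow>
        (\<forall>k<length \<Gamma>0. \<rho>' (fst (\<Gamma>0 ! k)) = esub C (G0.sgv \<Gamma>0 k) (G0.thv \<Gamma>0 k) m) \<longrightarrow>
        IT \<rho>' D' B = tsub C (sg G \<Gamma>0 (\<Gamma>0, B)) m)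
  | JTm a B \<Gamma>0 \<Rightarrow> (\<forall>D' \<rho>' m. D' \<in> Ob C \<longrightarrow> m \<in> Hom C D' (Fo G \<Gamma>0) \<longrightarrow>
        (\<forall>k<length \<Gamma>0. \<rho>' (fst (\<Gamma>0 ! k)) = esub C (G0.sgv \<Gamma>0 k) (G0.thv \<Gamma>0 k) m) \<longrightarrow>
        IE \<rho>' D' a = esub C (sg G \<Gamma>0 (\<Gamma>0, B)) (th G \<Gamma>0 (\<Gamma>0, B) ((\<Gamma>0, B), a)) m))"
proof (induction rule: Jdg.induct)
  case (R3 \<Gamma> i)
  then show ?case by (auto simp: G0.sgv_def G0.thv_def)
next
  case (R4 \<Gamma>T T \<Delta> as)
  show ?case
  proof (simp only: judg.case, intro allI impI)
    fix D' \<rho>' m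
    assume D': "D' \<in> Ob C" and m: "m \<in> Hom C D' (Fo G \<Delta>)"
      and rh: "\<forall>k<length \<Delta>. \<rho>' (fst (\<Delta> ! k)) = esub C (G0.sgv \<Delta> k) (G0.thv \<Delta> k) m"
    have td: "tctx T = \<Gamma>T" "tbase T = sg G \<Gamma>T (\<Gamma>T, PTy T (map Var (OV \<Gamma>T)))" using tdecl[OF R4.hyps(1)] by auto
    have GT: "\<Gamma>T \<in> FOb Sig" using tdecl_ctx[OF R4.hyps(1)] .
    have DD: "\<Delta> \<in> FOb Sig" using R4.hyps(2) by (rule JCtx_FOb)
    have cm: "cmap (Jdg Sig) as \<Delta> \<Gamma>T" using R4 by (simp add: cmap_def)
    have len: "length as = length \<Gamma>T" using R4 by simp
    have h: "(\<Delta>, \<Gamma>T, as) \<in> Hom (FSig Sig) \<Delta> \<Gamma>T" using DD GT cm by (simp add: FHom)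
    note dec = G0.Fa_dec[OF h]
    let ?M = "SM C (Fo G \<Delta>) (telF G \<Gamma>T) (G0.thes \<Delta> \<Gamma>T as) (length \<Gamma>T)"
    have IHk: "\<And>k. k < length \<Gamma>T \<Longrightarrow> IE \<rho>' D' (as ! k) =
        esub C (tsub C (telF G \<Gamma>T k) (SM C (Fo G \<Delta>) (telF G \<Gamma>T) (G0.thes \<Delta> \<Gamma>T as) k)) (G0.thes \<Delta> \<Gamma>T as k) m"
      using R4.IH D' m rh G0.sg_Bk[OF h] by (auto simp: G0.thes_def Bk_def)
    have "SM C D' (telF G \<Gamma>T) (nth (map (IE \<rho>' D') as)) (length \<Gamma>T) = cmp C ?M m"
      using G0.SM_comp[OF D' m dec(2)] IHk len by (auto intro!: SM_cong)
    then have "IT \<rho>' D' (PTy T as) = tsub C (tbase T) (cmp C (Fa G (\<Delta>, \<Gamma>T, as)) m)"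
      using td dec(1) by simp
    also have "\<dots> = tsub C (tsub C (tbase T) (Fa G (\<Delta>, \<Gamma>T, as))) m"
      using G0.tsub_cmp[OF G0.Fa_Hom[OF h] m] td G0.sg_ty[OF GT ty_generic[OF R4.hyps(1) R4.hyps(3)]] by simp
    also have "tsub C (tbase T) (Fa G (\<Delta>, \<Gamma>T, as)) = sg G \<Delta> (\<Delta>, PTy T as)"
    proof -
      have "sg G \<Delta> (tsub (FSig Sig) (\<Gamma>T, PTy T (map Var (OV \<Gamma>T))) (\<Delta>, \<Gamma>T, as)) = tsub C (tbase T) (Fa G (\<Delta>, \<Gamma>T, as))"
        using G0.sg_tsub[OF h ty_generic[OF R4.hyps(1) R4.hyps(3)]] td by simp
      moreover have "map (substP (smap (OV \<Gamma>T) as)) (map Var (OV \<Gamma>T)) = as"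
        using subst_vars[OF precontext_distinct] GT len by (auto simp: FOb_iff OV_def)
      ultimately show ?thesis by simp
    qed
    finally show "IT \<rho>' D' (PTy T as) = tsub C (sg G \<Delta> (\<Delta>, PTy T as)) m" .
  qed
next
  case (R5 \<Gamma>F f U \<Delta> as)
  show ?case
  proof (simp only: judg.case, intro allI impI)
    fix D' \<rho>' m
    assume D': "D' \<in> Ob C" and m: "m \<in> Hom C D' (Fo G \<Delta>)"
      and rh: "\<forall>k<length \<Delta>. \<rho>' (fst (\<Delta> ! k)) = esub C (G0.sgv \<Delta> k) (G0.thv \<Delta> k) m"
    have fd: "fdecl f = (\<Gamma>F, U)" using fdecl[OF R5.hyps(1)] .
    have GF: "\<Gamma>F \<in> FOb Sig" "JTy U \<Gamma>F \<in> Jdg Sig" using fdecl_ctx[OF R5.hyps(1)] by auto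
    have DD: "\<Delta> \<in> FOb Sig" using R5.hyps(2) by (rule JCtx_FOb)
    have cm: "cmap (Jdg Sig) as \<Delta> \<Gamma>F" using R5 by (simp add: cmap_def)
    have len: "length as = length \<Gamma>F" using R5 by simp
    have h: "(\<Delta>, \<Gamma>F, as) \<in> Hom (FSig Sig) \<Delta> \<Gamma>F" using DD GF cm by (simp add: FHom)
    note dec = G0.Fa_dec[OF h]
    let ?M = "SM C (Fo G \<Delta>) (telF G \<Gamma>F) (G0.thes \<Delta> \<Gamma>F as) (length \<Gamma>F)"
    have IHk: "\<And>k. k < length \<Gamma>F \<Longrightarrow> IE \<rho>' D' (as ! k) =
        esub C (tsub C (telF G \<Gamma>F k) (SM C (Fo G \<Delta>) (telF G \<Gamma>F) (G0.thes \<Delta> \<Gamma>F as) k)) (G0.thes \<Delta> \<Gamma>F as k) m"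
      using R5.IH D' m rh G0.sg_Bk[OF h] by (auto simp: G0.thes_def Bk_def)
    have e1: "SM C D' (telF G \<Gamma>F) (nth (map (IE \<rho>' D') as)) (length \<Gamma>F) = cmp C ?M m"
      using G0.SM_comp[OF D' m dec(2)] IHk len by (auto intro!: SM_cong)
    have tmg: "JTm (App f (map Var (OV \<Gamma>F))) U \<Gamma>F \<in> Jdg Sig"
      using tm_generic[OF R5.hyps(1) R5.hyps(3) GF(2)] .
    have Uty: "fbaseT f \<in> cTy C (Fo G \<Gamma>F)" using G0.sg_ty[OF GF] fd by (simp add: fbaseT_def)
    have Ute: "fbaseE f \<in> cTm C (Fo G \<Gamma>F) (fbaseT f)" using G0.th_tm[OF GF(1) GF(2) tmg] fd by (simp add: fbaseT_def fbaseE_def)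
    have "IE \<rho>' D' (App f as) = esub C (fbaseT f) (fbaseE f) (cmp C (Fa G (\<Delta>, \<Gamma>F, as)) m)"
      using e1 fd dec(1) by simp
    also have "\<dots> = esub C (tsub C (fbaseT f) (Fa G (\<Delta>, \<Gamma>F, as))) (esub C (fbaseT f) (fbaseE f) (Fa G (\<Delta>, \<Gamma>F, as))) m"
      using G0.esub_cmp[OF G0.Fa_Hom[OF h] m Uty Ute] .
    also have "tsub C (fbaseT f) (Fa G (\<Delta>, \<Gamma>F, as)) = sg G \<Delta> (\<Delta>, substTC U as \<Gamma>F)"
      using G0.sg_tsub[OF h GF(2)] fd by (simp add: fbaseT_def)
    also have "esub C (fbaseT f) (fbaseE f) (Fa G (\<Delta>, \<Gamma>F, as)) = th G \<Delta> (\<Delta>, substTC U as \<Gamma>F) ((\<Delta>, substTC U as \<Gamma>F), App f as)"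
    proof -
      have "map (substP (smap (OV \<Gamma>F) as)) (map Var (OV \<Gamma>F)) = as"
        using subst_vars[OF precontext_distinct] GF len by (auto simp: FOb_iff OV_def)
      then show ?thesis using G0.th_esub[OF h GF(2) tmg] fd by (simp add: fbaseT_def fbaseE_def)
    qed
    finally show "IE \<rho>' D' (App f as) = esub C (sg G \<Delta> (\<Delta>, substTC U as \<Gamma>F)) (th G \<Delta> (\<Delta>, substTC U as \<Gamma>F) ((\<Delta>, substTC U as \<Gamma>F), App f as)) m" .
  qed
qed auto

lemma A_ty: "JTy B \<Gamma>0 \<in> Jdg Sig \<Longrightarrow> D' \<in> Ob C \<Longrightarrow> m \<in> Hom C D' (Fo G \<Gamma>0) \<Longrightarrow>
   (\<And>k. k < length \<Gamma>0 \<Longrightarrow> \<rho>' (fst (\<Gamma>0 ! k)) = esub C (G0.sgv \<Gamma>0 k) (G0.thv \<Gamma>0 k) m) \<Longrightarrow>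
   IT \<rho>' D' B = tsub C (sg G \<Gamma>0 (\<Gamma>0, B)) m"
  using A_sub[of "JTy B \<Gamma>0"] by auto

lemma A_tm: "JTm a B \<Gamma>0 \<in> Jdg Sig \<Longrightarrow> D' \<in> Ob C \<Longrightarrow> m \<in> Hom C D' (Fo G \<Gamma>0) \<Longrightarrow>
   (\<And>k. k < length \<Gamma>0 \<Longrightarrow> \<rho>' (fst (\<Gamma>0 ! k)) = esub C (G0.sgv \<Gamma>0 k) (G0.thv \<Gamma>0 k) m) \<Longrightarrow>
   IE \<rho>' D' a = esub C (sg G \<Gamma>0 (\<Gamma>0, B)) (th G \<Gamma>0 (\<Gamma>0, B) ((\<Gamma>0, B), a)) m"
  using A_sub[of "JTm a B \<Gamma>0"] by auto

lemma A_full: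
  assumes GT: "\<Gamma>T \<in> FOb Sig" and D: "D \<in> Ob C" and len: "length as = length \<Gamma>T"
    and ok: "SMok C D (telF G \<Gamma>T) (nth (map (IE \<rho> D) as)) (length \<Gamma>T)"
  shows "\<And>k. k < length \<Gamma>T \<Longrightarrow> IE \<rho> D (smap (OV \<Gamma>T) as (fst (\<Gamma>T ! k)))
     = esub C (G0.sgv \<Gamma>T k) (G0.thv \<Gamma>T k) (SM C D (telF G \<Gamma>T) (nth (map (IE \<rho> D) as)) (length \<Gamma>T))"
proof -
  fix k assume k: "k < length \<Gamma>T"
  have di: "distinct (OV \<Gamma>T)" using GT by (simp add: FOb_iff precontext_distinct)
  have "smap (OV \<Gamma>T) as (fst (\<Gamma>T ! k)) = as ! k"
    using smap_nth[OF di, of as k] len k by (simp add: OV_def)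
  then show "IE \<rho> D (smap (OV \<Gamma>T) as (fst (\<Gamma>T ! k)))
     = esub C (G0.sgv \<Gamma>T k) (G0.thv \<Gamma>T k) (SM C D (telF G \<Gamma>T) (nth (map (IE \<rho> D) as)) (length \<Gamma>T))"
    using G0.SM_var[OF GT D _ ok k] len k by simp
qed

lemma CM:
  assumes GT: "\<Gamma>T \<in> FOb Sig" and D: "D \<in> Ob C" and len: "length as = length \<Gamma>T"
    and tm: "\<And>k. k < length \<Gamma>T \<Longrightarrow> IE \<rho> D (as ! k) \<in> cTm C D (IT \<rho> D (Bk \<Gamma>T as k))"
  shows "n \<le> length \<Gamma>T \<Longrightarrow> SMok C D (telF G \<Gamma>T) (nth (map (IE \<rho> D) as)) n \<and>
     (\<forall>k<n. IT \<rho> D (Bk \<Gamma>T as k) = tsub C (telF G \<Gamma>T k) (SM C D (telF G \<Gamma>T) (nth (map (IE \<rho> D) as)) k))"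
proof (induction n)
  case 0 then show ?case by (simp add: SMok_def)
next
  case (Suc n)
  let ?es = "nth (map (IE \<rho> D) as)"
  have n: "n < length \<Gamma>T" using Suc by simp
  have IH: "SMok C D (telF G \<Gamma>T) ?es n"
     "\<forall>k<n. IT \<rho> D (Bk \<Gamma>T as k) = tsub C (telF G \<Gamma>T k) (SM C D (telF G \<Gamma>T) ?es k)" using Suc by auto
  have pc: "precontext \<Gamma>T" "JCtx \<Gamma>T \<in> Jdg Sig" using GT by (auto simp: FOb_iff)
  define \<Gamma>0 where "\<Gamma>0 = take n \<Gamma>T"
  have G0': "\<Gamma>0 \<in> FOb Sig" unfolding \<Gamma>0_def using GT by (rule FOb_take)
  have M: "SM C D (telF G \<Gamma>T) ?es n \<in> Hom C D (Fo G \<Gamma>0)"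
    using G0.SM_Hom[OF D IH(1)] G0.tOb_telF[OF GT] n unfolding \<Gamma>0_def by simp
  have ok0: "SMok C D (telF G \<Gamma>0) ?es (length \<Gamma>0)"
    using IH(1) n unfolding \<Gamma>0_def SMok_def
    by (auto simp: telF_take tOb_cong[of _ "telF G (take n \<Gamma>T)" "telF G \<Gamma>T"] SM_cong[of _ "telF G (take n \<Gamma>T)" "telF G \<Gamma>T"])
  have SMe: "SM C D (telF G \<Gamma>0) ?es (length \<Gamma>0) = SM C D (telF G \<Gamma>T) ?es n"
    using n unfolding \<Gamma>0_def by (auto intro!: SM_cong simp: telF_take)
  have l0: "length (take n as) = length \<Gamma>0" using len n by (simp add: \<Gamma>0_def)
  have rh: "\<And>k. k < length \<Gamma>0 \<Longrightarrow> IE \<rho> D (smap (map fst \<Gamma>0) (take n as) (fst (\<Gamma>0 ! k)))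
      = esub C (G0.sgv \<Gamma>0 k) (G0.thv \<Gamma>0 k) (SM C D (telF G \<Gamma>T) ?es n)"
  proof -
    fix k assume k: "k < length \<Gamma>0"
    have e: "nth (map (IE \<rho> D) (take n as)) k = ?es k" using k len n by (simp add: \<Gamma>0_def)
    have ok0': "SMok C D (telF G \<Gamma>0) (nth (map (IE \<rho> D) (take n as))) (length \<Gamma>0)"
    proof -
      have q: "\<And>j. j < length \<Gamma>0 \<Longrightarrow> nth (map (IE \<rho> D) (take n as)) j = ?es j"
        using l0 len n by (simp add: \<Gamma>0_def)
      have "\<And>k. k < length \<Gamma>0 \<Longrightarrow> SM C D (telF G \<Gamma>0) (nth (map (IE \<rho> D) (take n as))) k = SM C D (telF G \<Gamma>0) ?es k"
        by (rule SM_cong) (use q in auto)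
      then show ?thesis using ok0 q unfolding SMok_def by auto
    qed
    have "IE \<rho> D (smap (OV \<Gamma>0) (take n as) (fst (\<Gamma>0 ! k)))
     = esub C (G0.sgv \<Gamma>0 k) (G0.thv \<Gamma>0 k) (SM C D (telF G \<Gamma>0) (nth (map (IE \<rho> D) (take n as))) (length \<Gamma>0))"
      using A_full[OF G0' D l0 ok0' k] .
    also have "SM C D (telF G \<Gamma>0) (nth (map (IE \<rho> D) (take n as))) (length \<Gamma>0) = SM C D (telF G \<Gamma>T) ?es n"
    proof -
      have "SM C D (telF G \<Gamma>0) (nth (map (IE \<rho> D) (take n as))) (length \<Gamma>0) = SM C D (telF G \<Gamma>0) ?es (length \<Gamma>0)"
        by (rule SM_cong) (use l0 len n in \<open>auto simp: \<Gamma>0_def\<close>)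
      then show ?thesis using SMe by simp
    qed
    finally show "IE \<rho> D (smap (map fst \<Gamma>0) (take n as) (fst (\<Gamma>0 ! k)))
      = esub C (G0.sgv \<Gamma>0 k) (G0.thv \<Gamma>0 k) (SM C D (telF G \<Gamma>T) ?es n)" by (simp add: OV_def)
  qed
  have "IT \<rho> D (Bk \<Gamma>T as n) = IT (\<lambda>x. IE \<rho> D (smap (map fst \<Gamma>0) (take n as) x)) D (snd (\<Gamma>T ! n))"
    by (simp add: Bk_def IT_subst \<Gamma>0_def)
  also have "\<dots> = tsub C (sg G \<Gamma>0 (\<Gamma>0, snd (\<Gamma>T ! n))) (SM C D (telF G \<Gamma>T) ?es n)"
    by (rule A_ty[OF _ D M rh]) (use JCtx_tyk[OF pc(2) n] in \<open>simp add: \<Gamma>0_def\<close>)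
  finally have eq: "IT \<rho> D (Bk \<Gamma>T as n) = tsub C (telF G \<Gamma>T n) (SM C D (telF G \<Gamma>T) ?es n)"
    by (simp add: telF_def \<Gamma>0_def)
  have "?es n \<in> cTm C D (tsub C (telF G \<Gamma>T n) (SM C D (telF G \<Gamma>T) ?es n))"
    using tm[OF n] eq len n by simp
  then have "SMok C D (telF G \<Gamma>T) ?es (Suc n)"
    using IH(1) G0.telF_ty[OF GT n] by (simp add: SMok_Suc)
  then show ?case using IH(2) eq by (auto simp: less_Suc_eq)
qed

end



context L
begin

fun ICr :: "('s, 'f) ctx \<Rightarrow> 'o \<times> (nat \<Rightarrow> 't) \<times> (nat \<Rightarrow> 'e)" where
  "ICr [] = (trm C, \<lambda>_. undefined, \<lambda>_. undefined)"
| "ICr ((y, B) # R) = (case ICr R of (D, \<tau>, \<rho>) \<Rightarrow>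
     (ext C D (IT \<rho> D B),
      \<lambda>x. if x = y then tsub C (IT \<rho> D B) (pr C D (IT \<rho> D B)) else tsub C (\<tau> x) (pr C D (IT \<rho> D B)),
      \<lambda>x. if x = y then var C D (IT \<rho> D B) else esub C (\<tau> x) (\<rho> x) (pr C D (IT \<rho> D B))))"

definition obI :: "('s, 'f) ctx \<Rightarrow> 'o" where "obI \<Gamma> = fst (ICr (rev \<Gamma>))"
definition tyI :: "('s, 'f) ctx \<Rightarrow> nat \<Rightarrow> 't" where "tyI \<Gamma> = fst (snd (ICr (rev \<Gamma>)))"
definition enI :: "('s, 'f) ctx \<Rightarrow> nat \<Rightarrow> 'e" where "enI \<Gamma> = snd (snd (ICr (rev \<Gamma>)))"

abbreviation "ITG \<Gamma> B \<equiv> IT (enI \<Gamma>) (obI \<Gamma>) B"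
abbreviation "IEG \<Gamma> a \<equiv> IE (enI \<Gamma>) (obI \<Gamma>) a"

lemma obI_nil[simp]: "obI [] = trm C" by (simp add: obI_def)

lemma I_snoc[simp]:
  "obI (\<Gamma> @ [(y, B)]) = ext C (obI \<Gamma>) (ITG \<Gamma> B)"
  "tyI (\<Gamma> @ [(y, B)]) = (\<lambda>x. if x = y then tsub C (ITG \<Gamma> B) (pr C (obI \<Gamma>) (ITG \<Gamma> B)) else tsub C (tyI \<Gamma> x) (pr C (obI \<Gamma>) (ITG \<Gamma> B)))"
  "enI (\<Gamma> @ [(y, B)]) = (\<lambda>x. if x = y then var C (obI \<Gamma>) (ITG \<Gamma> B) else esub C (tyI \<Gamma> x) (enI \<Gamma> x) (pr C (obI \<Gamma>) (ITG \<Gamma> B)))"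
proof -
  obtain D \<tau> \<rho> where e: "ICr (rev \<Gamma>) = (D, \<tau>, \<rho>)" by (cases "ICr (rev \<Gamma>)") auto
  have o: "obI \<Gamma> = D" "tyI \<Gamma> = \<tau>" "enI \<Gamma> = \<rho>" using e by (simp_all add: obI_def tyI_def enI_def)
  show "obI (\<Gamma> @ [(y, B)]) = ext C (obI \<Gamma>) (ITG \<Gamma> B)" unfolding o by (simp add: obI_def e)
  show "tyI (\<Gamma> @ [(y, B)]) = (\<lambda>x. if x = y then tsub C (ITG \<Gamma> B) (pr C (obI \<Gamma>) (ITG \<Gamma> B)) else tsub C (tyI \<Gamma> x) (pr C (obI \<Gamma>) (ITG \<Gamma> B)))"
    unfolding o by (simp add: tyI_def enI_def e)
  show "enI (\<Gamma> @ [(y, B)]) = (\<lambda>x. if x = y then var C (obI \<Gamma>) (ITG \<Gamma> B) else esub C (tyI \<Gamma> x) (enI \<Gamma> x) (pr C (obI \<Gamma>) (ITG \<Gamma> B)))"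
    unfolding o by (simp add: tyI_def enI_def e)
qed

definition EnvOK :: "('s, 'f) ctx \<Rightarrow> 'o \<Rightarrow> (nat \<Rightarrow> 'e) \<Rightarrow> 'm \<Rightarrow> bool" where
  "EnvOK \<Gamma> D' \<rho>' m \<longleftrightarrow> D' \<in> Ob C \<and> m \<in> Hom C D' (obI \<Gamma>) \<and>
     (\<forall>k<length \<Gamma>. \<rho>' (fst (\<Gamma> ! k)) = esub C (tyI \<Gamma> (fst (\<Gamma> ! k))) (enI \<Gamma> (fst (\<Gamma> ! k))) m)"

definition CtxOK :: "('s, 'f) ctx \<Rightarrow> bool" where
  "CtxOK \<Gamma> \<longleftrightarrow> obI \<Gamma> \<in> Ob C \<and>
     (\<forall>k<length \<Gamma>. tyI \<Gamma> (fst (\<Gamma> ! k)) \<in> cTy C (obI \<Gamma>) \<and> enI \<Gamma> (fst (\<Gamma> ! k)) \<in> cTm C (obI \<Gamma>) (tyI \<Gamma> (fst (\<Gamma> ! k)))) \<and>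
     (\<forall>k<length \<Gamma>. \<forall>D' \<rho>' m. EnvOK \<Gamma> D' \<rho>' m \<longrightarrow> IT \<rho>' D' (snd (\<Gamma> ! k)) = tsub C (tyI \<Gamma> (fst (\<Gamma> ! k))) m)"

lemma tdecl': "TDecl \<Gamma>T T \<in> Sig' \<Longrightarrow> tctx T = \<Gamma>T \<and> \<Gamma>T \<in> FOb Sig \<and> tbase T \<in> cTy C (Fo G \<Gamma>T)"
proof -
  assume a: "TDecl \<Gamma>T T \<in> Sig'"
  show ?thesis
  proof (cases "T = S")
    case True
    then have "\<Gamma>T = GS" using a notS by auto
    then show ?thesis using True AT GS_FOb by (simp add: tctx_def tbase_def)
  next
    case False
    then have b: "TDecl \<Gamma>T T \<in> Sig" using a by auto
    have "JCtx \<Gamma>T \<in> Jdg Sig" using tdecl_ctx[OF b] by (simp add: FOb_iff)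
    then show ?thesis using tdecl[OF b] tdecl_ctx[OF b] G0.sg_ty[OF tdecl_ctx[OF b] ty_generic[OF b]] by simp
  qed
qed

lemma fdecl': "FDecl \<Gamma>F f U \<in> Sig' \<Longrightarrow> FDecl \<Gamma>F f U \<in> Sig" by auto

lemma envok_id: "CtxOK \<Gamma> \<Longrightarrow> EnvOK \<Gamma> (obI \<Gamma>) (enI \<Gamma>) (idm C (obI \<Gamma>))"
  unfolding EnvOK_def CtxOK_def using G0.idm_Hom G0.esub_id by simp

lemma ITG_var: "CtxOK \<Gamma> \<Longrightarrow> k < length \<Gamma> \<Longrightarrow> ITG \<Gamma> (snd (\<Gamma> ! k)) = tyI \<Gamma> (fst (\<Gamma> ! k))"
proof -
  assume a: "CtxOK \<Gamma>" "k < length \<Gamma>"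
  have "ITG \<Gamma> (snd (\<Gamma> ! k)) = tsub C (tyI \<Gamma> (fst (\<Gamma> ! k))) (idm C (obI \<Gamma>))"
    using envok_id[OF a(1)] a unfolding CtxOK_def by blast
  then show ?thesis using G0.tsub_id a unfolding CtxOK_def by simp
qed

lemma args_ok:
  assumes GT: "\<Gamma>T \<in> FOb Sig" and D: "obI \<Delta> \<in> Ob C" and len: "length as = length \<Gamma>T"
    and IH: "\<forall>k < length \<Gamma>T. IEG \<Delta> (as ! k) \<in> cTm C (obI \<Delta>) (ITG \<Delta> (Bk \<Gamma>T as k)) \<and>
       (\<forall>D' \<rho>' m. EnvOK \<Delta> D' \<rho>' m \<longrightarrow> IE \<rho>' D' (as ! k) = esub C (ITG \<Delta> (Bk \<Gamma>T as k)) (IEG \<Delta> (as ! k)) m)"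
  shows "SMok C (obI \<Delta>) (telF G \<Gamma>T) (nth (map (IEG \<Delta>) as)) (length \<Gamma>T)"
    and "SM C (obI \<Delta>) (telF G \<Gamma>T) (nth (map (IEG \<Delta>) as)) (length \<Gamma>T) \<in> Hom C (obI \<Delta>) (Fo G \<Gamma>T)"
    and "\<And>D' \<rho>' m. EnvOK \<Delta> D' \<rho>' m \<Longrightarrow> SM C D' (telF G \<Gamma>T) (nth (map (IE \<rho>' D') as)) (length \<Gamma>T)
          = cmp C (SM C (obI \<Delta>) (telF G \<Gamma>T) (nth (map (IEG \<Delta>) as)) (length \<Gamma>T)) m"
proof -
  note cm = CM[OF GT D len, where n="length \<Gamma>T" and \<rho>="enI \<Delta>"]
  have c: "SMok C (obI \<Delta>) (telF G \<Gamma>T) (nth (map (IEG \<Delta>) as)) (length \<Gamma>T)"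
     "\<And>k. k < length \<Gamma>T \<Longrightarrow> ITG \<Delta> (Bk \<Gamma>T as k) = tsub C (telF G \<Gamma>T k) (SM C (obI \<Delta>) (telF G \<Gamma>T) (nth (map (IEG \<Delta>) as)) k)"
    using cm IH by auto
  show "SMok C (obI \<Delta>) (telF G \<Gamma>T) (nth (map (IEG \<Delta>) as)) (length \<Gamma>T)" by (rule c(1))
  show "SM C (obI \<Delta>) (telF G \<Gamma>T) (nth (map (IEG \<Delta>) as)) (length \<Gamma>T) \<in> Hom C (obI \<Delta>) (Fo G \<Gamma>T)"
    using G0.SM_Hom[OF D c(1)] G0.tOb_telF[OF GT, of "length \<Gamma>T"] by simp
  fix D' \<rho>' m assume E: "EnvOK \<Delta> D' \<rho>' m"
  have D': "D' \<in> Ob C" and m: "m \<in> Hom C D' (obI \<Delta>)" using E by (auto simp: EnvOK_def)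
  show "SM C D' (telF G \<Gamma>T) (nth (map (IE \<rho>' D') as)) (length \<Gamma>T)
          = cmp C (SM C (obI \<Delta>) (telF G \<Gamma>T) (nth (map (IEG \<Delta>) as)) (length \<Gamma>T)) m"
    using G0.SM_comp[OF D' m c(1)] IH E c(2) len by (auto intro!: SM_cong)
qed

lemma CtxOK_nil: "CtxOK []"
  by (simp add: CtxOK_def G0.trm_Ob)

lemma CtxOK_snoc:
  assumes ok: "CtxOK \<Gamma>" and TB: "ITG \<Gamma> B \<in> cTy C (obI \<Gamma>)"
    and EB: "\<And>D' \<rho>' m. EnvOK \<Gamma> D' \<rho>' m \<Longrightarrow> IT \<rho>' D' B = tsub C (ITG \<Gamma> B) m"
  shows "CtxOK (\<Gamma> @ [(fresh \<Gamma>, B)])"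
proof -
  define y where "y = fresh \<Gamma>"
  define T where "T = ITG \<Gamma> B"
  define D where "D = obI \<Gamma>"
  define p where "p = pr C D T"
  have D: "D \<in> Ob C" using ok by (simp add: CtxOK_def D_def)
  have T: "T \<in> cTy C D" using TB by (simp add: T_def D_def)
  have p: "p \<in> Hom C (ext C D T) D" unfolding p_def by (rule G0.pr_Hom[OF D T])
  have ny: "\<And>k. k < length \<Gamma> \<Longrightarrow> fst (\<Gamma> ! k) \<noteq> y"
    using fresh_notin[of \<Gamma>] unfolding y_def OV_def by (metis length_map nth_map nth_mem)
  have o: "obI (\<Gamma> @ [(y, B)]) = ext C D T"
    "tyI (\<Gamma> @ [(y, B)]) = (\<lambda>x. if x = y then tsub C T p else tsub C (tyI \<Gamma> x) p)"
    "enI (\<Gamma> @ [(y, B)]) = (\<lambda>x. if x = y then var C D T else esub C (tyI \<Gamma> x) (enI \<Gamma> x) p)"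
    unfolding T_def D_def p_def by simp_all
  have nth: "\<And>k. k < length \<Gamma> \<Longrightarrow> (\<Gamma> @ [(y, B)]) ! k = \<Gamma> ! k" by (simp add: nth_append)
  have nthl: "(\<Gamma> @ [(y, B)]) ! length \<Gamma> = (y, B)" by simp
  have okk: "\<And>k. k < length \<Gamma> \<Longrightarrow> tyI \<Gamma> (fst (\<Gamma> ! k)) \<in> cTy C D \<and> enI \<Gamma> (fst (\<Gamma> ! k)) \<in> cTm C D (tyI \<Gamma> (fst (\<Gamma> ! k)))"
    using ok by (simp add: CtxOK_def D_def)
  have envG: "\<And>D' \<rho>' m. EnvOK (\<Gamma> @ [(y, B)]) D' \<rho>' m \<Longrightarrow> EnvOK \<Gamma> D' \<rho>' (cmp C p m) \<and> m \<in> Hom C D' (ext C D T)"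
  proof -
    fix D' \<rho>' m assume E: "EnvOK (\<Gamma> @ [(y, B)]) D' \<rho>' m"
    have m: "m \<in> Hom C D' (ext C D T)" and D': "D' \<in> Ob C" using E o by (auto simp: EnvOK_def)
    have "\<And>k. k < length \<Gamma> \<Longrightarrow> \<rho>' (fst (\<Gamma> ! k)) = esub C (tyI \<Gamma> (fst (\<Gamma> ! k))) (enI \<Gamma> (fst (\<Gamma> ! k))) (cmp C p m)"
    proof -
      fix k assume k: "k < length \<Gamma>"
      have "\<rho>' (fst (\<Gamma> ! k)) = esub C (tyI (\<Gamma> @ [(y, B)]) (fst (\<Gamma> ! k))) (enI (\<Gamma> @ [(y, B)]) (fst (\<Gamma> ! k))) m"
        using E k nth[OF k] unfolding EnvOK_def by (metis length_append_singleton less_SucI)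
      also have "\<dots> = esub C (tsub C (tyI \<Gamma> (fst (\<Gamma> ! k))) p) (esub C (tyI \<Gamma> (fst (\<Gamma> ! k))) (enI \<Gamma> (fst (\<Gamma> ! k))) p) m"
        using ny[OF k] o by simp
      also have "\<dots> = esub C (tyI \<Gamma> (fst (\<Gamma> ! k))) (enI \<Gamma> (fst (\<Gamma> ! k))) (cmp C p m)"
        using G0.esub_cmp[OF p m] okk[OF k] by simp
      finally show "\<rho>' (fst (\<Gamma> ! k)) = esub C (tyI \<Gamma> (fst (\<Gamma> ! k))) (enI \<Gamma> (fst (\<Gamma> ! k))) (cmp C p m)" .
    qed
    then show "EnvOK \<Gamma> D' \<rho>' (cmp C p m) \<and> m \<in> Hom C D' (ext C D T)"
      using D' m G0.cmp_Hom[OF m p] by (simp add: EnvOK_def D_def)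
  qed
  have A1: "obI (\<Gamma> @ [(y, B)]) \<in> Ob C" using o G0.ext_Ob[OF D T] by simp
  have A2: "\<forall>k<length (\<Gamma> @ [(y, B)]). tyI (\<Gamma> @ [(y, B)]) (fst ((\<Gamma> @ [(y, B)]) ! k)) \<in> cTy C (obI (\<Gamma> @ [(y, B)]))
      \<and> enI (\<Gamma> @ [(y, B)]) (fst ((\<Gamma> @ [(y, B)]) ! k)) \<in> cTm C (obI (\<Gamma> @ [(y, B)])) (tyI (\<Gamma> @ [(y, B)]) (fst ((\<Gamma> @ [(y, B)]) ! k)))"
  proof (intro allI impI)
    fix k assume k: "k < length (\<Gamma> @ [(y, B)])"
    show "tyI (\<Gamma> @ [(y, B)]) (fst ((\<Gamma> @ [(y, B)]) ! k)) \<in> cTy C (obI (\<Gamma> @ [(y, B)]))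
      \<and> enI (\<Gamma> @ [(y, B)]) (fst ((\<Gamma> @ [(y, B)]) ! k)) \<in> cTm C (obI (\<Gamma> @ [(y, B)])) (tyI (\<Gamma> @ [(y, B)]) (fst ((\<Gamma> @ [(y, B)]) ! k)))"
    proof (cases "k < length \<Gamma>")
      case True
      then show ?thesis using o nth[OF True] ny[OF True] okk[OF True] G0.tsub_ty[OF p] G0.esub_tm[OF p] by simp
    next
      case False
      then have "k = length \<Gamma>" using k by simp
      then show ?thesis using o nthl G0.tsub_ty[OF p T] G0.var_tm[OF D T] by (simp add: p_def)
    qed
  qed
  have A3: "\<forall>k<length (\<Gamma> @ [(y, B)]). \<forall>D' \<rho>' m. EnvOK (\<Gamma> @ [(y, B)]) D' \<rho>' m \<longrightarrow>
      IT \<rho>' D' (snd ((\<Gamma> @ [(y, B)]) ! k)) = tsub C (tyI (\<Gamma> @ [(y, B)]) (fst ((\<Gamma> @ [(y, B)]) ! k))) m"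
  proof (intro allI impI)
    fix k D' \<rho>' m assume k: "k < length (\<Gamma> @ [(y, B)])" and E: "EnvOK (\<Gamma> @ [(y, B)]) D' \<rho>' m"
    note EG = envG[OF E]
    show "IT \<rho>' D' (snd ((\<Gamma> @ [(y, B)]) ! k)) = tsub C (tyI (\<Gamma> @ [(y, B)]) (fst ((\<Gamma> @ [(y, B)]) ! k))) m"
    proof (cases "k < length \<Gamma>")
      case True
      have "IT \<rho>' D' (snd (\<Gamma> ! k)) = tsub C (tyI \<Gamma> (fst (\<Gamma> ! k))) (cmp C p m)"
        using ok EG True unfolding CtxOK_def by blast
      also have "\<dots> = tsub C (tsub C (tyI \<Gamma> (fst (\<Gamma> ! k))) p) m"
        using G0.tsub_cmp[OF p] EG okk[OF True] by blast
      finally show ?thesis using o nth[OF True] ny[OF True] by simp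
    next
      case False
      then have kk: "k = length \<Gamma>" using k by simp
      have "IT \<rho>' D' B = tsub C T (cmp C p m)" using EB EG by (simp add: T_def)
      also have "\<dots> = tsub C (tsub C T p) m" using G0.tsub_cmp[OF p] EG T by blast
      finally show ?thesis using o kk by simp
    qed
  qed
  show ?thesis using A1 A2 A3 unfolding CtxOK_def y_def by blast
qed

lemma B_main: "j \<in> Jdg Sig' \<Longrightarrow> (case j of JCtx \<Gamma> \<Rightarrow> CtxOK \<Gamma>
  | JTy B \<Gamma> \<Rightarrow> ITG \<Gamma> B \<in> cTy C (obI \<Gamma>) \<and> (\<forall>D' \<rho>' m. EnvOK \<Gamma> D' \<rho>' m \<longrightarrow> IT \<rho>' D' B = tsub C (ITG \<Gamma> B) m)
  | JTm a B \<Gamma> \<Rightarrow> IEG \<Gamma> a \<in> cTm C (obI \<Gamma>) (ITG \<Gamma> B) \<and> (\<forall>D' \<rho>' m. EnvOK \<Gamma> D' \<rho>' m \<longrightarrow> IE \<rho>' D' a = esub C (ITG \<Gamma> B) (IEG \<Gamma> a) m))"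
proof (induction rule: Jdg.induct)
  case R1 then show ?case by (simp add: CtxOK_nil)
next
  case (R2 \<Gamma> B) then show ?case by (simp add: CtxOK_snoc)
next
  case (R3 \<Gamma> i)
  have ok: "CtxOK \<Gamma>" using R3 by simp
  show ?case using ITG_var[OF ok R3.hyps(2)] ok R3.hyps(2) unfolding CtxOK_def EnvOK_def by simp
next
  case (R4 \<Gamma>T T \<Delta> as)
  have td: "tctx T = \<Gamma>T" "\<Gamma>T \<in> FOb Sig" "tbase T \<in> cTy C (Fo G \<Gamma>T)" using tdecl'[OF R4.hyps(1)] by auto
  have ok: "CtxOK \<Delta>" using R4 by simp
  have D: "obI \<Delta> \<in> Ob C" using ok by (simp add: CtxOK_def)
  have len: "length as = length \<Gamma>T" using R4 by simp
  have IH: "\<forall>k < length \<Gamma>T. IEG \<Delta> (as ! k) \<in> cTm C (obI \<Delta>) (ITG \<Delta> (Bk \<Gamma>T as k)) \<and>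
       (\<forall>D' \<rho>' m. EnvOK \<Delta> D' \<rho>' m \<longrightarrow> IE \<rho>' D' (as ! k) = esub C (ITG \<Delta> (Bk \<Gamma>T as k)) (IEG \<Delta> (as ! k)) m)"
    using R4 by (simp add: Bk_def)
  note ao = args_ok[OF td(2) D len IH]
  let ?M = "SM C (obI \<Delta>) (telF G \<Gamma>T) (nth (map (IEG \<Delta>) as)) (length \<Gamma>T)"
  have e: "ITG \<Delta> (PTy T as) = tsub C (tbase T) ?M" using td by simp
  have ty: "ITG \<Delta> (PTy T as) \<in> cTy C (obI \<Delta>)" using e G0.tsub_ty[OF ao(2) td(3)] by simp
  have env: "\<And>D' \<rho>' m. EnvOK \<Delta> D' \<rho>' m \<Longrightarrow> IT \<rho>' D' (PTy T as) = tsub C (ITG \<Delta> (PTy T as)) m"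
  proof -
    fix D' \<rho>' m assume E: "EnvOK \<Delta> D' \<rho>' m"
    have m: "m \<in> Hom C D' (obI \<Delta>)" using E by (simp add: EnvOK_def)
    have "IT \<rho>' D' (PTy T as) = tsub C (tbase T) (cmp C ?M m)" using ao(3)[OF E] td by simp
    also have "\<dots> = tsub C (tsub C (tbase T) ?M) m" using G0.tsub_cmp[OF ao(2) m td(3)] .
    finally show "IT \<rho>' D' (PTy T as) = tsub C (ITG \<Delta> (PTy T as)) m" using e by simp
  qed
  show ?case using ty env by simp
next
  case (R5 \<Gamma>F f U \<Delta> as)
  have fS: "FDecl \<Gamma>F f U \<in> Sig" using R5.hyps(1) by auto
  have fd: "fdecl f = (\<Gamma>F, U)" using fdecl[OF fS] .
  have GF: "\<Gamma>F \<in> FOb Sig" "JTy U \<Gamma>F \<in> Jdg Sig" using fdecl_ctx[OF fS] by auto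
  have ok: "CtxOK \<Delta>" using R5 by simp
  have D: "obI \<Delta> \<in> Ob C" using ok by (simp add: CtxOK_def)
  have len: "length as = length \<Gamma>F" using R5 by simp
  have IH: "\<forall>k < length \<Gamma>F. IEG \<Delta> (as ! k) \<in> cTm C (obI \<Delta>) (ITG \<Delta> (Bk \<Gamma>F as k)) \<and>
       (\<forall>D' \<rho>' m. EnvOK \<Delta> D' \<rho>' m \<longrightarrow> IE \<rho>' D' (as ! k) = esub C (ITG \<Delta> (Bk \<Gamma>F as k)) (IEG \<Delta> (as ! k)) m)"
    using R5 by (simp add: Bk_def)
  note ao = args_ok[OF GF(1) D len IH]
  let ?M = "SM C (obI \<Delta>) (telF G \<Gamma>F) (nth (map (IEG \<Delta>) as)) (length \<Gamma>F)"
  have tmg: "JTm (App f (map Var (OV \<Gamma>F))) U \<Gamma>F \<in> Jdg Sig"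
    using tm_generic[OF fS _ GF(2)] GF(1) by (simp add: FOb_iff)
  have Uty: "fbaseT f \<in> cTy C (Fo G \<Gamma>F)" using G0.sg_ty[OF GF] fd by (simp add: fbaseT_def)
  have Ute: "fbaseE f \<in> cTm C (Fo G \<Gamma>F) (fbaseT f)" using G0.th_tm[OF GF(1) GF(2) tmg] fd by (simp add: fbaseT_def fbaseE_def)
  have eT: "ITG \<Delta> (substTC U as \<Gamma>F) = tsub C (fbaseT f) ?M"
  proof -
    have "ITG \<Delta> (substTC U as \<Gamma>F) = IT (\<lambda>x. IEG \<Delta> (smap (OV \<Gamma>F) as x)) (obI \<Delta>) U"
      by (simp add: IT_subst)
    also have "\<dots> = tsub C (sg G \<Gamma>F (\<Gamma>F, U)) ?M"
      by (rule A_ty[OF GF(2) D ao(2) A_full[OF GF(1) D len ao(1)]])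
    finally show ?thesis using fd by (simp add: fbaseT_def)
  qed
  have eE: "IEG \<Delta> (App f as) = esub C (fbaseT f) (fbaseE f) ?M" using fd by simp
  have tm: "IEG \<Delta> (App f as) \<in> cTm C (obI \<Delta>) (ITG \<Delta> (substTC U as \<Gamma>F))"
    using eT eE G0.esub_tm[OF ao(2) Uty Ute] by simp
  have env: "\<And>D' \<rho>' m. EnvOK \<Delta> D' \<rho>' m \<Longrightarrow> IE \<rho>' D' (App f as) = esub C (ITG \<Delta> (substTC U as \<Gamma>F)) (IEG \<Delta> (App f as)) m"
  proof -
    fix D' \<rho>' m assume E: "EnvOK \<Delta> D' \<rho>' m"
    have m: "m \<in> Hom C D' (obI \<Delta>)" using E by (simp add: EnvOK_def)
    have "IE \<rho>' D' (App f as) = esub C (fbaseT f) (fbaseE f) (cmp C ?M m)" using ao(3)[OF E] fd by simp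
    also have "\<dots> = esub C (tsub C (fbaseT f) ?M) (esub C (fbaseT f) (fbaseE f) ?M) m"
      using G0.esub_cmp[OF ao(2) m Uty Ute] .
    finally show "IE \<rho>' D' (App f as) = esub C (ITG \<Delta> (substTC U as \<Gamma>F)) (IEG \<Delta> (App f as)) m" using eT eE by simp
  qed
  show ?case using tm env by simp
qed

lemma B_ctx: "JCtx \<Gamma> \<in> Jdg Sig' \<Longrightarrow> CtxOK \<Gamma>" using B_main by fastforce
lemma B_ty: "JTy B \<Gamma> \<in> Jdg Sig' \<Longrightarrow> ITG \<Gamma> B \<in> cTy C (obI \<Gamma>)" using B_main by fastforce
lemma B_tyenv: "JTy B \<Gamma> \<in> Jdg Sig' \<Longrightarrow> EnvOK \<Gamma> D' \<rho>' m \<Longrightarrow> IT \<rho>' D' B = tsub C (ITG \<Gamma> B) m"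
  using B_main[of "JTy B \<Gamma>"] by auto
lemma B_tm: "JTm a B \<Gamma> \<in> Jdg Sig' \<Longrightarrow> IEG \<Gamma> a \<in> cTm C (obI \<Gamma>) (ITG \<Gamma> B)" using B_main by fastforce
lemma B_tmenv: "JTm a B \<Gamma> \<in> Jdg Sig' \<Longrightarrow> EnvOK \<Gamma> D' \<rho>' m \<Longrightarrow> IE \<rho>' D' a = esub C (ITG \<Gamma> B) (IEG \<Gamma> a) m"
  using B_main[of "JTm a B \<Gamma>"] by auto

end



context L
begin

lemma C_ctx: "JCtx \<Gamma> \<in> Jdg Sig \<Longrightarrow> obI \<Gamma> = Fo G \<Gamma> \<and>
   (\<forall>k<length \<Gamma>. tyI \<Gamma> (fst (\<Gamma> ! k)) = G0.sgv \<Gamma> k \<and> enI \<Gamma> (fst (\<Gamma> ! k)) = G0.thv \<Gamma> k)"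
proof (induction "length \<Gamma>" arbitrary: \<Gamma>)
  case 0 then show ?case using G0.Fo_trm by simp
next
  case (Suc n)
  obtain \<Gamma>1 B where e: "\<Gamma> = \<Gamma>1 @ [(fresh \<Gamma>1, B)]" and c1: "JCtx \<Gamma>1 \<in> Jdg Sig" and TB: "JTy B \<Gamma>1 \<in> Jdg Sig"
    using JCtx_inv[OF Suc.prems] Suc.hyps(2) by auto
  have IH: "obI \<Gamma>1 = Fo G \<Gamma>1" "\<And>k. k < length \<Gamma>1 \<Longrightarrow> tyI \<Gamma>1 (fst (\<Gamma>1 ! k)) = G0.sgv \<Gamma>1 k \<and> enI \<Gamma>1 (fst (\<Gamma>1 ! k)) = G0.thv \<Gamma>1 k"
    using Suc.hyps(1)[of \<Gamma>1] Suc.hyps(2) e c1 by auto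
  have G1: "\<Gamma>1 \<in> FOb Sig" using c1 by (rule JCtx_FOb)
  have Ob1: "Fo G \<Gamma>1 \<in> Ob C" using G0.Fo_Ob[OF G1] .
  have env: "\<And>k. k < length \<Gamma>1 \<Longrightarrow> enI \<Gamma>1 (fst (\<Gamma>1 ! k)) = esub C (G0.sgv \<Gamma>1 k) (G0.thv \<Gamma>1 k) (idm C (Fo G \<Gamma>1))"
  proof -
    fix k assume k: "k < length \<Gamma>1"
    have "G0.thv \<Gamma>1 k \<in> cTm C (Fo G \<Gamma>1) (G0.sgv \<Gamma>1 k)" unfolding G0.thv_def G0.sgv_def
      by (rule G0.th_tm[OF G1 JCtx_tyw[OF c1 k] Jdg.R3[OF c1 k]])
    then show "enI \<Gamma>1 (fst (\<Gamma>1 ! k)) = esub C (G0.sgv \<Gamma>1 k) (G0.thv \<Gamma>1 k) (idm C (Fo G \<Gamma>1))"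
      using IH(2)[OF k] G0.esub_id[OF Ob1 G0.sg_ty[OF G1 JCtx_tyw[OF c1 k]]] by (simp add: G0.sgv_def)
  qed
  have T: "ITG \<Gamma>1 B = sg G \<Gamma>1 (\<Gamma>1, B)"
    using A_ty[OF TB Ob1 G0.idm_Hom[OF Ob1] env] IH(1) G0.tsub_id[OF Ob1 G0.sg_ty[OF G1 TB]] by simp
  have o: "obI \<Gamma> = Fo G \<Gamma>" using e IH(1) T G0.Fo_ext[OF G1 TB] by simp
  have v: "\<forall>k<length \<Gamma>. tyI \<Gamma> (fst (\<Gamma> ! k)) = G0.sgv \<Gamma> k \<and> enI \<Gamma> (fst (\<Gamma> ! k)) = G0.thv \<Gamma> k"
  proof (intro allI impI)
    fix k assume k: "k < length \<Gamma>"
    show "tyI \<Gamma> (fst (\<Gamma> ! k)) = G0.sgv \<Gamma> k \<and> enI \<Gamma> (fst (\<Gamma> ! k)) = G0.thv \<Gamma> k"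
    proof (cases "k < length \<Gamma>1")
      case True
      have ny: "fst (\<Gamma>1 ! k) \<noteq> fresh \<Gamma>1"
        using fresh_notin[of \<Gamma>1] True unfolding OV_def by (metis length_map nth_map nth_mem)
      have nth: "\<Gamma> ! k = \<Gamma>1 ! k" using e True by (simp add: nth_append)
      note W = G0.var_weak[OF G1 TB True]
      show ?thesis using W IH(1) IH(2)[OF True] T ny nth e by (simp add: G0.sgv_def G0.thv_def)
    next
      case False
      then have kk: "k = length \<Gamma>1" using k e by simp
      have nth: "\<Gamma> ! k = (fresh \<Gamma>1, B)" using e kk by simp
      show ?thesis using G0.sg_last[OF G1 TB] G0.th_var[OF G1 TB] IH(1) T nth e
        by (simp add: G0.sgv_def G0.thv_def)
    qed
  qed
  show ?case using o v by blast
qed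

lemma C_env: "JCtx \<Gamma> \<in> Jdg Sig \<Longrightarrow> k < length \<Gamma> \<Longrightarrow>
   enI \<Gamma> (fst (\<Gamma> ! k)) = esub C (G0.sgv \<Gamma> k) (G0.thv \<Gamma> k) (idm C (Fo G \<Gamma>))"
proof -
  assume c1: "JCtx \<Gamma> \<in> Jdg Sig" and k: "k < length \<Gamma>"
  have G1: "\<Gamma> \<in> FOb Sig" using c1 by (rule JCtx_FOb)
  have Ob1: "Fo G \<Gamma> \<in> Ob C" using G0.Fo_Ob[OF G1] .
  have "G0.thv \<Gamma> k \<in> cTm C (Fo G \<Gamma>) (G0.sgv \<Gamma> k)" unfolding G0.thv_def G0.sgv_def
    by (rule G0.th_tm[OF G1 JCtx_tyw[OF c1 k] Jdg.R3[OF c1 k]])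
  then show ?thesis
    using C_ctx[OF c1] k G0.esub_id[OF Ob1 G0.sg_ty[OF G1 JCtx_tyw[OF c1 k]]] by (simp add: G0.sgv_def)
qed

lemma C_ty: "JTy B \<Gamma> \<in> Jdg Sig \<Longrightarrow> ITG \<Gamma> B = sg G \<Gamma> (\<Gamma>, B)"
proof -
  assume TB: "JTy B \<Gamma> \<in> Jdg Sig"
  have c1: "JCtx \<Gamma> \<in> Jdg Sig" using JTy_ctx[OF TB] .
  have G1: "\<Gamma> \<in> FOb Sig" using c1 by (rule JCtx_FOb)
  have Ob1: "Fo G \<Gamma> \<in> Ob C" using G0.Fo_Ob[OF G1] .
  show ?thesis using A_ty[OF TB Ob1 G0.idm_Hom[OF Ob1] C_env[OF c1]] C_ctx[OF c1] G0.tsub_id[OF Ob1 G0.sg_ty[OF G1 TB]] by simp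
qed

lemma C_tm: "JTm a B \<Gamma> \<in> Jdg Sig \<Longrightarrow> IEG \<Gamma> a = th G \<Gamma> (\<Gamma>, B) ((\<Gamma>, B), a)"
proof -
  assume Ta: "JTm a B \<Gamma> \<in> Jdg Sig"
  have TB: "JTy B \<Gamma> \<in> Jdg Sig" using JTm_ty[OF Ta] .
  have c1: "JCtx \<Gamma> \<in> Jdg Sig" using JTy_ctx[OF TB] .
  have G1: "\<Gamma> \<in> FOb Sig" using c1 by (rule JCtx_FOb)
  have Ob1: "Fo G \<Gamma> \<in> Ob C" using G0.Fo_Ob[OF G1] .
  show ?thesis using A_tm[OF Ta Ob1 G0.idm_Hom[OF Ob1] C_env[OF c1]] C_ctx[OF c1] G0.esub_id[OF Ob1 G0.sg_ty[OF G1 TB] G0.th_tm[OF G1 TB Ta]] by simp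
qed

definition telI :: "('s, 'f) ctx \<Rightarrow> nat \<Rightarrow> 't" where
  "telI \<Gamma> = (\<lambda>k. ITG (take k \<Gamma>) (snd (\<Gamma> ! k)))"

definition G' :: "(('s, 'f) ctx, ('s, 'f) fmor, ('s, 'f) fty, ('s, 'f) ftm, 'o, 'm, 't, 'e) cwf_mor" where
  "G' = \<lparr> Fo = obI,
          Fa = (\<lambda>(\<Delta>, \<Gamma>, as). SM C (obI \<Delta>) (telI \<Gamma>) (nth (map (IEG \<Delta>) as)) (length \<Gamma>)),
          sg = (\<lambda>\<Gamma> A. ITG \<Gamma> (snd A)),
          th = (\<lambda>\<Gamma> A e. IEG \<Gamma> (snd e)) \<rparr>"

lemma G'_simps[simp]: "Fo G' = obI" "Fa G' (\<Delta>, \<Gamma>, as) = SM C (obI \<Delta>) (telI \<Gamma>) (nth (map (IEG \<Delta>) as)) (length \<Gamma>)"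
  "sg G' \<Gamma> (\<Gamma>', B) = ITG \<Gamma> B" "th G' \<Gamma> X (Y, a) = IEG \<Gamma> a"
  by (simp_all add: G'_def)

lemma tOb_telI: "k \<le> length \<Gamma> \<Longrightarrow> tOb C (telI \<Gamma>) k = obI (take k \<Gamma>)"
proof (induction k)
  case 0 then show ?case by simp
next
  case (Suc k)
  then have k: "k < length \<Gamma>" by simp
  obtain x B where xb: "\<Gamma> ! k = (x, B)" by (cases "\<Gamma> ! k")
  have "take (Suc k) \<Gamma> = take k \<Gamma> @ [(x, B)]" using k xb by (simp add: take_Suc_conv_app_nth)
  then show ?case using Suc xb by (simp add: telI_def)
qed

lemma telI_take: "j < k \<Longrightarrow> telI (take k \<Gamma>) j = telI \<Gamma> j"
  unfolding telI_def by (simp add: min_def)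

lemma telI_snoc: "j \<le> length \<Gamma> \<Longrightarrow> telI (\<Gamma> @ [(y, B)]) j = (if j = length \<Gamma> then ITG \<Gamma> B else telI \<Gamma> j)"
  unfolding telI_def by (auto simp: nth_append)

lemma telI_ty: "\<Gamma> \<in> FOb Sig' \<Longrightarrow> k < length \<Gamma> \<Longrightarrow> telI \<Gamma> k \<in> cTy C (tOb C (telI \<Gamma>) k)"
  using tOb_telI[of k \<Gamma>] B_ty[OF JCtx_tyk] by (auto simp: telI_def FOb_iff)

lemma snoc_facts:
  assumes GG: "\<Gamma> \<in> FOb Sig'" and n: "n < length \<Gamma>"
  shows "take (Suc n) \<Gamma> = take n \<Gamma> @ [(fresh (take n \<Gamma>), snd (\<Gamma> ! n))]"
    and "CtxOK (take n \<Gamma>)"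
    and "JTy (snd (\<Gamma> ! n)) (take n \<Gamma>) \<in> Jdg Sig'"
    and "\<And>j. j < n \<Longrightarrow> fst (\<Gamma> ! j) \<noteq> fresh (take n \<Gamma>)"
    and "fst (\<Gamma> ! n) = fresh (take n \<Gamma>)"
proof -
  have pc: "precontext \<Gamma>" "JCtx \<Gamma> \<in> Jdg Sig'" using GG by (auto simp: FOb_iff)
  show "take (Suc n) \<Gamma> = take n \<Gamma> @ [(fresh (take n \<Gamma>), snd (\<Gamma> ! n))]" using take_Suc_pc[OF pc(1) n] .
  show "CtxOK (take n \<Gamma>)" using B_ctx[OF JCtx_take[OF pc(2)]] .
  show "JTy (snd (\<Gamma> ! n)) (take n \<Gamma>) \<in> Jdg Sig'" using JCtx_tyk[OF pc(2) n] .
  show "fst (\<Gamma> ! n) = fresh (take n \<Gamma>)" using precontext_fst[OF pc(1) n] .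
  fix j assume j: "j < n"
  have "fst (\<Gamma> ! j) \<in> set (OV (take n \<Gamma>))" using j n
    by (auto simp: OV_def in_set_conv_nth intro!: image_eqI[of _ fst "\<Gamma>!j"] exI[of _ j])
  then show "fst (\<Gamma> ! j) \<noteq> fresh (take n \<Gamma>)" using fresh_notin by metis
qed

lemma SM_varI:
  assumes GG: "\<Gamma> \<in> FOb Sig'" and D': "D' \<in> Ob C"
  shows "n \<le> length \<Gamma> \<Longrightarrow> SMok C D' (telI \<Gamma>) es n \<Longrightarrow> j < n \<Longrightarrow>
    esub C (tyI (take n \<Gamma>) (fst (\<Gamma> ! j))) (enI (take n \<Gamma>) (fst (\<Gamma> ! j))) (SM C D' (telI \<Gamma>) es n) = es j"
proof (induction n arbitrary: j)
  case 0 then show ?case by simp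
next
  case (Suc n)
  have n: "n < length \<Gamma>" using Suc by simp
  note sf = snoc_facts[OF GG n]
  define \<Gamma>1 where "\<Gamma>1 = take n \<Gamma>"
  define B where "B = snd (\<Gamma> ! n)"
  define T where "T = ITG \<Gamma>1 B"
  define p where "p = pr C (obI \<Gamma>1) T"
  have ok1: "CtxOK \<Gamma>1" using sf(2) by (simp add: \<Gamma>1_def)
  have D1: "obI \<Gamma>1 \<in> Ob C" using ok1 by (simp add: CtxOK_def)
  have T: "T \<in> cTy C (obI \<Gamma>1)" using B_ty[OF sf(3)] by (simp add: T_def \<Gamma>1_def B_def)
  have tk: "take (Suc n) \<Gamma> = \<Gamma>1 @ [(fresh \<Gamma>1, B)]" using sf(1) by (simp add: \<Gamma>1_def B_def)
  have ok: "SMok C D' (telI \<Gamma>) es n" "es n \<in> cTm C D' (tsub C (telI \<Gamma> n) (SM C D' (telI \<Gamma>) es n))"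
    using Suc.prems by (auto simp: SMok_Suc)
  have Tn: "telI \<Gamma> n = T" by (simp add: telI_def T_def \<Gamma>1_def B_def)
  have M: "SM C D' (telI \<Gamma>) es n \<in> Hom C D' (obI \<Gamma>1)" using G0.SM_Hom[OF D' ok(1)] tOb_telI[of n \<Gamma>] n by (simp add: \<Gamma>1_def)
  note P = G0.pair_ax[OF M T ok(2)[unfolded Tn]]
  have SMs: "SM C D' (telI \<Gamma>) es (Suc n) = pair C T (SM C D' (telI \<Gamma>) es n) (es n)" using Tn by simp
  have pH: "p \<in> Hom C (ext C (obI \<Gamma>1) T) (obI \<Gamma>1)" unfolding p_def by (rule G0.pr_Hom[OF D1 T])
  show ?case
  proof (cases "j = n")
    case True
    then show ?thesis using P SMs tk sf(5) by (simp add: T_def p_def \<Gamma>1_def)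
  next
    case False
    then have j: "j < n" using Suc by simp
    have ny: "fst (\<Gamma> ! j) \<noteq> fresh \<Gamma>1" using sf(4)[OF j] by (simp add: \<Gamma>1_def)
    have nth: "fst (\<Gamma> ! j) = fst (\<Gamma>1 ! j)" using j by (simp add: \<Gamma>1_def)
    have okj: "tyI \<Gamma>1 (fst (\<Gamma> ! j)) \<in> cTy C (obI \<Gamma>1) \<and> enI \<Gamma>1 (fst (\<Gamma> ! j)) \<in> cTm C (obI \<Gamma>1) (tyI \<Gamma>1 (fst (\<Gamma> ! j)))"
      using ok1 j n nth unfolding CtxOK_def by (simp add: \<Gamma>1_def)
    have "esub C (tyI (take (Suc n) \<Gamma>) (fst (\<Gamma> ! j))) (enI (take (Suc n) \<Gamma>) (fst (\<Gamma> ! j))) (SM C D' (telI \<Gamma>) es (Suc n))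
        = esub C (tsub C (tyI \<Gamma>1 (fst (\<Gamma> ! j))) p) (esub C (tyI \<Gamma>1 (fst (\<Gamma> ! j))) (enI \<Gamma>1 (fst (\<Gamma> ! j))) p) (SM C D' (telI \<Gamma>) es (Suc n))"
      using tk ny by (simp add: T_def p_def)
    also have "\<dots> = esub C (tyI \<Gamma>1 (fst (\<Gamma> ! j))) (enI \<Gamma>1 (fst (\<Gamma> ! j))) (cmp C p (SM C D' (telI \<Gamma>) es (Suc n)))"
      using G0.esub_cmp[OF pH _ , of "SM C D' (telI \<Gamma>) es (Suc n)" D'] P SMs okj by simp
    also have "\<dots> = esub C (tyI \<Gamma>1 (fst (\<Gamma> ! j))) (enI \<Gamma>1 (fst (\<Gamma> ! j))) (SM C D' (telI \<Gamma>) es n)"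
      using P SMs by (simp add: p_def)
    also have "\<dots> = es j" using Suc.IH[OF _ ok(1) j] n by (simp add: \<Gamma>1_def)
    finally show ?thesis .
  qed
qed

lemma eta_I:
  assumes GG: "\<Gamma> \<in> FOb Sig'"
  shows "n \<le> length \<Gamma> \<Longrightarrow> h \<in> Hom C D' (obI (take n \<Gamma>)) \<Longrightarrow>
    SM C D' (telI \<Gamma>) (\<lambda>k. esub C (tyI (take n \<Gamma>) (fst (\<Gamma> ! k))) (enI (take n \<Gamma>) (fst (\<Gamma> ! k))) h) n = h"
proof (induction n arbitrary: h)
  case 0
  then show ?case using G0.trm_unique G0.tmap_Hom G0.Hom_Ob by simp (metis G0.Hom_Ob)
next
  case (Suc n)
  have n: "n < length \<Gamma>" using Suc by simp
  note sf = snoc_facts[OF GG n]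
  define \<Gamma>1 where "\<Gamma>1 = take n \<Gamma>"
  define B where "B = snd (\<Gamma> ! n)"
  define T where "T = ITG \<Gamma>1 B"
  define p where "p = pr C (obI \<Gamma>1) T"
  have ok1: "CtxOK \<Gamma>1" using sf(2) by (simp add: \<Gamma>1_def)
  have D1: "obI \<Gamma>1 \<in> Ob C" using ok1 by (simp add: CtxOK_def)
  have T: "T \<in> cTy C (obI \<Gamma>1)" using B_ty[OF sf(3)] by (simp add: T_def \<Gamma>1_def B_def)
  have tk: "take (Suc n) \<Gamma> = \<Gamma>1 @ [(fresh \<Gamma>1, B)]" using sf(1) by (simp add: \<Gamma>1_def B_def)
  have Tn: "telI \<Gamma> n = T" by (simp add: telI_def T_def \<Gamma>1_def B_def)
  have pH: "p \<in> Hom C (ext C (obI \<Gamma>1) T) (obI \<Gamma>1)" unfolding p_def by (rule G0.pr_Hom[OF D1 T])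
  have h: "h \<in> Hom C D' (ext C (obI \<Gamma>1) T)" using Suc.prems tk by (simp add: T_def)
  have ph: "cmp C p h \<in> Hom C D' (obI \<Gamma>1)" using G0.cmp_Hom[OF h pH] .
  have es: "\<And>k. k < n \<Longrightarrow> esub C (tyI (take (Suc n) \<Gamma>) (fst (\<Gamma> ! k))) (enI (take (Suc n) \<Gamma>) (fst (\<Gamma> ! k))) h
       = esub C (tyI \<Gamma>1 (fst (\<Gamma> ! k))) (enI \<Gamma>1 (fst (\<Gamma> ! k))) (cmp C p h)"
  proof -
    fix k assume k: "k < n"
    have ny: "fst (\<Gamma> ! k) \<noteq> fresh \<Gamma>1" using sf(4)[OF k] by (simp add: \<Gamma>1_def)
    have okj: "tyI \<Gamma>1 (fst (\<Gamma> ! k)) \<in> cTy C (obI \<Gamma>1) \<and> enI \<Gamma>1 (fst (\<Gamma> ! k)) \<in> cTm C (obI \<Gamma>1) (tyI \<Gamma>1 (fst (\<Gamma> ! k)))"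
      using ok1 k n unfolding CtxOK_def by (simp add: \<Gamma>1_def)
    show "?thesis k" using tk ny G0.esub_cmp[OF pH h] okj by (simp add: T_def p_def)
  qed
  have "SM C D' (telI \<Gamma>) (\<lambda>k. esub C (tyI (take (Suc n) \<Gamma>) (fst (\<Gamma> ! k))) (enI (take (Suc n) \<Gamma>) (fst (\<Gamma> ! k))) h) n
      = SM C D' (telI \<Gamma>) (\<lambda>k. esub C (tyI \<Gamma>1 (fst (\<Gamma> ! k))) (enI \<Gamma>1 (fst (\<Gamma> ! k))) (cmp C p h)) n"
    by (rule SM_cong) (use es in auto)
  also have "\<dots> = cmp C p h" using Suc.IH[of "cmp C p h"] ph n by (simp add: \<Gamma>1_def)
  finally have e1: "SM C D' (telI \<Gamma>) (\<lambda>k. esub C (tyI (take (Suc n) \<Gamma>) (fst (\<Gamma> ! k))) (enI (take (Suc n) \<Gamma>) (fst (\<Gamma> ! k))) h) n = cmp C p h" .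
  have e2: "esub C (tyI (take (Suc n) \<Gamma>) (fst (\<Gamma> ! n))) (enI (take (Suc n) \<Gamma>) (fst (\<Gamma> ! n))) h
      = esub C (tsub C T p) (var C (obI \<Gamma>1) T) h"
    using tk sf(5) by (simp add: T_def p_def \<Gamma>1_def)
  show ?case using e1 e2 Tn G0.pair_eta[OF D1 T h] by (simp add: p_def)
qed

end



lemma FcTy: "A \<in> cTy (FSig X) \<Gamma> \<Longrightarrow> \<exists>B. A = (\<Gamma>, B) \<and> JTy B \<Gamma> \<in> Jdg X"
  by auto
lemma FcTm: "a \<in> cTm (FSig X) \<Gamma> (\<Gamma>', B) \<Longrightarrow> \<exists>t. a = ((\<Gamma>, B), t) \<and> \<Gamma>' = \<Gamma> \<and> JTm t B \<Gamma> \<in> Jdg X"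
  by auto

context L
begin

lemma CMI:
  assumes GT: "\<Gamma> \<in> FOb Sig'" and D: "D \<in> Ob C" and len: "length as = length \<Gamma>"
    and tm: "\<forall>k<length \<Gamma>. IE \<rho> D (as ! k) \<in> cTm C D (IT \<rho> D (Bk \<Gamma> as k))"
  shows "n \<le> length \<Gamma> \<Longrightarrow> SMok C D (telI \<Gamma>) (nth (map (IE \<rho> D) as)) n \<and>
     (\<forall>k<n. IT \<rho> D (Bk \<Gamma> as k) = tsub C (telI \<Gamma> k) (SM C D (telI \<Gamma>) (nth (map (IE \<rho> D) as)) k))"
proof (induction n)
  case 0 then show ?case by (simp add: SMok_def)
next
  case (Suc n)
  let ?es = "nth (map (IE \<rho> D) as)"
  have n: "n < length \<Gamma>" using Suc by simp
  have IH: "SMok C D (telI \<Gamma>) ?es n"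
     "\<forall>k<n. IT \<rho> D (Bk \<Gamma> as k) = tsub C (telI \<Gamma> k) (SM C D (telI \<Gamma>) ?es k)" using Suc by auto
  note sf = snoc_facts[OF GT n]
  define \<Gamma>0 where "\<Gamma>0 = take n \<Gamma>"
  have pc0: "precontext \<Gamma>0" using GT by (simp add: FOb_iff precontext_take \<Gamma>0_def)
  have M: "SM C D (telI \<Gamma>) ?es n \<in> Hom C D (obI \<Gamma>0)"
    using G0.SM_Hom[OF D IH(1)] tOb_telI[of n \<Gamma>] n unfolding \<Gamma>0_def by simp
  let ?\<rho>' = "\<lambda>x. IE \<rho> D (smap (map fst \<Gamma>0) (take n as) x)"
  have E: "EnvOK \<Gamma>0 D ?\<rho>' (SM C D (telI \<Gamma>) ?es n)"
    unfolding EnvOK_def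
  proof (intro conjI D M allI impI)
    fix k assume k: "k < length \<Gamma>0"
    have kn: "k < n" using k by (simp add: \<Gamma>0_def)
    have di: "distinct (map fst \<Gamma>0)" using precontext_distinct[OF pc0] by (simp add: OV_def)
    have "smap (map fst \<Gamma>0) (take n as) (fst (\<Gamma>0 ! k)) = take n as ! k"
      using smap_nth[OF di, of "take n as" k] len n k by (simp add: \<Gamma>0_def)
    then have "?\<rho>' (fst (\<Gamma>0 ! k)) = ?es k" using kn len n by simp
    also have "\<dots> = esub C (tyI (take n \<Gamma>) (fst (\<Gamma> ! k))) (enI (take n \<Gamma>) (fst (\<Gamma> ! k))) (SM C D (telI \<Gamma>) ?es n)"
      using SM_varI[OF GT D _ IH(1) kn] n by simp
    finally show "?\<rho>' (fst (\<Gamma>0 ! k)) = esub C (tyI \<Gamma>0 (fst (\<Gamma>0 ! k))) (enI \<Gamma>0 (fst (\<Gamma>0 ! k))) (SM C D (telI \<Gamma>) ?es n)"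
      using kn by (simp add: \<Gamma>0_def)
  qed
  have "IT \<rho> D (Bk \<Gamma> as n) = IT ?\<rho>' D (snd (\<Gamma> ! n))"
    by (simp add: Bk_def IT_subst \<Gamma>0_def)
  also have "\<dots> = tsub C (ITG \<Gamma>0 (snd (\<Gamma> ! n))) (SM C D (telI \<Gamma>) ?es n)"
    using B_tyenv[OF sf(3) E[unfolded \<Gamma>0_def]] by (simp add: \<Gamma>0_def)
  finally have eq: "IT \<rho> D (Bk \<Gamma> as n) = tsub C (telI \<Gamma> n) (SM C D (telI \<Gamma>) ?es n)"
    by (simp add: telI_def \<Gamma>0_def)
  have "?es n \<in> cTm C D (tsub C (telI \<Gamma> n) (SM C D (telI \<Gamma>) ?es n))"
    using tm n eq len by (metis nth_map)
  then have "SMok C D (telI \<Gamma>) ?es (Suc n)"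
    using IH(1) telI_ty[OF GT n] by (simp add: SMok_Suc)
  then show ?case using IH(2) eq by (auto simp: less_Suc_eq)
qed

lemma EnvOK_Fa:
  assumes h: "(\<Delta>, \<Gamma>, as) \<in> Hom (FSig Sig') \<Delta> \<Gamma>"
  shows "EnvOK \<Gamma> (obI \<Delta>) (\<lambda>x. IEG \<Delta> (smap (OV \<Gamma>) as x)) (Fa G' (\<Delta>, \<Gamma>, as))"
    and "SMok C (obI \<Delta>) (telI \<Gamma>) (nth (map (IEG \<Delta>) as)) (length \<Gamma>)"
    and "\<forall>k<length \<Gamma>. ITG \<Delta> (Bk \<Gamma> as k) = tsub C (telI \<Gamma> k) (SM C (obI \<Delta>) (telI \<Gamma>) (nth (map (IEG \<Delta>) as)) k)"
    and "\<forall>k<length \<Gamma>. JTm (as ! k) (Bk \<Gamma> as k) \<Delta> \<in> Jdg Sig'"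
proof -
  have DD: "\<Delta> \<in> FOb Sig'" "\<Gamma> \<in> FOb Sig'" "cmap (Jdg Sig') as \<Delta> \<Gamma>" using h by (auto simp: FHom)
  have len: "length as = length \<Gamma>" using DD by (simp add: cmap_def)
  have D: "obI \<Delta> \<in> Ob C" using B_ctx[of \<Delta>] DD by (simp add: FOb_iff CtxOK_def)
  show tms: "\<forall>k<length \<Gamma>. JTm (as ! k) (Bk \<Gamma> as k) \<Delta> \<in> Jdg Sig'" using cmap_tm[OF DD(3)] by blast
  have tm: "\<forall>k<length \<Gamma>. IEG \<Delta> (as ! k) \<in> cTm C (obI \<Delta>) (ITG \<Delta> (Bk \<Gamma> as k))" using tms B_tm by blast
  note c = CMI[OF DD(2) D len tm, of "length \<Gamma>"]
  show ok: "SMok C (obI \<Delta>) (telI \<Gamma>) (nth (map (IEG \<Delta>) as)) (length \<Gamma>)" using c by simp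
  show "\<forall>k<length \<Gamma>. ITG \<Delta> (Bk \<Gamma> as k) = tsub C (telI \<Gamma> k) (SM C (obI \<Delta>) (telI \<Gamma>) (nth (map (IEG \<Delta>) as)) k)"
    using c by simp
  have M: "Fa G' (\<Delta>, \<Gamma>, as) \<in> Hom C (obI \<Delta>) (obI \<Gamma>)" using G0.SM_Hom[OF D ok] tOb_telI[of "length \<Gamma>" \<Gamma>] by simp
  show "EnvOK \<Gamma> (obI \<Delta>) (\<lambda>x. IEG \<Delta> (smap (OV \<Gamma>) as x)) (Fa G' (\<Delta>, \<Gamma>, as))"
    unfolding EnvOK_def
  proof (intro conjI D M allI impI)
    fix k assume k: "k < length \<Gamma>"
    have di: "distinct (OV \<Gamma>)" using DD by (simp add: FOb_iff precontext_distinct)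
    have "smap (OV \<Gamma>) as (fst (\<Gamma> ! k)) = as ! k" using smap_nth[OF di, of as k] len k by (simp add: OV_def)
    then show "IEG \<Delta> (smap (OV \<Gamma>) as (fst (\<Gamma> ! k))) = esub C (tyI \<Gamma> (fst (\<Gamma> ! k))) (enI \<Gamma> (fst (\<Gamma> ! k))) (Fa G' (\<Delta>, \<Gamma>, as))"
      using SM_varI[OF DD(2) D _ ok k] len k by simp
  qed
qed

end



context L
begin

lemma G'_mor: "cwf_morphism (FSig Sig') C G'"
  unfolding cwf_morphism_def
proof (intro conjI)
  show m1: "\<forall>\<Gamma> \<in> Ob (FSig Sig'). Fo G' \<Gamma> \<in> Ob C"
    using B_ctx by (auto simp: FOb_iff CtxOK_def)
  show m2: "\<forall>\<Delta> \<Gamma> f. f \<in> Hom (FSig Sig') \<Delta> \<Gamma> \<longrightarrow> Fa G' f \<in> Hom C (Fo G' \<Delta>) (Fo G' \<Gamma>)"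
  proof (intro allI impI)
    fix \<Delta> \<Gamma> f assume f: "f \<in> Hom (FSig Sig') \<Delta> \<Gamma>"
    then obtain as where e: "f = (\<Delta>, \<Gamma>, as)" using FHom_ex by blast
    show "Fa G' f \<in> Hom C (Fo G' \<Delta>) (Fo G' \<Gamma>)" using EnvOK_Fa(1)[OF f[unfolded e]] e by (simp add: EnvOK_def)
  qed
  show m3: "\<forall>\<Gamma> \<in> Ob (FSig Sig'). Fa G' (idm (FSig Sig') \<Gamma>) = idm C (Fo G' \<Gamma>)"
  proof
    fix \<Gamma> assume "\<Gamma> \<in> Ob (FSig Sig')"
    then have GG: "\<Gamma> \<in> FOb Sig'" by simp
    have ok: "CtxOK \<Gamma>" using B_ctx GG by (simp add: FOb_iff)
    have D: "obI \<Gamma> \<in> Ob C" using ok by (simp add: CtxOK_def)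
    have "SM C (obI \<Gamma>) (telI \<Gamma>) (nth (map (IEG \<Gamma>) (map Var (OV \<Gamma>)))) (length \<Gamma>)
       = SM C (obI \<Gamma>) (telI \<Gamma>) (\<lambda>k. esub C (tyI (take (length \<Gamma>) \<Gamma>) (fst (\<Gamma> ! k))) (enI (take (length \<Gamma>) \<Gamma>) (fst (\<Gamma> ! k))) (idm C (obI \<Gamma>))) (length \<Gamma>)"
      by (rule SM_cong) (use ok G0.esub_id[OF D] in \<open>auto simp: CtxOK_def OV_def\<close>)
    also have "\<dots> = idm C (obI \<Gamma>)" using eta_I[OF GG, of "length \<Gamma>" "idm C (obI \<Gamma>)"] G0.idm_Hom[OF D] by simp
    finally show "Fa G' (idm (FSig Sig') \<Gamma>) = idm C (Fo G' \<Gamma>)" by simp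
  qed
  show m4: "\<forall>f g. f \<in> Arr (FSig Sig') \<longrightarrow> g \<in> Arr (FSig Sig') \<longrightarrow> cd (FSig Sig') f = dm (FSig Sig') g \<longrightarrow>
        Fa G' (cmp (FSig Sig') g f) = cmp C (Fa G' g) (Fa G' f)"
  proof (intro allI impI)
    fix f g assume f: "f \<in> Arr (FSig Sig')" and g: "g \<in> Arr (FSig Sig')" and fg: "cd (FSig Sig') f = dm (FSig Sig') g"
    obtain \<Delta> \<Gamma> ss where fe: "f = (\<Delta>, \<Gamma>, ss)" by (cases f) auto
    obtain \<Gamma>2 \<Theta> ts where ge: "g = (\<Gamma>2, \<Theta>, ts)" by (cases g) auto
    have g2: "\<Gamma>2 = \<Gamma>" using fg fe ge by simp
    have hf: "(\<Delta>, \<Gamma>, ss) \<in> Hom (FSig Sig') \<Delta> \<Gamma>" using f fe by (simp add: Hom_def)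
    have hg: "(\<Gamma>, \<Theta>, ts) \<in> Hom (FSig Sig') \<Gamma> \<Theta>" using g ge g2 by (simp add: Hom_def)
    have lt: "length ts = length \<Theta>" using hg by (simp add: FHom cmap_def)
    note Ef = EnvOK_Fa[OF hf] and Eg = EnvOK_Fa[OF hg]
    have m: "Fa G' (\<Delta>, \<Gamma>, ss) \<in> Hom C (obI \<Delta>) (obI \<Gamma>)" using Ef(1) by (simp add: EnvOK_def)
    have D: "obI \<Delta> \<in> Ob C" using Ef(1) by (simp add: EnvOK_def)
    have "cmp C (Fa G' g) (Fa G' f) = SM C (obI \<Delta>) (telI \<Theta>)
       (\<lambda>k. esub C (tsub C (telI \<Theta> k) (SM C (obI \<Gamma>) (telI \<Theta>) (nth (map (IEG \<Gamma>) ts)) k)) (nth (map (IEG \<Gamma>) ts) k) (Fa G' (\<Delta>, \<Gamma>, ss))) (length \<Theta>)"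
      using G0.SM_comp[OF D m Eg(2)] fe ge g2 by simp
    also have "\<dots> = SM C (obI \<Delta>) (telI \<Theta>) (nth (map (IEG \<Delta>) (map (\<lambda>t. substPC t ss \<Gamma>) ts))) (length \<Theta>)"
    proof (rule SM_cong)
      fix k assume k: "k < length \<Theta>"
      have "IEG \<Delta> (substPC (ts ! k) ss \<Gamma>) = IE (\<lambda>x. IEG \<Delta> (smap (OV \<Gamma>) ss x)) (obI \<Delta>) (ts ! k)"
        by (simp add: IE_subst)
      also have "\<dots> = esub C (ITG \<Gamma> (Bk \<Theta> ts k)) (IEG \<Gamma> (ts ! k)) (Fa G' (\<Delta>, \<Gamma>, ss))"
        using B_tmenv[OF _ Ef(1)] Eg(4) k by blast
      finally show "esub C (tsub C (telI \<Theta> k) (SM C (obI \<Gamma>) (telI \<Theta>) (nth (map (IEG \<Gamma>) ts)) k)) (nth (map (IEG \<Gamma>) ts) k) (Fa G' (\<Delta>, \<Gamma>, ss))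
          = nth (map (IEG \<Delta>) (map (\<lambda>t. substPC t ss \<Gamma>) ts)) k"
        using Eg(3) k lt by simp
    qed simp
    finally show "Fa G' (cmp (FSig Sig') g f) = cmp C (Fa G' g) (Fa G' f)" using fe ge g2 by simp
  qed
  show m5: "Fo G' (trm (FSig Sig')) = trm C" by simp
  show m6: "\<forall>\<Gamma> \<in> Ob (FSig Sig'). \<forall>A \<in> cTy (FSig Sig') \<Gamma>. sg G' \<Gamma> A \<in> cTy C (Fo G' \<Gamma>)"
    using B_ty by auto
  show m7: "\<forall>\<Delta> \<Gamma> f A. f \<in> Hom (FSig Sig') \<Delta> \<Gamma> \<longrightarrow> A \<in> cTy (FSig Sig') \<Gamma> \<longrightarrow>
        sg G' \<Delta> (tsub (FSig Sig') A f) = tsub C (sg G' \<Gamma> A) (Fa G' f)"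
  proof (intro allI impI)
    fix \<Delta> \<Gamma> f A assume f: "f \<in> Hom (FSig Sig') \<Delta> \<Gamma>" and A: "A \<in> cTy (FSig Sig') \<Gamma>"
    obtain as where fe: "f = (\<Delta>, \<Gamma>, as)" using FHom_ex[OF f] by blast
    obtain B where Ae: "A = (\<Gamma>, B)" and TB: "JTy B \<Gamma> \<in> Jdg Sig'" using FcTy[OF A] by blast
    have "ITG \<Delta> (substTC B as \<Gamma>) = IT (\<lambda>x. IEG \<Delta> (smap (OV \<Gamma>) as x)) (obI \<Delta>) B" by (simp add: IT_subst)
    also have "\<dots> = tsub C (ITG \<Gamma> B) (Fa G' (\<Delta>, \<Gamma>, as))" using B_tyenv[OF TB EnvOK_Fa(1)[OF f[unfolded fe]]] .
    finally show "sg G' \<Delta> (tsub (FSig Sig') A f) = tsub C (sg G' \<Gamma> A) (Fa G' f)" using fe Ae by simp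
  qed
  show m8: "\<forall>\<Gamma> \<in> Ob (FSig Sig'). \<forall>A \<in> cTy (FSig Sig') \<Gamma>.
        Fo G' (ext (FSig Sig') \<Gamma> A) = ext C (Fo G' \<Gamma>) (sg G' \<Gamma> A)
      \<and> Fa G' (pr (FSig Sig') \<Gamma> A) = pr C (Fo G' \<Gamma>) (sg G' \<Gamma> A)"
  proof (intro ballI conjI)
    fix \<Gamma> A assume G: "\<Gamma> \<in> Ob (FSig Sig')" and A: "A \<in> cTy (FSig Sig') \<Gamma>"
    obtain B where Ae: "A = (\<Gamma>, B)" and TB: "JTy B \<Gamma> \<in> Jdg Sig'" using FcTy[OF A] by blast
    show "Fo G' (ext (FSig Sig') \<Gamma> A) = ext C (Fo G' \<Gamma>) (sg G' \<Gamma> A)" using Ae by simp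
    have GG: "\<Gamma> \<in> FOb Sig'" using G by simp
    have ok: "CtxOK \<Gamma>" using B_ctx GG by (simp add: FOb_iff)
    have D: "obI \<Gamma> \<in> Ob C" using ok by (simp add: CtxOK_def)
    have T: "ITG \<Gamma> B \<in> cTy C (obI \<Gamma>)" using B_ty[OF TB] .
    have ny: "\<And>k. k < length \<Gamma> \<Longrightarrow> fst (\<Gamma> ! k) \<noteq> fresh \<Gamma>"
      using fresh_notin[of \<Gamma>] unfolding OV_def by (metis length_map nth_map nth_mem)
    have "SM C (obI (\<Gamma> @ [(fresh \<Gamma>, B)])) (telI \<Gamma>) (nth (map (IEG (\<Gamma> @ [(fresh \<Gamma>, B)])) (map Var (OV \<Gamma>)))) (length \<Gamma>)
       = SM C (obI (\<Gamma> @ [(fresh \<Gamma>, B)])) (telI \<Gamma>) (\<lambda>k. esub C (tyI (take (length \<Gamma>) \<Gamma>) (fst (\<Gamma> ! k))) (enI (take (length \<Gamma>) \<Gamma>) (fst (\<Gamma> ! k))) (pr C (obI \<Gamma>) (ITG \<Gamma> B))) (length \<Gamma>)"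
      by (rule SM_cong) (use ny in \<open>auto simp: OV_def\<close>)
    also have "\<dots> = pr C (obI \<Gamma>) (ITG \<Gamma> B)" using eta_I[OF GG, of "length \<Gamma>" "pr C (obI \<Gamma>) (ITG \<Gamma> B)"] G0.pr_Hom[OF D T] by simp
    finally show "Fa G' (pr (FSig Sig') \<Gamma> A) = pr C (Fo G' \<Gamma>) (sg G' \<Gamma> A)" using Ae by simp
  qed
  show m9: "\<forall>\<Gamma> \<in> Ob (FSig Sig'). \<forall>A \<in> cTy (FSig Sig') \<Gamma>. \<forall>a \<in> cTm (FSig Sig') \<Gamma> A. th G' \<Gamma> A a \<in> cTm C (Fo G' \<Gamma>) (sg G' \<Gamma> A)"
    using B_tm by auto
  show m10: "\<forall>\<Delta> \<Gamma> f A a. f \<in> Hom (FSig Sig') \<Delta> \<Gamma> \<longrightarrow> A \<in> cTy (FSig Sig') \<Gamma> \<longrightarrow> a \<in> cTm (FSig Sig') \<Gamma> A \<longrightarrow>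
        th G' \<Delta> (tsub (FSig Sig') A f) (esub (FSig Sig') A a f) = esub C (sg G' \<Gamma> A) (th G' \<Gamma> A a) (Fa G' f)"
  proof (intro allI impI)
    fix \<Delta> \<Gamma> f A a assume f: "f \<in> Hom (FSig Sig') \<Delta> \<Gamma>" and A: "A \<in> cTy (FSig Sig') \<Gamma>" and a: "a \<in> cTm (FSig Sig') \<Gamma> A"
    obtain as where fe: "f = (\<Delta>, \<Gamma>, as)" using FHom_ex[OF f] by blast
    obtain B where Ae: "A = (\<Gamma>, B)" and TB: "JTy B \<Gamma> \<in> Jdg Sig'" using FcTy[OF A] by blast
    obtain t where ae: "a = ((\<Gamma>, B), t)" and Tt: "JTm t B \<Gamma> \<in> Jdg Sig'" using FcTm[OF a[unfolded Ae]] by blast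
    have "IEG \<Delta> (substPC t as \<Gamma>) = IE (\<lambda>x. IEG \<Delta> (smap (OV \<Gamma>) as x)) (obI \<Delta>) t" by (simp add: IE_subst)
    also have "\<dots> = esub C (ITG \<Gamma> B) (IEG \<Gamma> t) (Fa G' (\<Delta>, \<Gamma>, as))" using B_tmenv[OF Tt EnvOK_Fa(1)[OF f[unfolded fe]]] .
    finally show "th G' \<Delta> (tsub (FSig Sig') A f) (esub (FSig Sig') A a f) = esub C (sg G' \<Gamma> A) (th G' \<Gamma> A a) (Fa G' f)"
      using fe Ae ae by simp
  qed
  show m11: "\<forall>\<Gamma> \<in> Ob (FSig Sig'). \<forall>A \<in> cTy (FSig Sig') \<Gamma>.
        th G' (ext (FSig Sig') \<Gamma> A) (tsub (FSig Sig') A (pr (FSig Sig') \<Gamma> A)) (var (FSig Sig') \<Gamma> A) = var C (Fo G' \<Gamma>) (sg G' \<Gamma> A)"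
    by auto
  show m12: "\<forall>\<Delta> \<Gamma> f A a. f \<in> Hom (FSig Sig') \<Delta> \<Gamma> \<longrightarrow> A \<in> cTy (FSig Sig') \<Gamma> \<longrightarrow> a \<in> cTm (FSig Sig') \<Delta> (tsub (FSig Sig') A f) \<longrightarrow>
        Fa G' (pair (FSig Sig') A f a) = pair C (sg G' \<Gamma> A) (Fa G' f) (th G' \<Delta> (tsub (FSig Sig') A f) a)"
  proof (intro allI impI)
    fix \<Delta> \<Gamma> f A a assume f: "f \<in> Hom (FSig Sig') \<Delta> \<Gamma>" and A: "A \<in> cTy (FSig Sig') \<Gamma>" and a: "a \<in> cTm (FSig Sig') \<Delta> (tsub (FSig Sig') A f)"
    obtain ss where fe: "f = (\<Delta>, \<Gamma>, ss)" using FHom_ex[OF f] by blast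
    obtain B where Ae: "A = (\<Gamma>, B)" and TB: "JTy B \<Gamma> \<in> Jdg Sig'" using FcTy[OF A] by blast
    obtain b where ae: "a = ((\<Delta>, substTC B ss \<Gamma>), b)" using a fe Ae by auto
    have len: "length ss = length \<Gamma>" using f fe by (simp add: FHom cmap_def)
    have "SM C (obI \<Delta>) (telI (\<Gamma> @ [(fresh \<Gamma>, B)])) (nth (map (IEG \<Delta>) (ss @ [b]))) (length \<Gamma>)
        = SM C (obI \<Delta>) (telI \<Gamma>) (nth (map (IEG \<Delta>) ss)) (length \<Gamma>)"
      by (rule SM_cong) (use len in \<open>auto simp: telI_snoc nth_append\<close>)
    then show "Fa G' (pair (FSig Sig') A f a) = pair C (sg G' \<Gamma> A) (Fa G' f) (th G' \<Delta> (tsub (FSig Sig') A f) a)"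
      using fe Ae ae len by (simp add: telI_snoc nth_append)
  qed
qed

end



context fmor
begin
lemma Fa_idm: "\<Gamma> \<in> FOb X \<Longrightarrow> Fa F (\<Gamma>, \<Gamma>, map Var (OV \<Gamma>)) = idm C (Fo F \<Gamma>)"
  using max3 by simp
end

lemma FOb_mono: "\<Gamma> \<in> FOb X \<Longrightarrow> X \<subseteq> Y \<Longrightarrow> \<Gamma> \<in> FOb Y"
  by (auto simp: FOb_iff intro: Jdg_mono)

lemma Bk_vars: "Bk \<Gamma> (map Var (OV \<Gamma>)) k = snd (\<Gamma> ! k)"
proof -
  have e: "take k (map Var (OV \<Gamma>)) = map Var (map fst (take k \<Gamma>))" by (simp add: OV_def take_map)
  show ?thesis unfolding Bk_def by (simp only: e substT_idv)
qed

context L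
begin

lemma G'_eq: "mor_eq (FSig Sig) (mor_comp G' Emb) G"
  unfolding mor_eq_def
proof (intro conjI)
  show "\<forall>\<Gamma>\<in>Ob (FSig Sig). Fo (mor_comp G' Emb) \<Gamma> = Fo G \<Gamma>"
    using C_ctx by (auto simp: mor_comp_def Emb_def FOb_iff)
  show "\<forall>f\<in>Arr (FSig Sig). Fa (mor_comp G' Emb) f = Fa G f"
  proof
    fix f assume f: "f \<in> Arr (FSig Sig)"
    obtain \<Delta> \<Gamma> as where fe: "f = (\<Delta>, \<Gamma>, as)" by (cases f) auto
    have h: "(\<Delta>, \<Gamma>, as) \<in> Hom (FSig Sig) \<Delta> \<Gamma>" using f fe by (simp add: Hom_def)
    have DD: "\<Delta> \<in> FOb Sig" "\<Gamma> \<in> FOb Sig" "cmap (Jdg Sig) as \<Delta> \<Gamma>" using h by (auto simp: FHom)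
    have len: "length as = length \<Gamma>" using DD by (simp add: cmap_def)
    have cD: "JCtx \<Delta> \<in> Jdg Sig" "JCtx \<Gamma> \<in> Jdg Sig" using DD by (auto simp: FOb_iff)
    have "SM C (obI \<Delta>) (telI \<Gamma>) (nth (map (IEG \<Delta>) as)) (length \<Gamma>) = SM C (Fo G \<Delta>) (telF G \<Gamma>) (G0.thes \<Delta> \<Gamma> as) (length \<Gamma>)"
    proof -
      have "SM C (obI \<Delta>) (telI \<Gamma>) (nth (map (IEG \<Delta>) as)) (length \<Gamma>) = SM C (obI \<Delta>) (telF G \<Gamma>) (G0.thes \<Delta> \<Gamma> as) (length \<Gamma>)"
      proof (rule SM_cong)
        fix k assume k: "k < length \<Gamma>"
        show "telI \<Gamma> k = telF G \<Gamma> k" using C_ty[OF JCtx_tyk[OF cD(2) k]] by (simp add: telI_def telF_def)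
        show "nth (map (IEG \<Delta>) as) k = G0.thes \<Delta> \<Gamma> as k"
          using C_tm[OF cmap_tm[OF DD(3) k]] k len by (simp add: G0.thes_def)
      qed
      then show ?thesis using C_ctx[OF cD(1)] by simp
    qed
    then show "Fa (mor_comp G' Emb) f = Fa G f" using G0.Fa_dec(1)[OF h] fe by (simp add: mor_comp_def Emb_def)
  qed
  show "\<forall>\<Gamma>\<in>Ob (FSig Sig). \<forall>A\<in>cTy (FSig Sig) \<Gamma>. sg (mor_comp G' Emb) \<Gamma> A = sg G \<Gamma> A"
    using C_ty by (auto simp: mor_comp_def Emb_def)
  show "\<forall>\<Gamma>\<in>Ob (FSig Sig). \<forall>A\<in>cTy (FSig Sig) \<Gamma>. \<forall>a\<in>cTm (FSig Sig) \<Gamma> A. th (mor_comp G' Emb) \<Gamma> A a = th G \<Gamma> A a"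
    using C_tm by (auto simp: mor_comp_def Emb_def)
qed

lemma G'_A: "sg G' GS (GS, PTy S (map Var (OV GS))) = A"
proof -
  have G1: "GS \<in> FOb Sig" by (rule GS_FOb)
  have Ob1: "Fo G GS \<in> Ob C" using G0.Fo_Ob[OF G1] .
  have h: "(GS, GS, map Var (OV GS)) \<in> Hom (FSig Sig) GS GS"
    using cmap_proj[of GS "[]" Sig] jS G1 by (simp add: FHom)
  have "SM C (obI GS) (telF G GS) (nth (map (IEG GS) (map Var (OV GS)))) (length GS)
      = SM C (Fo G GS) (telF G GS) (G0.thes GS GS (map Var (OV GS))) (length GS)"
  proof -
    have "SM C (obI GS) (telF G GS) (nth (map (IEG GS) (map Var (OV GS)))) (length GS)
        = SM C (obI GS) (telF G GS) (G0.thes GS GS (map Var (OV GS))) (length GS)"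
    proof (rule SM_cong)
      fix k assume k: "k < length GS"
      have v: "map Var (OV GS) ! k = Var (fst (GS ! k))" using k by (simp add: OV_def)
      have l: "length (map Var (OV GS)) = length GS" by (simp add: OV_def)
      show "nth (map (IEG GS) (map Var (OV GS))) k = G0.thes GS GS (map Var (OV GS)) k"
        unfolding G0.thes_def Bk_vars using C_ctx[OF jS] k v l by (simp add: G0.thv_def)
    qed simp
    then show ?thesis using C_ctx[OF jS] by simp
  qed
  also have "\<dots> = idm C (Fo G GS)" using G0.Fa_dec(1)[OF h] G0.Fa_idm[OF G1] by simp
  finally show ?thesis using G0.tsub_id[OF Ob1 AT] by (simp add: tctx_def tbase_def)
qed

end

locale LU = L +
  fixes H
  assumes morH: "cwf_morphism (FSig (insert (TDecl GS S) Sig)) C H"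
    and eqH: "mor_eq (FSig Sig) (mor_comp H Emb) G"
    and AH: "sg H GS (GS, PTy S (map Var (OV GS))) = A"
begin

sublocale H2: fmor C Sig' H
  by unfold_locales (rule cwfC, rule morH)

lemma eqH_ty: "JTy B \<Gamma> \<in> Jdg Sig \<Longrightarrow> sg H \<Gamma> (\<Gamma>, B) = sg G \<Gamma> (\<Gamma>, B)"
proof -
  assume a: "JTy B \<Gamma> \<in> Jdg Sig"
  have "\<Gamma> \<in> FOb Sig" by (rule JCtx_FOb[OF JTy_ctx[OF a]])
  then show ?thesis using eqH a unfolding mor_eq_def mor_comp_def Emb_def by simp
qed
lemma eqH_tm: "JTm a B \<Gamma> \<in> Jdg Sig \<Longrightarrow> th H \<Gamma> (\<Gamma>, B) ((\<Gamma>, B), a) = th G \<Gamma> (\<Gamma>, B) ((\<Gamma>, B), a)"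
proof -
  assume a: "JTm a B \<Gamma> \<in> Jdg Sig"
  have "\<Gamma> \<in> FOb Sig" by (rule JCtx_FOb[OF JTm_ctx[OF a]])
  then show ?thesis using eqH a JTm_ty[OF a] unfolding mor_eq_def mor_comp_def Emb_def by simp
qed

lemma sub: "Sig \<subseteq> Sig'" by auto

lemma telH: "\<Gamma> \<in> FOb Sig \<Longrightarrow> k < length \<Gamma> \<Longrightarrow> telF H \<Gamma> k = telF G \<Gamma> k"
  using eqH_ty[OF JCtx_tyk] by (auto simp: telF_def FOb_iff)

lemma D_main: "j \<in> Jdg Sig' \<Longrightarrow> (case j of
    JCtx \<Gamma> \<Rightarrow> Fo H \<Gamma> = obI \<Gamma> \<and> (\<forall>k<length \<Gamma>. H2.sgv \<Gamma> k = tyI \<Gamma> (fst (\<Gamma> ! k)) \<and> H2.thv \<Gamma> k = enI \<Gamma> (fst (\<Gamma> ! k)))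
  | JTy B \<Gamma> \<Rightarrow> sg H \<Gamma> (\<Gamma>, B) = ITG \<Gamma> B
  | JTm a B \<Gamma> \<Rightarrow> th H \<Gamma> (\<Gamma>, B) ((\<Gamma>, B), a) = IEG \<Gamma> a)"
proof (induction rule: Jdg.induct)
  case R1 then show ?case using H2.Fo_trm by simp
next
  case (R2 \<Gamma>1 B)
  have c1: "JCtx \<Gamma>1 \<in> Jdg Sig'" and TB: "JTy B \<Gamma>1 \<in> Jdg Sig'" using R2 by auto
  have IH: "Fo H \<Gamma>1 = obI \<Gamma>1" "\<And>k. k < length \<Gamma>1 \<Longrightarrow> H2.sgv \<Gamma>1 k = tyI \<Gamma>1 (fst (\<Gamma>1 ! k)) \<and> H2.thv \<Gamma>1 k = enI \<Gamma>1 (fst (\<Gamma>1 ! k))"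
     "sg H \<Gamma>1 (\<Gamma>1, B) = ITG \<Gamma>1 B" using R2 by auto
  have G1: "\<Gamma>1 \<in> FOb Sig'" using c1 by (rule JCtx_FOb)
  define \<Gamma> where "\<Gamma> = \<Gamma>1 @ [(fresh \<Gamma>1, B)]"
  have o: "Fo H \<Gamma> = obI \<Gamma>" using IH(1) IH(3) H2.Fo_ext[OF G1 TB] by (simp add: \<Gamma>_def)
  have v: "\<forall>k<length \<Gamma>. H2.sgv \<Gamma> k = tyI \<Gamma> (fst (\<Gamma> ! k)) \<and> H2.thv \<Gamma> k = enI \<Gamma> (fst (\<Gamma> ! k))"
  proof (intro allI impI)
    fix k assume k: "k < length \<Gamma>"
    show "H2.sgv \<Gamma> k = tyI \<Gamma> (fst (\<Gamma> ! k)) \<and> H2.thv \<Gamma> k = enI \<Gamma> (fst (\<Gamma> ! k))"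
    proof (cases "k < length \<Gamma>1")
      case True
      have ny: "fst (\<Gamma>1 ! k) \<noteq> fresh \<Gamma>1"
        using fresh_notin[of \<Gamma>1] True unfolding OV_def by (metis length_map nth_map nth_mem)
      have nth: "\<Gamma> ! k = \<Gamma>1 ! k" using True by (simp add: nth_append \<Gamma>_def)
      note W = H2.var_weak[OF G1 TB True]
      show ?thesis using W IH(1) IH(2)[OF True] IH(3) ny nth by (simp add: H2.sgv_def H2.thv_def \<Gamma>_def)
    next
      case False
      then have kk: "k = length \<Gamma>1" using k by (simp add: \<Gamma>_def)
      have nth: "\<Gamma> ! k = (fresh \<Gamma>1, B)" using kk by (simp add: \<Gamma>_def)
      show ?thesis using H2.sg_last[OF G1 TB] H2.th_var[OF G1 TB] IH(1) IH(3) nth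
        by (simp add: H2.sgv_def H2.thv_def \<Gamma>_def)
    qed
  qed
  show ?case using o v by (simp add: \<Gamma>_def)
next
  case (R3 \<Gamma> i)
  then show ?case by (simp add: H2.thv_def)
next
  case (R4 \<Gamma>T T \<Delta> as)
  have td: "tctx T = \<Gamma>T" "\<Gamma>T \<in> FOb Sig" using tdecl'[OF R4.hyps(1)] by auto
  have cT: "JCtx \<Gamma>T \<in> Jdg Sig" using td(2) by (simp add: FOb_iff)
  have GT': "\<Gamma>T \<in> FOb Sig'" using FOb_mono[OF td(2) sub] .
  have cD: "JCtx \<Delta> \<in> Jdg Sig'" using R4 by simp
  have len: "length as = length \<Gamma>T" using R4 by simp
  have cm: "cmap (Jdg Sig') as \<Delta> \<Gamma>T" using R4 by (simp add: cmap_def)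
  have h: "(\<Delta>, \<Gamma>T, as) \<in> Hom (FSig Sig') \<Delta> \<Gamma>T" using JCtx_FOb[OF cD] GT' cm by (simp add: FHom)
  have IHD: "Fo H \<Delta> = obI \<Delta>" using R4 by simp
  have IHa: "\<And>k. k < length \<Gamma>T \<Longrightarrow> th H \<Delta> (\<Delta>, Bk \<Gamma>T as k) ((\<Delta>, Bk \<Gamma>T as k), as ! k) = IEG \<Delta> (as ! k)"
    using R4 by (simp add: Bk_def)
  have tg: "JTy (PTy T (map Var (OV \<Gamma>T))) \<Gamma>T \<in> Jdg Sig'" using ty_generic[OF R4.hyps(1) R4.hyps(3)] .
  have base: "sg H \<Gamma>T (\<Gamma>T, PTy T (map Var (OV \<Gamma>T))) = tbase T"
  proof (cases "T = S")
    case True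
    then have "\<Gamma>T = GS" using R4.hyps(1) notS by auto
    then show ?thesis using True AH by (simp add: tbase_def)
  next
    case False
    then have b: "TDecl \<Gamma>T T \<in> Sig" using R4.hyps(1) by auto
    show ?thesis using eqH_ty[OF ty_generic[OF b cT]] tdecl[OF b] by simp
  qed
  have sv: "map (substP (smap (OV \<Gamma>T) as)) (map Var (OV \<Gamma>T)) = as"
    using subst_vars[OF precontext_distinct] td(2) len by (auto simp: FOb_iff OV_def)
  have "sg H \<Delta> (\<Delta>, PTy T as) = tsub C (tbase T) (Fa H (\<Delta>, \<Gamma>T, as))"
    using H2.sg_tsub[OF h tg] base sv by simp
  also have "Fa H (\<Delta>, \<Gamma>T, as) = SM C (obI \<Delta>) (telF G \<Gamma>T) (nth (map (IEG \<Delta>) as)) (length \<Gamma>T)"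
    using H2.Fa_dec(1)[OF h] IHD by (auto intro!: SM_cong simp: telH[OF td(2)] H2.thes_def IHa len)
  finally show ?case using td(1) by simp
next
  case (R5 \<Gamma>F f U \<Delta> as)
  have fS: "FDecl \<Gamma>F f U \<in> Sig" using R5.hyps(1) by auto
  have fd: "fdecl f = (\<Gamma>F, U)" using fdecl[OF fS] .
  have GF: "\<Gamma>F \<in> FOb Sig" "JTy U \<Gamma>F \<in> Jdg Sig" using fdecl_ctx[OF fS] by auto
  have cF: "JCtx \<Gamma>F \<in> Jdg Sig" using GF by (simp add: FOb_iff)
  have GF': "\<Gamma>F \<in> FOb Sig'" using FOb_mono[OF GF(1) sub] .
  have cD: "JCtx \<Delta> \<in> Jdg Sig'" using R5 by simp
  have len: "length as = length \<Gamma>F" using R5 by simp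
  have cm: "cmap (Jdg Sig') as \<Delta> \<Gamma>F" using R5 by (simp add: cmap_def)
  have h: "(\<Delta>, \<Gamma>F, as) \<in> Hom (FSig Sig') \<Delta> \<Gamma>F" using JCtx_FOb[OF cD] GF' cm by (simp add: FHom)
  have IHD: "Fo H \<Delta> = obI \<Delta>" using R5 by simp
  have IHa: "\<And>k. k < length \<Gamma>F \<Longrightarrow> th H \<Delta> (\<Delta>, Bk \<Gamma>F as k) ((\<Delta>, Bk \<Gamma>F as k), as ! k) = IEG \<Delta> (as ! k)"
    using R5 by (simp add: Bk_def)
  have tmg: "JTm (App f (map Var (OV \<Gamma>F))) U \<Gamma>F \<in> Jdg Sig" using tm_generic[OF fS cF GF(2)] .
  have sv: "map (substP (smap (OV \<Gamma>F) as)) (map Var (OV \<Gamma>F)) = as"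
    using subst_vars[OF precontext_distinct] GF(1) len by (auto simp: FOb_iff OV_def)
  have "th H \<Delta> (\<Delta>, substTC U as \<Gamma>F) ((\<Delta>, substTC U as \<Gamma>F), App f as)
      = esub C (sg H \<Gamma>F (\<Gamma>F, U)) (th H \<Gamma>F (\<Gamma>F, U) ((\<Gamma>F, U), App f (map Var (OV \<Gamma>F)))) (Fa H (\<Delta>, \<Gamma>F, as))"
    using H2.th_esub[OF h Jdg_mono[OF GF(2) sub] Jdg_mono[OF tmg sub]] sv by simp
  also have "\<dots> = esub C (fbaseT f) (fbaseE f) (Fa H (\<Delta>, \<Gamma>F, as))"
    using eqH_ty[OF GF(2)] eqH_tm[OF tmg] fd by (simp add: fbaseT_def fbaseE_def)
  also have "Fa H (\<Delta>, \<Gamma>F, as) = SM C (obI \<Delta>) (telF G \<Gamma>F) (nth (map (IEG \<Delta>) as)) (length \<Gamma>F)"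
    using H2.Fa_dec(1)[OF h] IHD by (auto intro!: SM_cong simp: telH[OF GF(1)] H2.thes_def IHa len)
  finally show ?case using fd by simp
qed

lemma H_eq: "mor_eq (FSig Sig') H G'"
  unfolding mor_eq_def
proof (intro conjI)
  show "\<forall>\<Gamma>\<in>Ob (FSig Sig'). Fo H \<Gamma> = Fo G' \<Gamma>"
    using D_main by (fastforce simp: FOb_iff)
  show "\<forall>f\<in>Arr (FSig Sig'). Fa H f = Fa G' f"
  proof
    fix f assume f: "f \<in> Arr (FSig Sig')"
    obtain \<Delta> \<Gamma> as where fe: "f = (\<Delta>, \<Gamma>, as)" by (cases f) auto
    have h: "(\<Delta>, \<Gamma>, as) \<in> Hom (FSig Sig') \<Delta> \<Gamma>" using f fe by (simp add: Hom_def)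
    have DD: "\<Delta> \<in> FOb Sig'" "\<Gamma> \<in> FOb Sig'" "cmap (Jdg Sig') as \<Delta> \<Gamma>" using h by (auto simp: FHom)
    have len: "length as = length \<Gamma>" using DD by (simp add: cmap_def)
    have cD: "JCtx \<Delta> \<in> Jdg Sig'" "JCtx \<Gamma> \<in> Jdg Sig'" using DD by (auto simp: FOb_iff)
    have o: "Fo H \<Delta> = obI \<Delta>" using D_main[OF cD(1)] by simp
    have "SM C (Fo H \<Delta>) (telF H \<Gamma>) (H2.thes \<Delta> \<Gamma> as) (length \<Gamma>) = SM C (obI \<Delta>) (telI \<Gamma>) (nth (map (IEG \<Delta>) as)) (length \<Gamma>)"
    proof (unfold o, rule SM_cong)
      fix k assume k: "k < length \<Gamma>"
      show "telF H \<Gamma> k = telI \<Gamma> k" using D_main[OF JCtx_tyk[OF cD(2) k]] by (simp add: telI_def telF_def)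
      show "H2.thes \<Delta> \<Gamma> as k = nth (map (IEG \<Delta>) as) k"
        using D_main[OF cmap_tm[OF DD(3) k]] k len by (simp add: H2.thes_def)
    qed
    then show "Fa H f = Fa G' f" using H2.Fa_dec(1)[OF h] fe by simp
  qed
  show "\<forall>\<Gamma>\<in>Ob (FSig Sig'). \<forall>A\<in>cTy (FSig Sig') \<Gamma>. sg H \<Gamma> A = sg G' \<Gamma> A"
    using D_main by fastforce
  show "\<forall>\<Gamma>\<in>Ob (FSig Sig'). \<forall>A\<in>cTy (FSig Sig') \<Gamma>. \<forall>a\<in>cTm (FSig Sig') \<Gamma> A. th H \<Gamma> A a = th G' \<Gamma> A a"
    using D_main by fastforce
qed

end


theorem mainTheorem14:
  fixes Sig :: "('s, 'f) decl set"
    and C :: "('o, 'm, 't, 'e) cwf"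
    and G :: "(('s, 'f) ctx, ('s, 'f) fmor, ('s, 'f) fty, ('s, 'f) ftm, 'o, 'm, 't, 'e) cwf_mor"
    and S :: 's
    and \<Gamma>S :: "('s, 'f) ctx"
    and A :: 't
  assumes "is_signature Sig"
    and "is_cwf C"
    and "cwf_morphism (FSig Sig) C G"
    and "\<forall>\<Gamma>. TDecl \<Gamma> S \<notin> Sig"
    and "precontext \<Gamma>S"
    and "JCtx \<Gamma>S \<in> Jdg Sig"
    and "A \<in> cTy C (Fo G \<Gamma>S)"
  shows "\<exists>G'. cwf_morphism (FSig (insert (TDecl \<Gamma>S S) Sig)) C G'
            \<and> mor_eq (FSig Sig) (mor_comp G' Emb) G
            \<and> sg G' \<Gamma>S (\<Gamma>S, PTy S (map Var (OV \<Gamma>S))) = A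
            \<and> (\<forall>G''. cwf_morphism (FSig (insert (TDecl \<Gamma>S S) Sig)) C G''
                     \<and> mor_eq (FSig Sig) (mor_comp G'' Emb) G
                     \<and> sg G'' \<Gamma>S (\<Gamma>S, PTy S (map Var (OV \<Gamma>S))) = A
                     \<longrightarrow> mor_eq (FSig (insert (TDecl \<Gamma>S S) Sig)) G'' G')"
proof -
  interpret L Sig C G S \<Gamma>S A
    by unfold_locales (use assms in auto)
  show ?thesis
  proof (intro exI[of _ G'] conjI allI impI)
    show "cwf_morphism (FSig (insert (TDecl \<Gamma>S S) Sig)) C G'" by (rule G'_mor)
    show "mor_eq (FSig Sig) (mor_comp G' Emb) G" by (rule G'_eq)
    show "sg G' \<Gamma>S (\<Gamma>S, PTy S (map Var (OV \<Gamma>S))) = A" by (rule G'_A)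
    fix G'' assume h: "cwf_morphism (FSig (insert (TDecl \<Gamma>S S) Sig)) C G''
                     \<and> mor_eq (FSig Sig) (mor_comp G'' Emb) G
                     \<and> sg G'' \<Gamma>S (\<Gamma>S, PTy S (map Var (OV \<Gamma>S))) = A"
    interpret LU Sig C G S \<Gamma>S A G''
      by unfold_locales (use h in auto)
    show "mor_eq (FSig (insert (TDecl \<Gamma>S S) Sig)) G'' G'" by (rule H_eq)
  qed
qed

end
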